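(* Assume, in the setting described in the context, that $\sup_{t\in[0,T],x\in\mathbb{R}^d}|c_l(t,x)|<\infty$ for every $l\in\mathcal{L}_m$ and that $\phi$ is bounded and Lipschitz ($|\phi(x)-\phi(y)|\le L\|x-y\|$). Then for any $p\ge1$ and $m_0\in\{m,\dots,d\}$ there exists a small enough $T=T(p,m_0)>0$ such that $$\mathbb{E}\Big[\sup_{x\in\mathbb{R}^d}|\mathcal{H}_\phi(\mathcal{T}_{t,x,i})|^p\Big]<\infty,\qquad t\in[0,T],\ i=0,\dots,m_0,$$ provided that $$\int_0^T\frac{ds}{\rho^{p-1}(s)}<\infty\quad\text{and}\quad\int_0^T\!\!\int_0^\infty\frac{e^{-s\eta(\lambda)}}{\rho^{p-1}(s)}\lambda^{p/2-1}\,d\lambda\,ds<\infty.$$ When $p=1$, both of these conditions are satisfied if $\int_{\lambda_0}^\infty\frac{d\lambda}{\eta(\lambda)\sqrt{\lambda}}<\infty$ for some $\lambda_0>0$.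
   Context: Setting: $d\ge1$, $T>0$, $\eta:(0,\infty)\to[0,\infty)$ a Bernstein function with $\eta(0^+)=0$; a subordinator with Laplace exponent $\eta$ satisfies $\mathbb{E}[e^{-\lambda S_t}]=e^{-t\eta(\lambda)}$. $m\in\{0,\dots,d\}$, $\mathcal{L}_m\subset\mathbb{N}^{m+1}$ finite, $c_l:[0,T]\times\mathbb{R}^d\to\mathbb{R}$ measurable for $l\in\mathcal{L}_m$, $\phi:\mathbb{R}^d\to\mathbb{R}$. Random marked tree: let $\rho$ be a probability density on $\mathbb{R}_+$ with $\rho>0$, and $\bar F(z):=\int_z^\infty\rho(s)ds$. Let $(q_l)_{l\in\mathcal{L}_m}$ be a probability mass function on $\mathcal{L}_m$ with $q_l>0$ for all $l$ and $\sum_l|l|q_l<\infty$, where $|l|=l_0+\dots+l_m$. For $t\in[0,T]$, $x\in\mathbb{R}^d$, $i\in\{0,\dots,d\}$, the tree $\mathcal{T}_{t,x,i}$ is built as follows. The root particle is born at time $t$ at position $x$ with mark $i$. Each particle $k$, born at time $T_{k-}$ at position $X^k_{T_{k-}}$ with mark $\theta_k$, has a lifetime $\tau_k$ with density $\rho$, death time $T_k=T_{k-}+\tau_k$, its own subordinator $S^k$ with Laplace exponent $\eta$ and standard $d$-dimensional Brownian motion $B^k$, and moves as $X^k_s=X^k_{T_{k-}}+B^k_{S^k_{s-T_{k-}}}$ for $s\ge T_{k-}$ (up to $\min(T_k,T)$). If $T_k<T$, an index $I_k=(l_0,\dots,l_m)\in\mathcal{L}_m$ is drawn with probability $q_{l}$,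 and the particle is replaced by $|l|$ offspring born at time $T_k$ at position $X^k_{T_k}$: $l_0$ of them with mark $0$, $l_1$ with mark $1$, ..., $l_m$ with mark $m$. If $T_k\ge T$, the particle is stopped at time $T$ and has no offspring. All lifetimes, indices, subordinators and Brownian motions are mutually independent. $\mathcal{K}^\circ$ denotes the set of particles with $T_k<T$ and $\mathcal{K}^\partial$ those with $T_k\ge T$. Weights: $\mathcal{W}_k=1$ if $\theta_k=0$; if $\theta_k\neq0$, $\mathcal{W}_k=(X^k_{T_k}-X^k_{T_{k-}})_{\theta_k}/S^k_{T_k-T_{k-}}$ for $k\in\mathcal{K}^\circ$ and $\mathcal{W}_k=(X^k_{T}-X^k_{T_{k-}})_{\theta_k}/S^k_{T-T_{k-}}$ for $k\in\mathcal{K}^\partial$, where $(v)_j$ is the $j$-th coordinate. The functional is $$\mathcal{H}_\phi(\mathcal{T}_{t,x,i})=\prod_{k\in\mathcal{K}^\circ}\frac{c_{I_k}(T_k,X^k_{T_k})\mathcal{W}_k}{q_{I_k}\rho(\tau_k)}\prod_{k\in\mathcal{K}^\partial}\frac{\big(\phi(X^k_T)-\phi(X^k_{T_{k-}})\mathbf{1}_{\{\theta_k\neq0\}}\big)\mathcal{W}_k}{\bar F(T-T_{k-})}.$$ *)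

theory Defs
  imports "HOL-Probability.Probability"
begin

text \<open>R^d is modelled as the functions nat => real vanishing at coordinates >= d;
  coordinate j (1-based, j = 1..d) of a vector v is v (j - 1).\<close>

definition Rd :: "nat \<Rightarrow> (nat \<Rightarrow> real) set" where
  "Rd d = {x. \<forall>j\<ge>d. x j = 0}"

definition eucl_norm :: "nat \<Rightarrow> (nat \<Rightarrow> real) \<Rightarrow> real" where
  "eucl_norm d v = sqrt (\<Sum>j<d. (v j)\<^sup>2)"

definition bernstein :: "(real \<Rightarrow> real) \<Rightarrow> bool" where
  "bernstein \<eta> \<longleftrightarrow> (\<forall>x>0. \<eta> x \<ge> 0)
     \<and> (\<forall>n. \<forall>x>0. (deriv ^^ n) \<eta> differentiable (at x))
     \<and> (\<forall>n\<ge>1. \<forall>x>0. (-1) ^ (n + 1) * (deriv ^^ n) \<eta> x \<ge> 0)"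

definition subordinator :: "'w measure \<Rightarrow> (real \<Rightarrow> real) \<Rightarrow> ('w \<Rightarrow> real \<Rightarrow> real) \<Rightarrow> bool" where
  "subordinator M \<eta> S \<longleftrightarrow>
     (\<forall>t\<ge>0. (\<lambda>\<omega>. S \<omega> t) \<in> borel_measurable M)
   \<and> (\<forall>\<omega>\<in>space M. S \<omega> 0 = 0 \<and> mono_on {0..} (S \<omega>)
        \<and> (\<forall>t\<ge>0. continuous (at_right t) (S \<omega>)))
   \<and> (\<forall>ts::real list. sorted ts \<and> ts \<noteq> [] \<and> hd ts \<ge> 0 \<longrightarrow>
        prob_space.indep_vars M (\<lambda>_. borel) (\<lambda>n \<omega>. S \<omega> (ts ! Suc n) - S \<omega> (ts ! n)) {..<length ts - 1})
   \<and> (\<forall>s t. 0 \<le> s \<and> s \<le> t \<longrightarrow>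
        distr M borel (\<lambda>\<omega>. S \<omega> t - S \<omega> s) = distr M borel (\<lambda>\<omega>. S \<omega> (t - s)))
   \<and> (\<forall>t\<ge>0. \<forall>lam>0. (\<integral>\<omega>. exp (- lam * S \<omega> t) \<partial>M) = exp (- t * \<eta> lam))"

definition std_BM :: "'w measure \<Rightarrow> nat \<Rightarrow> ('w \<Rightarrow> real \<Rightarrow> nat \<Rightarrow> real) \<Rightarrow> bool" where
  "std_BM M d B \<longleftrightarrow>
     (\<forall>\<omega>\<in>space M. B \<omega> 0 = (\<lambda>_. 0) \<and> (\<forall>t j. d \<le> j \<longrightarrow> B \<omega> t j = 0)
        \<and> (\<forall>j. continuous_on {0..} (\<lambda>t. B \<omega> t j)))
   \<and> (\<forall>t\<ge>0. \<forall>j. (\<lambda>\<omega>. B \<omega> t j) \<in> borel_measurable M)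
   \<and> (\<forall>ts::real list. sorted ts \<and> ts \<noteq> [] \<and> hd ts \<ge> 0 \<longrightarrow>
        prob_space.indep_vars M (\<lambda>_. borel)
          (\<lambda>(n, j) \<omega>. B \<omega> (ts ! Suc n) j - B \<omega> (ts ! n) j) ({..<length ts - 1} \<times> {..<d}))
   \<and> (\<forall>s t j. 0 \<le> s \<and> s < t \<and> j < d \<longrightarrow>
        distributed M lborel (\<lambda>\<omega>. B \<omega> t j - B \<omega> s j) (\<lambda>y. ennreal (normal_density 0 (sqrt (t - s)) y)))"

text \<open>Mark of the j-th offspring (0-based) when the index is l = [l_0,...,l_m]:
  the first l_0 offspring get mark 0, the next l_1 mark 1, etc.\<close>
definition mark_of :: "nat list \<Rightarrow> nat \<Rightarrow> nat" where
  "mark_of l j = (LEAST r. j < sum_list (take (Suc r) l))"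

definition Fbar :: "(real \<Rightarrow> real) \<Rightarrow> real \<Rightarrow> real" where
  "Fbar \<rho> z = enn2real (\<integral>\<^sup>+ s\<in>{z..}. ennreal (\<rho> s) \<partial>lborel)"

text \<open>Particles are labelled by Ulam-Harris labels (nat list); the children of k are k @ [j].
  The state of a label is (exists, birth time, birth position, mark).  Inputs (one sample path):
  lifetimes tau, indices idx, subordinator paths Sp, Brownian paths Bp.\<close>
fun tree_state :: "real \<Rightarrow> (nat list \<Rightarrow> real) \<Rightarrow> (nat list \<Rightarrow> nat list) \<Rightarrow> (nat list \<Rightarrow> real \<Rightarrow> real)
    \<Rightarrow> (nat list \<Rightarrow> real \<Rightarrow> nat \<Rightarrow> real) \<Rightarrow> nat list \<Rightarrow> bool \<times> real \<times> (nat \<Rightarrow> real) \<times> nat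
    \<Rightarrow> nat list \<Rightarrow> bool \<times> real \<times> (nat \<Rightarrow> real) \<times> nat" where
  "tree_state T tau idx Sp Bp pre st [] = st"
| "tree_state T tau idx Sp Bp pre (al, b, pos, th) (j # js) =
     tree_state T tau idx Sp Bp (pre @ [j])
       (al \<and> b + tau pre < T \<and> j < sum_list (idx pre),
        b + tau pre,
        (\<lambda>c. pos c + Bp pre (Sp pre (tau pre)) c),
        mark_of (idx pre) j) js"

definition node_state where
  "node_state T t x i tau idx Sp Bp k = tree_state T tau idx Sp Bp [] (True, t, x, i) k"

definition tree_nodes :: "real \<Rightarrow> real \<Rightarrow> (nat \<Rightarrow> real) \<Rightarrow> nat \<Rightarrow> (nat list \<Rightarrow> real) \<Rightarrow> (nat list \<Rightarrow> nat list)
    \<Rightarrow> (nat list \<Rightarrow> real \<Rightarrow> real) \<Rightarrow> (nat list \<Rightarrow> real \<Rightarrow> nat \<Rightarrow> real) \<Rightarrow> nat list set" where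
  "tree_nodes T t x i tau idx Sp Bp = {k. fst (node_state T t x i tau idx Sp Bp k)}"

definition Hfun :: "(nat list \<Rightarrow> real \<Rightarrow> (nat \<Rightarrow> real) \<Rightarrow> real) \<Rightarrow> (nat list \<Rightarrow> real) \<Rightarrow> (real \<Rightarrow> real)
    \<Rightarrow> ((nat \<Rightarrow> real) \<Rightarrow> real) \<Rightarrow> real \<Rightarrow> real \<Rightarrow> (nat \<Rightarrow> real) \<Rightarrow> nat
    \<Rightarrow> (nat list \<Rightarrow> real) \<Rightarrow> (nat list \<Rightarrow> nat list) \<Rightarrow> (nat list \<Rightarrow> real \<Rightarrow> real)
    \<Rightarrow> (nat list \<Rightarrow> real \<Rightarrow> nat \<Rightarrow> real) \<Rightarrow> real" where
  "Hfun c q \<rho> \<phi> T t x i tau idx Sp Bp =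
    (let st = node_state T t x i tau idx Sp Bp;
         b = (\<lambda>k. fst (snd (st k)));
         pos = (\<lambda>k. fst (snd (snd (st k))));
         th = (\<lambda>k. snd (snd (snd (st k))));
         nodes = tree_nodes T t x i tau idx Sp Bp;
         Kin = {k\<in>nodes. b k + tau k < T};
         Kbd = {k\<in>nodes. T \<le> b k + tau k};
         incr = (\<lambda>k u. Bp k (Sp k u));
         W = (\<lambda>k u. if th k = 0 then 1 else incr k u (th k - 1) / Sp k u)
     in (\<Prod>k\<in>Kin. c (idx k) (b k + tau k) (\<lambda>j. pos k j + incr k (tau k) j) * W k (tau k)
                     / (q (idx k) * \<rho> (tau k)))
      * (\<Prod>k\<in>Kbd. (\<phi> (\<lambda>j. pos k j + incr k (T - b k) j) - \<phi> (pos k) * (if th k \<noteq> 0 then 1 else 0))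
                     * W k (T - b k) / Fbar \<rho> (T - b k)))"

definition cond1 :: "(real \<Rightarrow> real) \<Rightarrow> real \<Rightarrow> real \<Rightarrow> bool" where
  "cond1 \<rho> p T \<longleftrightarrow> (\<integral>\<^sup>+ s\<in>{0..T}. ennreal (1 / \<rho> s powr (p - 1)) \<partial>lborel) < \<infinity>"

definition cond2 :: "(real \<Rightarrow> real) \<Rightarrow> (real \<Rightarrow> real) \<Rightarrow> real \<Rightarrow> real \<Rightarrow> bool" where
  "cond2 \<rho> \<eta> p T \<longleftrightarrow>
     (\<integral>\<^sup>+ s\<in>{0..T}. (\<integral>\<^sup>+ lam\<in>{0<..}. ennreal (exp (- s * \<eta> lam) / \<rho> s powr (p - 1) * lam powr (p / 2 - 1)) \<partial>lborel) \<partial>lborel) < \<infinity>"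

end

theory Submission
  imports Defs
begin

lemma freeze:
  assumes P: "prob_space M"
    and S1: "subalgebra M N1" and S2: "subalgebra M N2"
    and ind: "\<And>A B. A \<in> sets N1 \<Longrightarrow> B \<in> sets N2 \<Longrightarrow> emeasure M (A \<inter> B) = emeasure M A * emeasure M B"
    and h[measurable]: "h \<in> borel_measurable N1" and Z[measurable]: "Z \<in> measurable N1 K"
    and G[measurable]: "(\<lambda>(z,\<omega>). G z \<omega>) \<in> borel_measurable (K \<Otimes>\<^sub>M N2)"
  shows "(\<integral>\<^sup>+\<omega>. h \<omega> * G (Z \<omega>) \<omega> \<partial>M) = (\<integral>\<^sup>+\<omega>. h \<omega> * (\<integral>\<^sup>+\<omega>'. G (Z \<omega>) \<omega>' \<partial>M) \<partial>M)"
proof -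
  interpret prob_space M by fact
  define R1 where "R1 = restr_to_subalg M N1"
  define R2 where "R2 = restr_to_subalg M N2"
  interpret R1: prob_space R1 unfolding R1_def by (rule prob_space_restr_to_subalg[OF S1 P])
  interpret R2: prob_space R2 unfolding R2_def by (rule prob_space_restr_to_subalg[OF S2 P])
  interpret R12: pair_sigma_finite R1 R2 ..
  have sp1: "space R1 = space M" "sets R1 = sets N1" and sp2: "space R2 = space M" "sets R2 = sets N2"
    using S1 S2 unfolding R1_def R2_def by (auto simp: space_restr_to_subalg sets_restr_to_subalg subalgebra_def)
  have em1: "\<And>A. A \<in> sets N1 \<Longrightarrow> emeasure R1 A = emeasure M A"
    using S1 unfolding R1_def by (simp add: emeasure_restr_to_subalg)
  have em2: "\<And>A. A \<in> sets N2 \<Longrightarrow> emeasure R2 A = emeasure M A"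
    using S2 unfolding R2_def by (simp add: emeasure_restr_to_subalg)
  have sub1: "sets N1 \<subseteq> sets M" and sub2: "sets N2 \<subseteq> sets M" and spN: "space N1 = space M" "space N2 = space M"
    using S1 S2 by (auto simp: subalgebra_def)
  have diag: "(\<lambda>\<omega>. (\<omega>, \<omega>)) \<in> measurable M (R1 \<Otimes>\<^sub>M R2)"
  proof (rule measurable_Pair)
    show "(\<lambda>x. x) \<in> measurable M R1" using sub1 sp1 by (auto simp: measurable_def)
    show "(\<lambda>x. x) \<in> measurable M R2" using sub2 sp2 by (auto simp: measurable_def)
  qed
  have eq: "R1 \<Otimes>\<^sub>M R2 = distr M (R1 \<Otimes>\<^sub>M R2) (\<lambda>\<omega>. (\<omega>, \<omega>))"
  proof (rule pair_measure_eqI)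
    show "sigma_finite_measure R1" "sigma_finite_measure R2" ..
    show "sets (R1 \<Otimes>\<^sub>M R2) = sets (distr M (R1 \<Otimes>\<^sub>M R2) (\<lambda>\<omega>. (\<omega>, \<omega>)))" by simp
    fix A B assume A: "A \<in> sets R1" and B: "B \<in> sets R2"
    have "A \<subseteq> space M" "B \<subseteq> space M" using A B sets.sets_into_space sp1 sp2 by blast+
    then have "(\<lambda>\<omega>. (\<omega>, \<omega>)) -` (A \<times> B) \<inter> space M = A \<inter> B" by auto
    moreover have "A \<times> B \<in> sets (R1 \<Otimes>\<^sub>M R2)" using A B by simp
    ultimately show "emeasure R1 A * emeasure R2 B = emeasure (distr M (R1 \<Otimes>\<^sub>M R2) (\<lambda>\<omega>. (\<omega>, \<omega>))) (A \<times> B)"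
      using A B sp1 sp2 by (simp add: emeasure_distr[OF diag] em1 em2 ind)
  qed
  have hR: "h \<in> borel_measurable R1" using h sp1 by (simp add: measurable_def spN)
  have ZR: "Z \<in> measurable R1 K" using Z sp1 by (simp add: measurable_def spN)
  have GR: "(\<lambda>(z,\<omega>). G z \<omega>) \<in> borel_measurable (K \<Otimes>\<^sub>M R2)"
  proof -
    have "K \<Otimes>\<^sub>M N2 \<rightarrow>\<^sub>M borel = K \<Otimes>\<^sub>M R2 \<rightarrow>\<^sub>M (borel :: ennreal measure)"
      by (rule measurable_cong_sets) (auto intro!: sets_pair_measure_cong simp: sp2)
    then show ?thesis using G by simp
  qed
  have Gsec: "(\<lambda>b. G (Z a) b) \<in> borel_measurable N2" if a: "a \<in> space M" for a
  proof -
    have "Z a \<in> space K" using measurable_space[OF Z] a spN by auto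
    from measurable_Pair2[OF G this] show ?thesis by simp
  qed
  have Gsec2: "(\<lambda>b. G (Z a) b) \<in> borel_measurable R2" if a: "a \<in> space M" for a
    using Gsec[OF a] sp2 spN by (simp add: measurable_def)
  have int2: "(\<integral>\<^sup>+b. G (Z a) b \<partial>R2) = (\<integral>\<^sup>+b. G (Z a) b \<partial>M)" if a: "a \<in> space M" for a
    unfolding R2_def using Gsec[OF a] by (rule nn_integral_subalgebra2[OF S2])
  have F: "(\<lambda>(a, b). h a * G (Z a) b) \<in> borel_measurable (R1 \<Otimes>\<^sub>M R2)"
  proof -
    have "(\<lambda>x. G (Z (fst x)) (snd x)) \<in> borel_measurable (R1 \<Otimes>\<^sub>M R2)"
      using measurable_compose[OF measurable_Pair[OF measurable_compose[OF measurable_fst ZR] measurable_snd] GR] by simp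
    then show ?thesis using hR by (simp add: split_beta')
  qed
  have "(\<integral>\<^sup>+\<omega>. h \<omega> * G (Z \<omega>) \<omega> \<partial>M) = (\<integral>\<^sup>+x. (\<lambda>(a, b). h a * G (Z a) b) x \<partial>distr M (R1 \<Otimes>\<^sub>M R2) (\<lambda>\<omega>. (\<omega>, \<omega>)))"
    using nn_integral_distr[OF diag, of "\<lambda>(a, b). h a * G (Z a) b"] F by (simp only: measurable_distr_eq1 case_prod_conv)
  also have "\<dots> = (\<integral>\<^sup>+x. (\<lambda>(a, b). h a * G (Z a) b) x \<partial>(R1 \<Otimes>\<^sub>M R2))" by (simp add: eq[symmetric])
  also have "\<dots> = (\<integral>\<^sup>+a. \<integral>\<^sup>+b. h a * G (Z a) b \<partial>R2 \<partial>R1)"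
    by (subst R2.nn_integral_fst[OF F, symmetric]) simp
  also have "\<dots> = (\<integral>\<^sup>+a. h a * (\<integral>\<^sup>+b. G (Z a) b \<partial>R2) \<partial>R1)"
    using Gsec2 sp1 by (intro nn_integral_cong nn_integral_cmult) auto
  also have "\<dots> = (\<integral>\<^sup>+a. h a * (\<integral>\<^sup>+b. G (Z a) b \<partial>M) \<partial>R1)"
    using int2 sp1 by (intro nn_integral_cong) auto
  also have "\<dots> = (\<integral>\<^sup>+a. h a * (\<integral>\<^sup>+b. G (Z a) b \<partial>M) \<partial>M)"
  proof -
    have m: "(\<lambda>a. \<integral>\<^sup>+b. G (Z a) b \<partial>R2) \<in> borel_measurable R1"
      using R2.borel_measurable_nn_integral_fst[OF measurable_compose[OF measurable_Pair[OF measurable_compose[OF measurable_fst ZR] measurable_snd] GR]]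
      by simp
    have "(\<lambda>a. h a * (\<integral>\<^sup>+b. G (Z a) b \<partial>M)) \<in> borel_measurable R1"
    proof -
      have "(\<lambda>a. h a * (\<integral>\<^sup>+b. G (Z a) b \<partial>R2)) \<in> borel_measurable R1" using m hR by simp
      moreover have "\<And>a. a \<in> space R1 \<Longrightarrow> h a * (\<integral>\<^sup>+b. G (Z a) b \<partial>R2) = h a * (\<integral>\<^sup>+b. G (Z a) b \<partial>M)"
        using int2 sp1 by simp
      ultimately show ?thesis by (rule measurable_cong[THEN iffD1, rotated]) simp
    qed
    then have "(\<lambda>a. h a * (\<integral>\<^sup>+b. G (Z a) b \<partial>M)) \<in> borel_measurable N1"
      using sp1 spN unfolding measurable_def by simp
    then show ?thesis unfolding R1_def by (rule nn_integral_subalgebra2[OF S1])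
  qed
  finally show ?thesis .
qed

lemma at_Ici_right: "at (v::real) within {v..} = at_right v"
proof -
  have "{v..} - {v} = {v<..}" by auto
  then show ?thesis by (simp add: at_within_def)
qed

lemma rc_joint:
  fixes f :: "real \<Rightarrow> 'a \<Rightarrow> real"
  assumes m: "\<And>u. 0 \<le> u \<Longrightarrow> (\<lambda>\<omega>. f u \<omega>) \<in> borel_measurable N"
    and c: "\<And>\<omega> u. \<omega> \<in> space N \<Longrightarrow> 0 \<le> u \<Longrightarrow> continuous (at_right u) (\<lambda>v. f v \<omega>)"
  shows "(\<lambda>x. f (max 0 (fst x)) (snd x)) \<in> borel_measurable ((borel :: real measure) \<Otimes>\<^sub>M N)"
proof (rule borel_measurable_LIMSEQ_real)
  define g where "g n (x :: real \<times> 'a) = f (max 0 (real_of_int \<lceil>max 0 (fst x) * (2::real)^n\<rceil> / 2^n)) (snd x)" for n x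
  show "g n \<in> borel_measurable (borel \<Otimes>\<^sub>M N)" for n
  proof -
    have "(\<lambda>x. (\<lambda>i::int. f (max 0 (real_of_int i / 2^n)) (snd x)) (\<lceil>max 0 (fst x) * (2::real)^n\<rceil>)) \<in> borel_measurable (borel \<Otimes>\<^sub>M N)"
    proof (rule measurable_compose_countable[where g="\<lambda>x. \<lceil>max 0 (fst x) * (2::real)^n\<rceil>"])
      fix i :: int
      show "(\<lambda>x. f (max 0 (real_of_int i / 2^n)) (snd x)) \<in> borel_measurable (borel \<Otimes>\<^sub>M N)"
        by (rule measurable_compose[OF measurable_snd m]) simp
    next
      show "(\<lambda>x. \<lceil>max 0 (fst x) * (2::real) ^ n\<rceil>) \<in> measurable (borel \<Otimes>\<^sub>M N) (count_space UNIV)"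
        by (rule measurable_compose[OF _ measurable_real_ceiling]) simp
    qed
    then show ?thesis unfolding g_def by simp
  qed
  fix x :: "real \<times> 'a" assume x: "x \<in> space (borel \<Otimes>\<^sub>M N)"
  then have xs: "snd x \<in> space N" by (auto simp: space_pair_measure)
  define v where "v = max 0 (fst x)"
  have v0: "0 \<le> v" unfolding v_def by simp
  define w where "w n = real_of_int \<lceil>v * 2^n\<rceil> / 2^n" for n :: nat
  have wge: "v \<le> w n" for n
  proof -
    have "v * 2^n \<le> real_of_int \<lceil>v * 2^n\<rceil>" by (rule le_of_int_ceiling)
    then show ?thesis unfolding w_def by (simp add: field_simps)
  qed
  have wle: "w n \<le> v + 1 / 2^n" for n
  proof -
    have "real_of_int \<lceil>v * 2^n\<rceil> \<le> v * 2^n + 1" by linarith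
    then show ?thesis unfolding w_def by (simp add: field_simps)
  qed
  have h0: "(\<lambda>n. 1 / (2::real)^n) \<longlonglongrightarrow> 0"
    by (rule LIMSEQ_divide_realpow_zero) auto
  have "(\<lambda>n. v + 1 / (2::real)^n) \<longlonglongrightarrow> v + 0"
    by (rule tendsto_add[OF tendsto_const h0])
  then have hl: "(\<lambda>n. v + 1 / (2::real)^n) \<longlonglongrightarrow> v" by simp
  have wlim: "w \<longlonglongrightarrow> v"
  proof (rule real_tendsto_sandwich[of "\<lambda>_. v" w sequentially "\<lambda>n. v + 1/2^n"])
    show "\<forall>\<^sub>F n in sequentially. v \<le> w n" using wge by simp
    show "\<forall>\<^sub>F n in sequentially. w n \<le> v + 1 / 2 ^ n" using wle by simp
  qed (use hl in auto)
  have cont: "continuous (at v within {v..}) (\<lambda>u. f u (snd x))"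
    using c[OF xs v0] by (simp add: at_Ici_right)
  from cont have H: "\<And>y. (\<forall>n. y n \<in> {v..}) \<Longrightarrow> y \<longlonglongrightarrow> v \<Longrightarrow> ((\<lambda>u. f u (snd x)) \<circ> y) \<longlonglongrightarrow> f v (snd x)"
    unfolding continuous_within_sequentially by blast
  have L: "((\<lambda>u. f u (snd x)) \<circ> w) \<longlonglongrightarrow> f v (snd x)"
    by (rule H) (use wge wlim in auto)
  have gw: "g n x = ((\<lambda>u. f u (snd x)) \<circ> w) n" for n
  proof -
    have "max 0 (w n) = w n" using wge[of n] v0 by simp
    then show ?thesis unfolding g_def w_def v_def comp_def by simp
  qed
  show "(\<lambda>n. g n x) \<longlonglongrightarrow> f (max 0 (fst x)) (snd x)"
    unfolding gw using L unfolding v_def .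
qed

lemma neg_moment:
  fixes z a :: real
  assumes z: "0 < z" and a: "0 < a"
  shows "ennreal (z powr (-a)) \<le> ennreal (2 * exp 1 * max (2 powr (a - 1)) 1) *
           (\<integral>\<^sup>+ l\<in>{0<..}. ennreal (l powr (a - 1) * exp (- l * z)) \<partial>lborel)"
proof -
  define m where "m = (1/z) powr (a - 1) * min (2 powr (1 - a)) 1"
  have m0: "0 < m" unfolding m_def using z by simp
  have pt: "m * exp (-1) * indicator {1/(2*z) .. 1/z} l \<le> l powr (a - 1) * exp (- l * z) * indicator {0<..} l" for l
  proof (cases "l \<in> {1/(2*z) .. 1/z}")
    case True
    then have l1: "1/(2*z) \<le> l" and l2: "l \<le> 1/z" by auto
    have lpos: "0 < l" using l1 z by (smt (verit) divide_pos_pos)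
    have e: "exp (-1) \<le> exp (- l * z)" using l2 z by (simp add: field_simps)
    have pw: "m \<le> l powr (a - 1)"
    proof (cases "0 \<le> a - 1")
      case True
      have "(1/(2*z)) powr (a - 1) \<le> l powr (a - 1)" using l1 z True by (intro powr_mono2) auto
      moreover have "(1/(2*z)) powr (a - 1) = (1/z) powr (a - 1) * 2 powr (1 - a)"
        using z by (simp add: powr_divide powr_mult powr_minus_divide[symmetric] field_simps powr_diff powr_add[symmetric])
      moreover have "(1/z) powr (a - 1) * min (2 powr (1 - a)) 1 \<le> (1/z) powr (a - 1) * 2 powr (1 - a)"
        by (intro mult_left_mono) auto
      ultimately show ?thesis unfolding m_def by linarith
    next
      case False
      have "(1/z) powr (a - 1) \<le> l powr (a - 1)" using l2 lpos False by (intro powr_mono2') auto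
      moreover have "(1/z) powr (a - 1) * min (2 powr (1 - a)) 1 \<le> (1/z) powr (a - 1)"
        by (simp add: mult_left_le)
      ultimately show ?thesis unfolding m_def by linarith
    qed
    have "m * exp (-1) \<le> l powr (a - 1) * exp (- l * z)"
      using pw e m0 by (intro mult_mono) auto
    then show ?thesis using True lpos by simp
  next
    case False then show ?thesis by (auto simp: indicator_def)
  qed
  have em: "emeasure lborel {1/(2*z) .. 1/z} = ennreal (1/(2*z))"
    using z by (subst emeasure_lborel_Icc) (auto simp: field_simps)
  have "ennreal (m * exp (-1)) * ennreal (1/(2*z)) = (\<integral>\<^sup>+ l. ennreal (m * exp (-1)) * indicator {1/(2*z) .. 1/z} l \<partial>lborel)"
    by (subst nn_integral_cmult_indicator) (auto simp: em)
  also have "\<dots> \<le> (\<integral>\<^sup>+ l\<in>{0<..}. ennreal (l powr (a - 1) * exp (- l * z)) \<partial>lborel)"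
  proof (rule nn_integral_mono)
    fix l
    have "ennreal (m * exp (-1)) * indicator {1/(2*z) .. 1/z} l = ennreal (m * exp (-1) * indicator {1/(2*z) .. 1/z} l)"
      by (simp add: indicator_def)
    also have "\<dots> \<le> ennreal (l powr (a - 1) * exp (- l * z) * indicator {0<..} l)"
      using pt by (rule ennreal_leI)
    also have "\<dots> = ennreal (l powr (a - 1) * exp (- l * z)) * indicator {0<..} l"
      by (simp add: indicator_def)
    finally show "ennreal (m * exp (-1)) * indicator {1/(2*z) .. 1/z} l \<le> ennreal (l powr (a - 1) * exp (- l * z)) * indicator {0<..} l" .
  qed
  finally have I0: "ennreal (m * exp (-1)) * ennreal (1/(2*z)) \<le> (\<integral>\<^sup>+ l\<in>{0<..}. ennreal (l powr (a - 1) * exp (- l * z)) \<partial>lborel)" .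
  have I: "ennreal (m * exp (-1) * (1/(2*z))) \<le> (\<integral>\<^sup>+ l\<in>{0<..}. ennreal (l powr (a - 1) * exp (- l * z)) \<partial>lborel)"
    using I0 m0 z by (subst ennreal_mult) auto
  have mm: "max (2 powr (a - 1)) 1 * min (2 powr (1 - a)) 1 = 1"
  proof (cases "a \<le> 1")
    case True
    have "2 powr (a - 1) \<le> 2 powr 0" "2 powr 0 \<le> 2 powr (1 - a)" using True by (intro powr_mono; simp)+
    then have "2 powr (a - 1) \<le> 1" "1 \<le> 2 powr (1 - a)" by auto
    then show ?thesis by (simp add: max_def min_def)
  next
    case False
    have "2 powr 0 \<le> 2 powr (a - 1)" "2 powr (1 - a) \<le> 2 powr 0" using False by (intro powr_mono; simp)+
    then have "1 \<le> 2 powr (a - 1)" "2 powr (1 - a) \<le> 1" by auto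
    moreover have "2 powr (a - 1) * 2 powr (1 - a) = 1" by (simp add: powr_add[symmetric])
    ultimately show ?thesis by (simp add: max_def min_def)
  qed
  have pz: "(1/z) powr (a - 1) * (1 / z) = z powr (-a)"
    using z by (simp add: powr_divide powr_diff powr_minus_divide field_simps)
  have ee: "exp 1 * exp (-1) = (1::real)" by (simp add: exp_minus)
  have "2 * exp 1 * max (2 powr (a - 1)) 1 * (m * exp (-1) * (1/(2*z))) =
      (max (2 powr (a - 1)) 1 * min (2 powr (1 - a)) 1) * ((1/z) powr (a - 1) * (1/z)) * (exp 1 * exp (-1))"
    unfolding m_def by (simp add: mult_ac)
  also have "\<dots> = z powr (-a)" by (simp only: mm pz ee mult_1_left mult_1_right)
  finally have key: "z powr (-a) = 2 * exp 1 * max (2 powr (a - 1)) 1 * (m * exp (-1) * (1/(2*z)))" by simp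
  have "ennreal (z powr (-a)) = ennreal (2 * exp 1 * max (2 powr (a - 1)) 1) * ennreal (m * exp (-1) * (1/(2*z)))"
    unfolding key using m0 z by (intro ennreal_mult) auto
  also have "\<dots> \<le> ennreal (2 * exp 1 * max (2 powr (a - 1)) 1) * (\<integral>\<^sup>+ l\<in>{0<..}. ennreal (l powr (a - 1) * exp (- l * z)) \<partial>lborel)"
    by (rule mult_left_mono[OF I]) simp
  finally show ?thesis .
qed

fun psiD :: "(nat list \<Rightarrow> real \<Rightarrow> nat \<Rightarrow> real) \<Rightarrow> (nat list \<Rightarrow> real) \<Rightarrow> (nat list \<Rightarrow> nat list) \<Rightarrow> real
   \<Rightarrow> nat \<Rightarrow> nat list \<Rightarrow> real \<Rightarrow> nat \<Rightarrow> real" where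
  "psiD a tau idx T 0 pre s th = 1"
| "psiD a tau idx T (Suc n) pre s th = a pre s th *
     (if s + tau pre < T then (\<Prod>j<sum_list (idx pre). psiD a tau idx T n (pre @ [j]) (s + tau pre) (mark_of (idx pre) j)) else 1)"

lemma psiD_ge1: "(\<And>k s th. 1 \<le> a k s th) \<Longrightarrow> 1 \<le> psiD a tau idx T n pre s th"
proof (induction n arbitrary: pre s th)
  case 0 then show ?case by simp
next
  case (Suc n)
  have "1 \<le> (if s + tau pre < T then (\<Prod>j<sum_list (idx pre). psiD a tau idx T n (pre @ [j]) (s + tau pre) (mark_of (idx pre) j)) else 1)"
    using Suc by (auto intro!: prod_ge_1)
  then have "1 * 1 \<le> a pre s th * (if s + tau pre < T then (\<Prod>j<sum_list (idx pre). psiD a tau idx T n (pre @ [j]) (s + tau pre) (mark_of (idx pre) j)) else 1)"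
    using Suc.prems[of pre s th] by (intro mult_mono) auto
  then show ?case by simp
qed

lemma ts_dead: "\<not> fst st \<Longrightarrow> \<not> fst (tree_state T tau idx Sp Bp pre st k)"
proof (induction k arbitrary: pre st)
  case Nil then show ?case by simp
next
  case (Cons j js)
  obtain al b pos th where st: "st = (al, b, pos, th)" by (cases st) auto
  show ?case using Cons st by simp
qed

definition nodesg where
  "nodesg T tau idx Sp Bp pre st = {k. fst (tree_state T tau idx Sp Bp pre st k)}"

definition child_st where
  "child_st T tau idx Sp Bp pre b pos j = (True, b + tau pre, (\<lambda>c. pos c + Bp pre (Sp pre (tau pre)) c), mark_of (idx pre) j)"

lemma ts_child: "b + tau pre < T \<Longrightarrow> j < sum_list (idx pre) \<Longrightarrow>
  tree_state T tau idx Sp Bp pre (True, b, pos, th) (j # js) = tree_state T tau idx Sp Bp (pre @ [j]) (child_st T tau idx Sp Bp pre b pos j) js"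
  by (simp add: child_st_def)

lemma nodes_decomp:
  "nodesg T tau idx Sp Bp pre (True, b, pos, th) \<inter> {k. length k < Suc n} =
   insert [] (\<Union>j\<in>{j. b + tau pre < T \<and> j < sum_list (idx pre)}.
       (Cons j) ` (nodesg T tau idx Sp Bp (pre @ [j]) (child_st T tau idx Sp Bp pre b pos j) \<inter> {k. length k < n}))"
  (is "?L = ?R")
proof (intro set_eqI iffI)
  fix k assume k: "k \<in> ?L"
  show "k \<in> ?R"
  proof (cases k)
    case Nil then show ?thesis by simp
  next
    case (Cons j js)
    have al: "fst (tree_state T tau idx Sp Bp pre (True, b, pos, th) (j # js))" using k Cons by (simp add: nodesg_def)
    have c: "b + tau pre < T \<and> j < sum_list (idx pre)"
    proof (rule ccontr)
      assume "\<not> ?thesis"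
      then have "\<not> fst (True \<and> b + tau pre < T \<and> j < sum_list (idx pre), b + tau pre,
        (\<lambda>c. pos c + Bp pre (Sp pre (tau pre)) c), mark_of (idx pre) j)" by simp
      from ts_dead[OF this] al show False by simp
    qed
    then show ?thesis using al k Cons by (auto simp: nodesg_def ts_child child_st_def)
  qed
next
  fix k assume k: "k \<in> ?R"
  then show "k \<in> ?L" by (auto simp: nodesg_def ts_child child_st_def)
qed

lemma prod_le_psiD:
  assumes a1: "\<And>k s th. 1 \<le> a k s th"
  shows "finite (nodesg T tau idx Sp Bp pre (True, b, pos, th) \<inter> {k. length k < n}) \<and>
    (\<Prod>k\<in>nodesg T tau idx Sp Bp pre (True, b, pos, th) \<inter> {k. length k < n}.
        a (pre @ k) (fst (snd (tree_state T tau idx Sp Bp pre (True, b, pos, th) k)))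
                    (snd (snd (snd (tree_state T tau idx Sp Bp pre (True, b, pos, th) k)))))
    \<le> psiD a tau idx T n pre b th"
proof (induction n arbitrary: pre b pos th)
  case 0 then show ?case by simp
next
  case (Suc n)
  define J where "J = {j. b + tau pre < T \<and> j < sum_list (idx pre)}"
  define st where "st = (True, b, pos, th)"
  define cs where "cs = child_st T tau idx Sp Bp pre b pos"
  define A where "A j = nodesg T tau idx Sp Bp (pre @ [j]) (cs j) \<inter> {k. length k < n}" for j
  define f where "f k = a (pre @ k) (fst (snd (tree_state T tau idx Sp Bp pre st k))) (snd (snd (snd (tree_state T tau idx Sp Bp pre st k))))" for k
  define g where "g j k = a (pre @ [j] @ k) (fst (snd (tree_state T tau idx Sp Bp (pre @ [j]) (cs j) k))) (snd (snd (snd (tree_state T tau idx Sp Bp (pre @ [j]) (cs j) k))))" for j k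
  have dec: "nodesg T tau idx Sp Bp pre st \<inter> {k. length k < Suc n} = insert [] (\<Union>j\<in>J. Cons j ` A j)"
    unfolding st_def J_def A_def cs_def by (rule nodes_decomp)
  have finJ: "finite J" unfolding J_def by auto
  have csj: "cs j = (True, b + tau pre, (\<lambda>c. pos c + Bp pre (Sp pre (tau pre)) c), mark_of (idx pre) j)" for j
    by (simp add: cs_def child_st_def)
  have IH: "finite (A j) \<and> prod (g j) (A j) \<le> psiD a tau idx T n (pre @ [j]) (b + tau pre) (mark_of (idx pre) j)" for j
    using Suc.IH[of "pre @ [j]" "b + tau pre" "(\<lambda>c. pos c + Bp pre (Sp pre (tau pre)) c)" "mark_of (idx pre) j"]
    unfolding A_def g_def csj by simp
  have finU: "finite (\<Union>j\<in>J. Cons j ` A j)" using finJ IH by auto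
  have fg: "f (j # k) = g j k" if "j \<in> J" for j k
    using that unfolding f_def g_def st_def J_def cs_def by (simp add: ts_child child_st_def)
  have "prod f (insert [] (\<Union>j\<in>J. Cons j ` A j)) = f [] * prod f (\<Union>j\<in>J. Cons j ` A j)"
    using finU by (subst prod.insert) auto
  also have "prod f (\<Union>j\<in>J. Cons j ` A j) = (\<Prod>j\<in>J. prod f (Cons j ` A j))"
    using finJ IH by (subst prod.UNION_disjoint) (auto)
  also have "\<dots> = (\<Prod>j\<in>J. prod (g j) (A j))"
    by (rule prod.cong[OF refl]) (simp add: prod.reindex fg)
  also have "f [] = a pre b th" unfolding f_def st_def by simp
  finally have eq: "prod f (insert [] (\<Union>j\<in>J. Cons j ` A j)) = a pre b th * (\<Prod>j\<in>J. prod (g j) (A j))" .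
  have ge0: "0 \<le> prod (g j) (A j)" for j unfolding g_def using a1 by (intro prod_nonneg) (meson dual_order.trans zero_le_one)
  have le: "(\<Prod>j\<in>J. prod (g j) (A j)) \<le> (if b + tau pre < T then (\<Prod>j<sum_list (idx pre). psiD a tau idx T n (pre @ [j]) (b + tau pre) (mark_of (idx pre) j)) else 1)"
  proof (cases "b + tau pre < T")
    case True
    then have "J = {..<sum_list (idx pre)}" unfolding J_def by auto
    then show ?thesis using True IH ge0 by (simp add: prod_mono)
  next
    case False then have "J = {}" unfolding J_def by auto
    then show ?thesis using False by simp
  qed
  have "a pre b th * (\<Prod>j\<in>J. prod (g j) (A j)) \<le> psiD a tau idx T (Suc n) pre b th"
    using le a1[of pre b th] by (simp add: mult_left_mono)
  then show ?case using eq dec finU unfolding f_def st_def by simp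
qed

lemma gauss_moment:
  fixes X :: "'a \<Rightarrow> real" and \<sigma> q :: real
  assumes X: "distributed M lborel X (\<lambda>y. ennreal (normal_density 0 \<sigma> y))" and s: "0 < \<sigma>" and q: "0 < q"
  shows "(\<integral>\<^sup>+\<omega>. ennreal (\<bar>X \<omega>\<bar> powr q) \<partial>M) \<le> ennreal ((1 + fact (2 * nat \<lceil>q/2\<rceil>) / (2 ^ nat \<lceil>q/2\<rceil> * fact (nat \<lceil>q/2\<rceil>))) * \<sigma> powr q)"
proof -
  define k where "k = nat \<lceil>q/2\<rceil>"
  define C where "C = (fact (2 * k) / (2 ^ k * fact k) :: real)"
  have kq: "q \<le> real (2 * k)" unfolding k_def by linarith
  have C0: "0 \<le> C" unfolding C_def by simp
  have "(\<integral>\<^sup>+\<omega>. ennreal (\<bar>X \<omega>\<bar> powr q) \<partial>M) = (\<integral>\<^sup>+y. ennreal (normal_density 0 \<sigma> y) * ennreal (\<bar>y\<bar> powr q) \<partial>lborel)"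
    by (rule distributed_nn_integral[OF X, symmetric]) simp
  also have "\<dots> \<le> (\<integral>\<^sup>+y. ennreal (\<sigma> powr q * (normal_density 0 \<sigma> y * (y - 0) ^ (2 * k)) / \<sigma> ^ (2 * k) + \<sigma> powr q * (normal_density 0 \<sigma> y * (y - 0) ^ (2 * 0))) \<partial>lborel)"
  proof (rule nn_integral_mono)
    fix y :: real
    have nd: "0 \<le> normal_density 0 \<sigma> y" by simp
    have pt: "\<bar>y\<bar> powr q \<le> \<sigma> powr q * (y ^ (2 * k) / \<sigma> ^ (2 * k) + 1)"
    proof (cases "\<bar>y\<bar> \<le> \<sigma>")
      case True
      then have "\<bar>y\<bar> powr q \<le> \<sigma> powr q" using q by (intro powr_mono2) auto
      moreover have "\<sigma> powr q \<le> \<sigma> powr q * (y ^ (2 * k) / \<sigma> ^ (2 * k) + 1)"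
        using s by (simp add: zero_le_even_power)
      ultimately show ?thesis by linarith
    next
      case False
      then have y: "\<sigma> < \<bar>y\<bar>" by simp
      have r1: "1 \<le> \<bar>y\<bar> / \<sigma>" using y s by simp
      have "\<bar>y\<bar> powr q = \<sigma> powr q * (\<bar>y\<bar> / \<sigma>) powr q" using s by (simp add: powr_divide)
      also have "(\<bar>y\<bar> / \<sigma>) powr q \<le> (\<bar>y\<bar> / \<sigma>) powr real (2 * k)"
        using r1 kq by (intro powr_mono) auto
      also have "(\<bar>y\<bar> / \<sigma>) powr real (2 * k) = (\<bar>y\<bar> / \<sigma>) ^ (2 * k)"
        using s y by (intro powr_realpow) simp
      also have "\<dots> = y ^ (2 * k) / \<sigma> ^ (2 * k)"
        by (simp add: power_divide power_even_abs)
      finally have "\<bar>y\<bar> powr q \<le> \<sigma> powr q * (y ^ (2 * k) / \<sigma> ^ (2 * k))" using s by (simp add: mult_left_mono)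
      moreover have "\<sigma> powr q * (y ^ (2 * k) / \<sigma> ^ (2 * k)) \<le> \<sigma> powr q * (y ^ (2 * k) / \<sigma> ^ (2 * k) + 1)"
        by (intro mult_left_mono) auto
      ultimately show ?thesis by linarith
    qed
    have "normal_density 0 \<sigma> y * \<bar>y\<bar> powr q \<le> normal_density 0 \<sigma> y * (\<sigma> powr q * (y ^ (2 * k) / \<sigma> ^ (2 * k) + 1))"
      using pt nd by (rule mult_left_mono)
    also have "\<dots> = \<sigma> powr q * (normal_density 0 \<sigma> y * (y - 0) ^ (2 * k)) / \<sigma> ^ (2 * k) + \<sigma> powr q * (normal_density 0 \<sigma> y * (y - 0) ^ (2 * 0))"
      by (simp add: field_simps)
    finally have r: "normal_density 0 \<sigma> y * \<bar>y\<bar> powr q \<le> \<sigma> powr q * (normal_density 0 \<sigma> y * (y - 0) ^ (2 * k)) / \<sigma> ^ (2 * k) + \<sigma> powr q * (normal_density 0 \<sigma> y * (y - 0) ^ (2 * 0))" .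
    have e1: "ennreal (normal_density 0 \<sigma> y) * ennreal (\<bar>y\<bar> powr q) = ennreal (normal_density 0 \<sigma> y * \<bar>y\<bar> powr q)"
      using nd by (simp add: ennreal_mult)
    show "ennreal (normal_density 0 \<sigma> y) * ennreal (\<bar>y\<bar> powr q) \<le> ennreal (\<sigma> powr q * (normal_density 0 \<sigma> y * (y - 0) ^ (2 * k)) / \<sigma> ^ (2 * k) + \<sigma> powr q * (normal_density 0 \<sigma> y * (y - 0) ^ (2 * 0)))"
      unfolding e1 by (rule ennreal_leI[OF r])
  qed
  also have "\<dots> = ennreal (\<sigma> powr q * (fact (2 * k) / ((2 / \<sigma>\<^sup>2)^k * fact k)) / \<sigma> ^ (2 * k) + \<sigma> powr q * (fact (2 * 0) / ((2 / \<sigma>\<^sup>2)^0 * fact 0)))"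
  proof -
    have hb: "has_bochner_integral lborel (\<lambda>y. \<sigma> powr q * (normal_density 0 \<sigma> y * (y - 0) ^ (2 * k)) / \<sigma> ^ (2 * k) + \<sigma> powr q * (normal_density 0 \<sigma> y * (y - 0) ^ (2 * 0))) (\<sigma> powr q * (fact (2 * k) / ((2 / \<sigma>\<^sup>2)^k * fact k)) / \<sigma> ^ (2 * k) + \<sigma> powr q * (fact (2 * 0) / ((2 / \<sigma>\<^sup>2)^0 * fact 0)))"
      by (intro has_bochner_integral_add has_bochner_integral_divide_zero has_bochner_integral_mult_right normal_moment_even s)
    have "(\<integral>\<^sup>+y. ennreal ((\<lambda>y. \<sigma> powr q * (normal_density 0 \<sigma> y * (y - 0) ^ (2 * k)) / \<sigma> ^ (2 * k) + \<sigma> powr q * (normal_density 0 \<sigma> y * (y - 0) ^ (2 * 0))) y) \<partial>lborel) = ennreal (integral\<^sup>L lborel (\<lambda>y. \<sigma> powr q * (normal_density 0 \<sigma> y * (y - 0) ^ (2 * k)) / \<sigma> ^ (2 * k) + \<sigma> powr q * (normal_density 0 \<sigma> y * (y - 0) ^ (2 * 0))))"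
      by (rule nn_integral_eq_integral) (use hb in \<open>auto simp: has_bochner_integral_iff zero_le_even_power\<close>)
    then show ?thesis using hb by (simp add: has_bochner_integral_iff)
  qed
  also have "\<sigma> powr q * (fact (2 * k) / ((2 / \<sigma>\<^sup>2)^k * fact k)) / \<sigma> ^ (2 * k) + \<sigma> powr q * (fact (2 * 0) / ((2 / \<sigma>\<^sup>2)^0 * fact 0)) = (1 + C) * \<sigma> powr q"
    using s unfolding C_def by (simp add: field_simps power_mult power_divide power_mult_distrib[symmetric] power_commutes flip: power_mult)
  finally show ?thesis unfolding C_def k_def by simp
qed

lemma small_integral:
  fixes f :: "real \<Rightarrow> ennreal"
  assumes f[measurable]: "f \<in> borel_measurable borel" and T1: "0 < T1"
    and fin: "(\<integral>\<^sup>+s\<in>{0..T1}. f s \<partial>lborel) < \<infinity>" and e: "0 < e"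
  shows "\<exists>\<delta>>0. \<delta> \<le> T1 \<and> (\<integral>\<^sup>+s\<in>{0..\<delta>}. f s \<partial>lborel) < e"
proof -
  define g where "g n s = f s * indicator {0..T1 / real (Suc n)} s" for n s
  have dec: "decseq g"
  proof (rule decseq_SucI, rule le_funI)
    fix n s
    have "T1 / real (Suc (Suc n)) \<le> T1 / real (Suc n)" using T1 by (simp add: frac_le)
    then show "g (Suc n) s \<le> g n s" unfolding g_def
      by (intro mult_left_mono) (auto simp: indicator_def)
  qed
  have gm: "g n \<in> borel_measurable lborel" for n unfolding g_def by simp
  have gf: "(\<integral>\<^sup>+s. g n s \<partial>lborel) < \<infinity>" for n
  proof -
    have "(\<integral>\<^sup>+s. g n s \<partial>lborel) \<le> (\<integral>\<^sup>+s\<in>{0..T1}. f s \<partial>lborel)"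
    proof (rule nn_integral_mono)
      fix s
      have "T1 / real (Suc n) \<le> T1" using T1 by (simp add: divide_le_eq)
      then show "g n s \<le> f s * indicator {0..T1} s" unfolding g_def
        by (intro mult_left_mono) (auto simp: indicator_def)
    qed
    then show ?thesis using fin by simp
  qed
  have inf: "(INF n. g n s) = f s * indicator {0} s" for s
  proof (cases "s = 0")
    case True then show ?thesis using T1 by (simp add: g_def)
  next
    case False
    show ?thesis
    proof (cases "0 < s")
      case True
      obtain n0 where n0: "T1 / s < real n0" using reals_Archimedean2 by blast
      define n where "n = n0"
      have n: "T1 / s < real (Suc n)" using n0 unfolding n_def by simp
      then have "T1 / real (Suc n) < s" using True T1 by (simp add: divide_less_eq field_simps)
      then have "g n s = 0" unfolding g_def by (simp add: indicator_def)
      then have "(INF n. g n s) \<le> 0" by (metis INF_lower UNIV_I)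
      then show ?thesis using False by simp
    next
      case False2: False
      have "g 0 s = 0" using False2 \<open>s \<noteq> 0\<close> unfolding g_def by (simp add: indicator_def)
      then have "(INF n. g n s) \<le> 0" by (metis INF_lower UNIV_I)
      then show ?thesis using False2 \<open>s \<noteq> 0\<close> by simp
    qed
  qed
  have "(INF n. \<integral>\<^sup>+s. g n s \<partial>lborel) = (\<integral>\<^sup>+s. (INF n. g n s) \<partial>lborel)"
    by (rule nn_integral_monotone_convergence_INF_decseq[symmetric, OF dec gm gf])
  also have "\<dots> = (\<integral>\<^sup>+s. f s * indicator {0} s \<partial>lborel)" by (simp add: inf)
  also have "\<dots> = 0"
  proof -
    have "AE s in lborel. s \<noteq> 0" by (rule AE_lborel_singleton)
    then have "AE s in lborel. f s * indicator {0} s = 0" by eventually_elim simp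
    then show ?thesis by (simp add: nn_integral_0_iff_AE)
  qed
  finally have "(INF n. \<integral>\<^sup>+s. g n s \<partial>lborel) < e" using e by simp
  then obtain n where n: "(\<integral>\<^sup>+s. g n s \<partial>lborel) < e" by (auto simp: INF_less_iff)
  show ?thesis
    by (rule exI[of _ "T1 / real (Suc n)"]) (use n T1 in \<open>auto simp: g_def divide_le_eq\<close>)
qed

definition Fk :: "'w measure \<Rightarrow> (nat list \<Rightarrow> 'w \<Rightarrow> real) \<Rightarrow> (nat list \<Rightarrow> 'w \<Rightarrow> nat list) \<Rightarrow> (nat list \<Rightarrow> 'w \<Rightarrow> real \<Rightarrow> real)
   \<Rightarrow> (nat list \<Rightarrow> 'w \<Rightarrow> real \<Rightarrow> nat \<Rightarrow> real) \<Rightarrow> nat list \<times> nat \<Rightarrow> 'w set set" where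
  "Fk M tau idx S B = (\<lambda>(k, n::nat). if n = 0 then sets (vimage_algebra (space M) (tau k) borel)
                 else if n = 1 then sets (vimage_algebra (space M) (idx k) (count_space UNIV))
                 else if n = 2 then sets (vimage_algebra (space M) (S k) (\<Pi>\<^sub>M u\<in>UNIV. (borel :: real measure)))
                 else sets (vimage_algebra (space M) (B k) (\<Pi>\<^sub>M u\<in>UNIV. \<Pi>\<^sub>M j\<in>UNIV. (borel :: real measure))))"

locale tsetup = prob_space M for M :: "'w measure" +
  fixes d :: nat and tau :: "nat list \<Rightarrow> 'w \<Rightarrow> real" and idx :: "nat list \<Rightarrow> 'w \<Rightarrow> nat list"
    and S :: "nat list \<Rightarrow> 'w \<Rightarrow> real \<Rightarrow> real" and B :: "nat list \<Rightarrow> 'w \<Rightarrow> real \<Rightarrow> nat \<Rightarrow> real"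
    and \<eta> \<rho> :: "real \<Rightarrow> real"
  assumes indep: "indep_sets (Fk M tau idx S B) (UNIV \<times> {..<4})"
    and S_sub: "\<forall>k. subordinator M \<eta> (S k)"
    and B_BM: "\<forall>k. std_BM M d (B k)"
    and tau_distr: "\<forall>k. distributed M lborel (tau k) (\<lambda>s. if 0 \<le> s then ennreal (\<rho> s) else 0)"
    and rho_meas: "\<rho> \<in> borel_measurable borel" and rho_pos: "\<forall>s\<ge>0. 0 < \<rho> s"
begin

definition Sg :: "(nat list \<times> nat) set \<Rightarrow> 'w measure" where
  "Sg P = sigma (space M) (\<Union> (Fk M tau idx S B ` (P \<inter> UNIV \<times> {..<4})))"

lemma Fk_events: "Fk M tau idx S B kn \<subseteq> events" if "kn \<in> UNIV \<times> {..<4}"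
  using indep that unfolding indep_sets_def by auto

lemma Fk_space: "Fk M tau idx S B kn \<subseteq> Pow (space M)"
proof -
  obtain k n where kn: "kn = (k, n)" by (cases kn)
  have *: "\<And>f N A. A \<in> sets (vimage_algebra (space M) f N) \<Longrightarrow> A \<subseteq> space M"
    using sets.sets_into_space by fastforce
  show ?thesis unfolding kn Fk_def by (auto dest!: *)
qed

lemma space_Sg[simp]: "space (Sg P) = space M"
  unfolding Sg_def using Fk_space by (intro space_measure_of) auto

lemma sets_Sg: "sets (Sg P) = sigma_sets (space M) (\<Union> (Fk M tau idx S B ` (P \<inter> UNIV \<times> {..<4})))"
  unfolding Sg_def using Fk_space by (intro sets_measure_of) auto

lemma subalg_Sg: "subalgebra M (Sg P)"
  unfolding subalgebra_def
proof
  show "space (Sg P) = space M" by simp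
  show "sets (Sg P) \<subseteq> sets M" unfolding sets_Sg
    using Fk_events by (intro sets.sigma_sets_subset) auto
qed

lemma Sg_mono_sets: "P \<subseteq> Q \<Longrightarrow> sets (Sg P) \<subseteq> sets (Sg Q)"
  unfolding sets_Sg by (intro sigma_sets_mono') auto

lemma Sg_mono: "P \<subseteq> Q \<Longrightarrow> f \<in> measurable (Sg P) N \<Longrightarrow> f \<in> measurable (Sg Q) N"
  using Sg_mono_sets[of P Q] unfolding measurable_def by auto

lemma Sg_id: "P \<subseteq> Q \<Longrightarrow> (\<lambda>x. x) \<in> measurable (Sg Q) (Sg P)"
  using Sg_mono_sets[of P Q] unfolding measurable_def by auto

lemma Sg_pair_mono: "P \<subseteq> Q \<Longrightarrow> f \<in> measurable (K \<Otimes>\<^sub>M Sg P) N \<Longrightarrow> f \<in> measurable (K \<Otimes>\<^sub>M Sg Q) N"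
proof -
  assume PQ: "P \<subseteq> Q" and f: "f \<in> measurable (K \<Otimes>\<^sub>M Sg P) N"
  have "(\<lambda>x. (fst x, snd x)) \<in> measurable (K \<Otimes>\<^sub>M Sg Q) (K \<Otimes>\<^sub>M Sg P)"
    by (intro measurable_Pair measurable_fst measurable_compose[OF measurable_snd Sg_id[OF PQ]])
  from measurable_compose[OF this f] show ?thesis by simp
qed

lemma Sg_in: "kn \<in> P \<Longrightarrow> kn \<in> UNIV \<times> {..<4} \<Longrightarrow> A \<in> Fk M tau idx S B kn \<Longrightarrow> A \<in> sets (Sg P)"
  unfolding sets_Sg by (rule sigma_sets.Basic) auto

lemma Int_stable_Fk: "Int_stable (Fk M tau idx S B kn)"
proof -
  obtain k n where kn: "kn = (k, n)" by (cases kn)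
  show ?thesis unfolding kn Fk_def by (auto simp: Int_stable_def)
qed

lemma indep_Sg_family:
  assumes "disjoint_family_on P J"
  shows "indep_sets (\<lambda>j. sets (Sg (P j))) J"
proof -
  let ?I = "\<lambda>j. P j \<inter> UNIV \<times> {..<4}"
  have "indep_sets (\<lambda>j. sigma_sets (space M) (\<Union>i\<in>?I j. Fk M tau idx S B i)) J"
  proof (rule indep_sets_collect_sigma)
    show "indep_sets (Fk M tau idx S B) (\<Union>j\<in>J. ?I j)"
      by (rule indep_sets_mono_index[OF _ indep]) auto
    show "Int_stable (Fk M tau idx S B i)" for i by (rule Int_stable_Fk)
    show "disjoint_family_on ?I J" using assms unfolding disjoint_family_on_def by auto
  qed
  then show ?thesis by (simp add: sets_Sg)
qed

lemma indep_Sg2: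
  assumes "P \<inter> Q = {}" and A: "A \<in> sets (Sg P)" and Bs: "Bs \<in> sets (Sg Q)"
  shows "emeasure M (A \<inter> Bs) = emeasure M A * emeasure M Bs"
proof -
  have "disjoint_family_on (\<lambda>b. if b then P else Q) UNIV"
    using assms(1) unfolding disjoint_family_on_def by auto
  from indep_Sg_family[OF this] have I: "indep_sets (\<lambda>b. sets (Sg (if b then P else Q))) UNIV"
    by (simp add: if_distrib)
  have "prob (\<Inter>b\<in>UNIV. (\<lambda>b. if b then A else Bs) b) = (\<Prod>b\<in>UNIV. prob ((\<lambda>b. if b then A else Bs) b))"
    by (rule indep_setsD[OF I]) (use A Bs in auto)
  moreover have "(\<Inter>b\<in>UNIV. (\<lambda>b. if b then A else Bs) b) = A \<inter> Bs" by (auto simp: UNIV_bool)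
  ultimately have "prob (A \<inter> Bs) = prob A * prob Bs" by (simp add: UNIV_bool)
  then show ?thesis by (simp add: emeasure_eq_measure ennreal_mult)
qed

lemma freezeSg:
  assumes "P \<inter> Q = {}"
    and h: "h \<in> borel_measurable (Sg P)" and Z: "Z \<in> measurable (Sg P) K"
    and G: "(\<lambda>(z,\<omega>). G z \<omega>) \<in> borel_measurable (K \<Otimes>\<^sub>M Sg Q)"
  shows "(\<integral>\<^sup>+\<omega>. h \<omega> * G (Z \<omega>) \<omega> \<partial>M) = (\<integral>\<^sup>+\<omega>. h \<omega> * (\<integral>\<^sup>+\<omega>'. G (Z \<omega>) \<omega>' \<partial>M) \<partial>M)"
  by (rule freeze[OF prob_space_axioms subalg_Sg subalg_Sg _ h Z G]) (rule indep_Sg2[OF assms(1)])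

lemma meas_tau: "(0::nat) \<le> 0 \<Longrightarrow> (k, 0) \<in> P \<Longrightarrow> tau k \<in> borel_measurable (Sg P)"
proof -
  assume "(k, 0) \<in> P"
  then have "sets (vimage_algebra (space M) (tau k) borel) \<subseteq> sets (Sg P)"
    using Sg_in[of "(k,0)" P] by (auto simp: Fk_def)
  then show ?thesis
    using measurable_vimage_algebra1[of "tau k" "space M" borel] unfolding measurable_def by auto
qed

lemma meas_idx: "(k, 1) \<in> P \<Longrightarrow> idx k \<in> measurable (Sg P) (count_space UNIV)"
proof -
  assume "(k, 1) \<in> P"
  then have "sets (vimage_algebra (space M) (idx k) (count_space UNIV)) \<subseteq> sets (Sg P)"
    using Sg_in[of "(k,1)" P] by (auto simp: Fk_def)
  then show ?thesis
    using measurable_vimage_algebra1[of "idx k" "space M" "count_space UNIV"] unfolding measurable_def by auto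
qed

lemma meas_S: "(k, 2) \<in> P \<Longrightarrow> (\<lambda>\<omega>. S k \<omega> u) \<in> borel_measurable (Sg P)"
proof -
  assume "(k, 2) \<in> P"
  then have "sets (vimage_algebra (space M) (S k) (\<Pi>\<^sub>M u\<in>UNIV. (borel :: real measure))) \<subseteq> sets (Sg P)"
    using Sg_in[of "(k,2)" P] by (auto simp: Fk_def)
  moreover have "S k \<in> space M \<rightarrow> space (\<Pi>\<^sub>M u\<in>UNIV. (borel :: real measure))" by (auto simp: space_PiM)
  ultimately have "S k \<in> measurable (Sg P) (\<Pi>\<^sub>M u\<in>UNIV. (borel :: real measure))"
    using measurable_vimage_algebra1[of "S k" "space M" "\<Pi>\<^sub>M u\<in>UNIV. (borel :: real measure)"] unfolding measurable_def by auto
  from measurable_compose[OF this measurable_component_singleton[of u UNIV]] show ?thesis by simp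
qed

lemma meas_B: "(k, 3) \<in> P \<Longrightarrow> (\<lambda>\<omega>. B k \<omega> v j) \<in> borel_measurable (Sg P)"
proof -
  assume "(k, 3) \<in> P"
  then have "sets (vimage_algebra (space M) (B k) (\<Pi>\<^sub>M u\<in>UNIV. \<Pi>\<^sub>M j\<in>UNIV. (borel :: real measure))) \<subseteq> sets (Sg P)"
    using Sg_in[of "(k,3)" P] by (auto simp: Fk_def)
  moreover have "B k \<in> space M \<rightarrow> space (\<Pi>\<^sub>M u\<in>UNIV. \<Pi>\<^sub>M j\<in>UNIV. (borel :: real measure))" by (auto simp: space_PiM)
  ultimately have "B k \<in> measurable (Sg P) (\<Pi>\<^sub>M u\<in>UNIV. \<Pi>\<^sub>M j\<in>UNIV. (borel :: real measure))"
    using measurable_vimage_algebra1[of "B k" "space M" "\<Pi>\<^sub>M u\<in>UNIV. \<Pi>\<^sub>M j\<in>UNIV. (borel :: real measure)"] unfolding measurable_def by auto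
  from measurable_compose[OF measurable_compose[OF this measurable_component_singleton[of v UNIV]] measurable_component_singleton[of j UNIV]]
  show ?thesis by simp
qed

lemma S_props: "\<omega> \<in> space M \<Longrightarrow> S k \<omega> 0 = 0 \<and> mono_on {0..} (S k \<omega>) \<and> (\<forall>t\<ge>0. continuous (at_right t) (S k \<omega>))"
  using S_sub unfolding subordinator_def by blast

lemma S_nonneg: "\<omega> \<in> space M \<Longrightarrow> 0 \<le> u \<Longrightarrow> 0 \<le> S k \<omega> u"
  using S_props[of \<omega> k] unfolding mono_on_def by (metis atLeast_iff order_refl)

lemma B_props: "\<omega> \<in> space M \<Longrightarrow> B k \<omega> 0 = (\<lambda>_. 0) \<and> (\<forall>t j. d \<le> j \<longrightarrow> B k \<omega> t j = 0) \<and> (\<forall>j. continuous_on {0..} (\<lambda>t. B k \<omega> t j))"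
  using B_BM unfolding std_BM_def by blast

definition Sx where "Sx k u \<omega> = S k \<omega> (max 0 u)"
definition Y where "Y k u j \<omega> = B k \<omega> (max 0 (Sx k u \<omega>)) j"

lemma Sx_nonneg: "\<omega> \<in> space M \<Longrightarrow> 0 \<le> Sx k u \<omega>"
  unfolding Sx_def by (rule S_nonneg) auto

lemma J1: "(k, 2) \<in> P \<Longrightarrow> (\<lambda>x. Sx k (fst x) (snd x)) \<in> borel_measurable ((borel :: real measure) \<Otimes>\<^sub>M Sg P)"
  unfolding Sx_def
  by (rule rc_joint[where f="\<lambda>u \<omega>. S k \<omega> u"]) (use meas_S S_props in auto)

lemma J2: "(k, 3) \<in> P \<Longrightarrow> (\<lambda>x. B k (snd x) (max 0 (fst x)) j) \<in> borel_measurable ((borel :: real measure) \<Otimes>\<^sub>M Sg P)"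
proof (rule rc_joint[where f="\<lambda>u \<omega>. B k \<omega> u j"])
  fix \<omega> u assume "\<omega> \<in> space (Sg P)" "0 \<le> (u::real)"
  then have "continuous_on {0..} (\<lambda>t. B k \<omega> t j)" "u \<in> {0..}" using B_props[of \<omega> k] by auto
  then have c: "continuous (at u within {0..}) (\<lambda>t. B k \<omega> t j)" by (simp add: continuous_on_eq_continuous_within)
  show "continuous (at_right u) (\<lambda>v. B k \<omega> v j)"
    by (rule continuous_within_subset[OF c]) (use \<open>0 \<le> u\<close> in auto)
qed (use meas_B in auto)

lemma J3: "(k, 2) \<in> P \<Longrightarrow> (k, 3) \<in> P \<Longrightarrow> (\<lambda>x. Y k (fst x) j (snd x)) \<in> borel_measurable ((borel :: real measure) \<Otimes>\<^sub>M Sg P)"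
proof -
  assume a: "(k, 2) \<in> P" "(k, 3) \<in> P"
  have "(\<lambda>x. (Sx k (fst x) (snd x), snd x)) \<in> measurable (borel \<Otimes>\<^sub>M Sg P) (borel \<Otimes>\<^sub>M Sg P)"
    by (intro measurable_Pair J1[OF a(1)] measurable_snd)
  from measurable_compose[OF this J2[OF a(2)]] show ?thesis unfolding Y_def by simp
qed

lemma J1c: "(k, 2) \<in> P \<Longrightarrow> f \<in> borel_measurable N \<Longrightarrow> g \<in> measurable N (Sg P) \<Longrightarrow> (\<lambda>x. Sx k (f x) (g x)) \<in> borel_measurable N"
  using measurable_compose[OF measurable_Pair J1] by simp

lemma J3c: "(k, 2) \<in> P \<Longrightarrow> (k, 3) \<in> P \<Longrightarrow> f \<in> borel_measurable N \<Longrightarrow> g \<in> measurable N (Sg P) \<Longrightarrow> (\<lambda>x. Y k (f x) j (g x)) \<in> borel_measurable N"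
  using measurable_compose[OF measurable_Pair J3] by simp

end

context tsetup begin

lemma rho_int1: "(\<integral>\<^sup>+ s\<in>{0..}. ennreal (\<rho> s) \<partial>lborel) = 1"
proof -
  have D: "distributed M lborel (tau []) (\<lambda>s. if 0 \<le> s then ennreal (\<rho> s) else 0)" using tau_distr by blast
  then have "distr M lborel (tau []) = density lborel (\<lambda>s. if 0 \<le> s then ennreal (\<rho> s) else 0)"
    and m: "tau [] \<in> measurable M lborel" "(\<lambda>s. if 0 \<le> s then ennreal (\<rho> s) else 0) \<in> borel_measurable lborel"
    unfolding distributed_def by auto
  then have "emeasure (density lborel (\<lambda>s. if 0 \<le> s then ennreal (\<rho> s) else 0)) UNIV = emeasure (distr M lborel (tau [])) UNIV"
    by simp
  also have "\<dots> = 1" using m by (simp add: emeasure_distr emeasure_space_1)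
  finally have "(\<integral>\<^sup>+ s. (if 0 \<le> s then ennreal (\<rho> s) else 0) \<partial>lborel) = 1"
    using m by (simp add: emeasure_density)
  moreover have "(\<lambda>s. (if 0 \<le> s then ennreal (\<rho> s) else 0)) = (\<lambda>s. ennreal (\<rho> s) * indicator {0..} s)"
    by (auto simp: indicator_def)
  ultimately show ?thesis by simp
qed

lemma Fbar_ennreal: "0 \<le> z \<Longrightarrow> ennreal (Fbar \<rho> z) = (\<integral>\<^sup>+ s\<in>{z..}. ennreal (\<rho> s) \<partial>lborel)"
proof -
  assume z: "0 \<le> z"
  have "(\<integral>\<^sup>+ s\<in>{z..}. ennreal (\<rho> s) \<partial>lborel) \<le> (\<integral>\<^sup>+ s\<in>{0..}. ennreal (\<rho> s) \<partial>lborel)"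
    using z by (intro nn_integral_mono) (auto simp: indicator_def)
  then have "(\<integral>\<^sup>+ s\<in>{z..}. ennreal (\<rho> s) \<partial>lborel) \<le> 1" using rho_int1 by simp
  then have "(\<integral>\<^sup>+ s\<in>{z..}. ennreal (\<rho> s) \<partial>lborel) < \<top>" using ennreal_one_less_top by (meson le_less_trans)
  then show ?thesis unfolding Fbar_def by simp
qed

lemma Fbar_le1: "0 \<le> z \<Longrightarrow> Fbar \<rho> z \<le> 1"
proof -
  assume z: "0 \<le> z"
  have "ennreal (Fbar \<rho> z) \<le> (\<integral>\<^sup>+ s\<in>{0..}. ennreal (\<rho> s) \<partial>lborel)"
    unfolding Fbar_ennreal[OF z] using z by (intro nn_integral_mono) (auto simp: indicator_def)
  then show ?thesis using rho_int1 by simp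
qed

lemma Fbar_nonneg: "0 \<le> Fbar \<rho> z" unfolding Fbar_def by simp

lemma Fbar_anti: "0 \<le> a \<Longrightarrow> a \<le> b \<Longrightarrow> Fbar \<rho> b \<le> Fbar \<rho> a"
proof -
  assume ab: "0 \<le> a" "a \<le> b"
  have b0: "0 \<le> b" using ab by simp
  have "ennreal (Fbar \<rho> b) \<le> ennreal (Fbar \<rho> a)"
    unfolding Fbar_ennreal[OF ab(1)] Fbar_ennreal[OF b0] using ab by (intro nn_integral_mono) (auto simp: indicator_def)
  then show ?thesis using Fbar_nonneg by (simp add: ennreal_le_iff)
qed

lemma Fbar_pos: "0 \<le> z \<Longrightarrow> 0 < Fbar \<rho> z"
proof -
  assume z: "0 \<le> z"
  have "(\<integral>\<^sup>+ s\<in>{z..}. ennreal (\<rho> s) \<partial>lborel) \<noteq> 0"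
  proof
    assume "(\<integral>\<^sup>+ s\<in>{z..}. ennreal (\<rho> s) \<partial>lborel) = 0"
    then have "AE s in lborel. ennreal (\<rho> s) * indicator {z..} s = 0"
      using rho_meas by (subst (asm) nn_integral_0_iff_AE) auto
    moreover have pt: "ennreal (\<rho> s) * indicator {z..} s = 0 \<longrightarrow> s \<notin> {z..}" for s
    proof (intro impI notI)
      assume "ennreal (\<rho> s) * indicator {z..} s = 0" "s \<in> {z..}"
      moreover have "0 < \<rho> s" using rho_pos z \<open>s \<in> {z..}\<close> by auto
      ultimately show False by simp
    qed
    ultimately have "AE s in lborel. s \<notin> {z..}"
      by (rule AE_mp[OF _ AE_I2])
    then have "{z..} \<in> null_sets lborel"
      by (subst AE_iff_null_sets) auto
    moreover have "emeasure lborel {z..z+1} \<le> emeasure lborel {z..}"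
      by (intro emeasure_mono) auto
    ultimately show False by (simp add: null_sets_def)
  qed
  then have "0 < ennreal (Fbar \<rho> z)" unfolding Fbar_ennreal[OF z] by (simp add: zero_less_iff_neq_zero)
  then show ?thesis by (simp add: ennreal_less_iff)
qed

end

locale tsetup2 = tsetup +
  fixes T p Cc qmin Cphi Lc :: real
  assumes T: "0 < T" and p: "1 \<le> p" and Cc: "0 \<le> Cc" and qmin: "0 < qmin" and Cphi: "0 \<le> Cphi" and Lc: "0 \<le> Lc"
    and eta_meas: "(\<lambda>l. if 0 < l then \<eta> l else 0) \<in> borel_measurable borel"
begin

definition WI where "WI th k u \<omega> = (if th = 0 then 1 else \<bar>Y k u (th - 1) \<omega>\<bar> / Sx k u \<omega>)"
definition XB where "XB th k u \<omega> = (if th = 0 then Cphi else Lc * eucl_norm d (\<lambda>j. Y k u j \<omega>) * \<bar>Y k u (th - 1) \<omega>\<bar> / Sx k u \<omega>)"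
definition FB where "FB s = Fbar \<rho> (max 0 (T - s))"
definition abnd where "abnd k s th \<omega> = (if s + tau k \<omega> < T then (Cc * WI th k (tau k \<omega>) \<omega> / (qmin * \<rho> (tau k \<omega>))) powr p
     else (XB th k (T - s) \<omega> / FB s) powr p)"
definition aa where "aa k s th \<omega> = 2 * max 1 (abnd k s th \<omega>)"
definition psi where "psi n r s th \<omega> = psiD (\<lambda>k s th. aa k s th \<omega>) (\<lambda>k. tau k \<omega>) (\<lambda>k. idx k \<omega>) T n r s th"

lemma abnd_nonneg: "0 \<le> abnd k s th \<omega>" unfolding abnd_def by simp
lemma aa_ge: "2 \<le> aa k s th \<omega>" unfolding aa_def by simp
lemma psi_ge1: "1 \<le> psi n r s th \<omega>" unfolding psi_def by (rule psiD_ge1) (simp add: aa_def)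

lemma psi_Suc: "psi (Suc n) r s th \<omega> = aa r s th \<omega> *
  (if s + tau r \<omega> < T then (\<Prod>j<sum_list (idx r \<omega>). psi n (r @ [j]) (s + tau r \<omega>) (mark_of (idx r \<omega>) j) \<omega>) else 1)"
  unfolding psi_def by simp

lemma FB_mono: "mono FB"
proof (rule monoI)
  fix a b :: real assume "a \<le> b"
  then show "FB a \<le> FB b" unfolding FB_def by (intro Fbar_anti) auto
qed

lemma FB_meas[measurable]: "FB \<in> borel_measurable borel"
  by (rule borel_measurable_mono[OF FB_mono])

lemma meas_abnd: "(\<lambda>x. abnd k (fst x) th (snd x)) \<in> borel_measurable ((borel :: real measure) \<Otimes>\<^sub>M Sg ({k} \<times> UNIV))"
proof -
  let ?N = "(borel :: real measure) \<Otimes>\<^sub>M Sg ({k} \<times> UNIV)"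
  have snd: "snd \<in> measurable ?N (Sg ({k} \<times> UNIV))" by simp
  have t[measurable]: "(\<lambda>x. tau k (snd x)) \<in> borel_measurable ?N"
    by (rule measurable_compose[OF snd meas_tau]) auto
  have r[measurable]: "\<rho> \<in> borel_measurable borel" by (rule rho_meas)
  have y1[measurable]: "(\<lambda>x. Y k (tau k (snd x)) j (snd x)) \<in> borel_measurable ?N" for j
    by (rule J3c[OF _ _ t snd]) auto
  have s1[measurable]: "(\<lambda>x. Sx k (tau k (snd x)) (snd x)) \<in> borel_measurable ?N"
    by (rule J1c[OF _ t snd]) auto
  have y2[measurable]: "(\<lambda>x. Y k (T - fst x) j (snd x)) \<in> borel_measurable ?N" for j
    by (rule J3c[OF _ _ _ snd]) auto
  have s2[measurable]: "(\<lambda>x. Sx k (T - fst x) (snd x)) \<in> borel_measurable ?N"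
    by (rule J1c[OF _ _ snd]) auto
  show ?thesis unfolding abnd_def WI_def XB_def eucl_norm_def by measurable
qed

lemma meas_aa: "(\<lambda>x. aa k (fst x) th (snd x)) \<in> borel_measurable ((borel :: real measure) \<Otimes>\<^sub>M Sg ({k} \<times> UNIV))"
  unfolding aa_def using meas_abnd by measurable

definition sub where "sub r = {k. \<exists>k'. k = r @ k'} \<times> (UNIV :: nat set)"
definition desc where "desc r = {k. \<exists>j k'. k = r @ (j # k')} \<times> (UNIV :: nat set)"

lemma sub_child: "sub (r @ [j]) \<subseteq> desc r" unfolding sub_def desc_def by auto
lemma sub_child2: "sub (r @ [j]) \<subseteq> sub r" unfolding sub_def by auto
lemma desc_sub: "desc r \<subseteq> sub r" unfolding sub_def desc_def by auto
lemma root_sub: "{r} \<times> UNIV \<subseteq> sub r" unfolding sub_def by auto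
lemma root_desc: "({r} \<times> UNIV) \<inter> desc r = {}" unfolding desc_def by auto
lemma sub_disj: "disjoint_family_on (\<lambda>j. sub (r @ [j])) J" unfolding disjoint_family_on_def sub_def by auto

lemma meas_psi: "(\<lambda>x. psi n r (fst x) th (snd x)) \<in> borel_measurable ((borel :: real measure) \<Otimes>\<^sub>M Sg (sub r))"
proof (induction n arbitrary: r th)
  case 0 then show ?case by (simp add: psi_def)
next
  case (Suc n)
  let ?N = "(borel :: real measure) \<Otimes>\<^sub>M Sg (sub r)"
  have snd: "snd \<in> measurable ?N (Sg (sub r))" by simp
  have t[measurable]: "(\<lambda>x. tau r (snd x)) \<in> borel_measurable ?N"
    by (rule measurable_compose[OF snd meas_tau]) (auto simp: sub_def)
  have i: "(\<lambda>x. idx r (snd x)) \<in> measurable ?N (count_space UNIV)"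
    by (rule measurable_compose[OF snd meas_idx]) (auto simp: sub_def)
  have a: "(\<lambda>x. aa r (fst x) th (snd x)) \<in> borel_measurable ?N"
    by (rule Sg_pair_mono[OF root_sub meas_aa])
  have ch: "(\<lambda>x. psi n (r @ [j]) (fst x + tau r (snd x)) th' (snd x)) \<in> borel_measurable ?N" for j th'
  proof -
    have "(\<lambda>x. (fst x + tau r (snd x), snd x)) \<in> measurable ?N (borel \<Otimes>\<^sub>M Sg (sub (r @ [j])))"
      by (intro measurable_Pair measurable_compose[OF snd Sg_id[OF sub_child2]]) auto
    from measurable_compose[OF this Suc.IH[of "r @ [j]" th']] show ?thesis by simp
  qed
  have "(\<lambda>x. (\<lambda>l. if fst x + tau r (snd x) < T then (\<Prod>j<sum_list l. psi n (r @ [j]) (fst x + tau r (snd x)) (mark_of l j) (snd x)) else 1) (idx r (snd x))) \<in> borel_measurable ?N"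
  proof (rule measurable_compose_countable[OF _ i])
    fix l :: "nat list"
    show "(\<lambda>x. if fst x + tau r (snd x) < T then (\<Prod>j<sum_list l. psi n (r @ [j]) (fst x + tau r (snd x)) (mark_of l j) (snd x)) else 1) \<in> borel_measurable ?N"
      using ch by measurable
  qed
  then have "(\<lambda>x. aa r (fst x) th (snd x) * (if fst x + tau r (snd x) < T then (\<Prod>j<sum_list (idx r (snd x)). psi n (r @ [j]) (fst x + tau r (snd x)) (mark_of (idx r (snd x)) j) (snd x)) else 1)) \<in> borel_measurable ?N"
    using a by measurable
  then show ?case by (simp add: psi_Suc)
qed

end

definition Cq :: "real \<Rightarrow> real" where
  "Cq q = 1 + fact (2 * nat \<lceil>q/2\<rceil>) / (2 ^ nat \<lceil>q/2\<rceil> * fact (nat \<lceil>q/2\<rceil>))"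

lemma Cq_pos: "0 < Cq q" unfolding Cq_def by (simp add: add_pos_nonneg)

context tsetup begin

lemma meas_M: "f \<in> measurable (Sg P) N \<Longrightarrow> f \<in> measurable M N"
  by (rule measurable_from_subalg[OF subalg_Sg])

lemma tau_int: "g \<in> borel_measurable borel \<Longrightarrow>
   (\<integral>\<^sup>+\<omega>. g (tau r \<omega>) \<partial>M) = (\<integral>\<^sup>+u. ennreal (\<rho> u) * indicator {0..} u * g u \<partial>lborel)"
proof -
  assume g: "g \<in> borel_measurable borel"
  have D: "distributed M lborel (tau r) (\<lambda>s. if 0 \<le> s then ennreal (\<rho> s) else 0)" using tau_distr by blast
  have "(\<integral>\<^sup>+\<omega>. g (tau r \<omega>) \<partial>M) = (\<integral>\<^sup>+u. (if 0 \<le> u then ennreal (\<rho> u) else 0) * g u \<partial>lborel)"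
    by (rule distributed_nn_integral[OF D, symmetric]) (use g in simp)
  also have "\<dots> = (\<integral>\<^sup>+u. ennreal (\<rho> u) * indicator {0..} u * g u \<partial>lborel)"
    by (intro nn_integral_cong) (auto simp: indicator_def)
  finally show ?thesis .
qed

lemma AE_tau: "AE \<omega> in M. \<forall>k. 0 \<le> tau k \<omega>"
proof (subst AE_all_countable, intro allI)
  fix k
  have m: "tau k \<in> borel_measurable M" by (rule meas_M[OF meas_tau[of k "{(k,0)}"]]) auto
  have sm: "{\<omega>\<in>space M. tau k \<omega> < 0} \<in> sets M" using m by measurable
  have "emeasure M {\<omega>\<in>space M. tau k \<omega> < 0} = (\<integral>\<^sup>+\<omega>. indicator {\<omega>\<in>space M. tau k \<omega> < 0} \<omega> \<partial>M)"
    using sm by simp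
  also have "\<dots> = (\<integral>\<^sup>+\<omega>. indicator {..<0} (tau k \<omega>) \<partial>M)"
    by (intro nn_integral_cong) (auto simp: indicator_def)
  also have "\<dots> = (\<integral>\<^sup>+u. ennreal (\<rho> u) * indicator {0..} u * indicator {..<0} u \<partial>lborel)"
    by (rule tau_int) simp
  also have "\<dots> = (\<integral>\<^sup>+(u::real). 0 \<partial>lborel)" by (rule nn_integral_cong) (auto simp: indicator_def)
  also have "\<dots> = 0" by simp
  finally show "AE \<omega> in M. 0 \<le> tau k \<omega>"
    using m by (subst AE_iff_measurable[where N="{\<omega>\<in>space M. tau k \<omega> < 0}"]) (auto simp: not_le)
qed

lemma Bmom:
  assumes v: "0 < v" and q: "0 < q"
  shows "(\<integral>\<^sup>+\<omega>. ennreal (\<bar>B r \<omega> v j\<bar> powr q) \<partial>M) \<le> ennreal (Cq q * v powr (q/2))"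
proof (cases "j < d")
  case True
  have Br: "std_BM M d (B r)" using B_BM by blast
  have D: "distributed M lborel (\<lambda>\<omega>. B r \<omega> v j - B r \<omega> 0 j) (\<lambda>y. ennreal (normal_density 0 (sqrt (v - 0)) y))"
    using Br True v unfolding std_BM_def by blast
  have "(\<integral>\<^sup>+\<omega>. ennreal (\<bar>B r \<omega> v j\<bar> powr q) \<partial>M) = (\<integral>\<^sup>+\<omega>. ennreal (\<bar>B r \<omega> v j - B r \<omega> 0 j\<bar> powr q) \<partial>M)"
    by (intro nn_integral_cong) (simp add: B_props)
  also have "\<dots> \<le> ennreal (Cq q * sqrt v powr q)"
    using gauss_moment[OF D _ q] v unfolding Cq_def by (simp del: diff_0_right)
  also have "sqrt v powr q = v powr (q/2)"
    using v by (simp add: powr_half_sqrt[symmetric] powr_powr)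
  finally show ?thesis .
next
  case False
  then have "(\<integral>\<^sup>+\<omega>. ennreal (\<bar>B r \<omega> v j\<bar> powr q) \<partial>M) = (\<integral>\<^sup>+\<omega>. 0 \<partial>M)"
    by (intro nn_integral_cong) (simp add: B_props)
  then show ?thesis by simp
qed

lemma laplace:
  assumes l: "0 < l" and u: "0 \<le> u"
  shows "(\<integral>\<^sup>+\<omega>. ennreal (exp (- l * S r \<omega> u)) \<partial>M) = ennreal (exp (- u * \<eta> l))"
proof -
  have m: "(\<lambda>\<omega>. S r \<omega> u) \<in> borel_measurable M" by (rule meas_M[OF meas_S[of r "{(r,2)}"]]) auto
  have int: "integrable M (\<lambda>\<omega>. exp (- l * S r \<omega> u))"
  proof (rule integrable_const_bound[where B=1])
    show "AE \<omega> in M. norm (exp (- l * S r \<omega> u)) \<le> 1"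
      using S_nonneg l u by (auto intro!: AE_I2 simp: mult_nonneg_nonneg)
  qed (use m in simp)
  have "(\<integral>\<^sup>+\<omega>. ennreal (exp (- l * S r \<omega> u)) \<partial>M) = ennreal (\<integral>\<omega>. exp (- l * S r \<omega> u) \<partial>M)"
    by (rule nn_integral_eq_integral[OF int]) simp
  also have "(\<integral>\<omega>. exp (- l * S r \<omega> u) \<partial>M) = exp (- u * \<eta> l)"
    using S_sub l u unfolding subordinator_def by blast
  finally show ?thesis .
qed

definition Ka :: "real \<Rightarrow> real" where "Ka a = 2 * exp 1 * max (2 powr (a - 1)) 1"

definition Lap :: "real \<Rightarrow> real \<Rightarrow> ennreal" where
  "Lap a u = (\<integral>\<^sup>+ l\<in>{0<..}. ennreal (exp (- u * \<eta> l) * l powr (a - 1)) \<partial>lborel)"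

lemma negmom_S:
  assumes u: "0 \<le> u" and a: "0 < a"
  shows "(\<integral>\<^sup>+\<omega>. ennreal (if 0 < S r \<omega> u then S r \<omega> u powr (-a) else 0) \<partial>M) \<le> ennreal (Ka a) * Lap a u"
proof -
  have m: "(\<lambda>\<omega>. S r \<omega> u) \<in> borel_measurable M" by (rule meas_M[OF meas_S[of r "{(r,2)}"]]) auto
  interpret pair_sigma_finite M lborel ..
  have "(\<integral>\<^sup>+\<omega>. ennreal (if 0 < S r \<omega> u then S r \<omega> u powr (-a) else 0) \<partial>M)
     \<le> (\<integral>\<^sup>+\<omega>. ennreal (Ka a) * (\<integral>\<^sup>+ l. ennreal (l powr (a - 1) * exp (- l * S r \<omega> u)) * indicator {0<..} l \<partial>lborel) \<partial>M)"
  proof (rule nn_integral_mono)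
    fix \<omega> assume "\<omega> \<in> space M"
    show "ennreal (if 0 < S r \<omega> u then S r \<omega> u powr (-a) else 0) \<le> ennreal (Ka a) * (\<integral>\<^sup>+ l. ennreal (l powr (a - 1) * exp (- l * S r \<omega> u)) * indicator {0<..} l \<partial>lborel)"
    proof (cases "0 < S r \<omega> u")
      case True
      then show ?thesis using neg_moment[OF True a] unfolding Ka_def by simp
    qed simp
  qed
  also have "\<dots> = ennreal (Ka a) * (\<integral>\<^sup>+\<omega>. (\<integral>\<^sup>+ l. ennreal (l powr (a - 1) * exp (- l * S r \<omega> u)) * indicator {0<..} l \<partial>lborel) \<partial>M)"
    by (rule nn_integral_cmult) (use m in measurable)
  also have "(\<integral>\<^sup>+\<omega>. (\<integral>\<^sup>+ l. ennreal (l powr (a - 1) * exp (- l * S r \<omega> u)) * indicator {0<..} l \<partial>lborel) \<partial>M)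
     = (\<integral>\<^sup>+ l. (\<integral>\<^sup>+\<omega>. ennreal (l powr (a - 1) * exp (- l * S r \<omega> u)) * indicator {0<..} l \<partial>M) \<partial>lborel)"
    by (rule Fubini'[symmetric]) (use m in measurable)
  also have "\<dots> = (\<integral>\<^sup>+ l. ennreal (exp (- u * \<eta> l) * l powr (a - 1)) * indicator {0<..} l \<partial>lborel)"
  proof (rule nn_integral_cong)
    fix l :: real
    show "(\<integral>\<^sup>+\<omega>. ennreal (l powr (a - 1) * exp (- l * S r \<omega> u)) * indicator {0<..} l \<partial>M) = ennreal (exp (- u * \<eta> l) * l powr (a - 1)) * indicator {0<..} l"
    proof (cases "0 < l")
      case True
      have "(\<integral>\<^sup>+\<omega>. ennreal (l powr (a - 1) * exp (- l * S r \<omega> u)) * indicator {0<..} l \<partial>M)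
          = (\<integral>\<^sup>+\<omega>. ennreal (l powr (a - 1)) * ennreal (exp (- l * S r \<omega> u)) \<partial>M)"
        using True by (intro nn_integral_cong) (simp add: ennreal_mult)
      also have "\<dots> = ennreal (l powr (a - 1)) * (\<integral>\<^sup>+\<omega>. ennreal (exp (- l * S r \<omega> u)) \<partial>M)"
        by (rule nn_integral_cmult) (use m in measurable)
      also have "\<dots> = ennreal (exp (- u * \<eta> l) * l powr (a - 1)) * indicator {0<..} l"
        unfolding laplace[OF True u] using True by (simp add: ennreal_mult mult.commute)
      finally show ?thesis .
    qed simp
  qed
  finally show ?thesis unfolding Lap_def .
qed

end

lemma rho_alg:
  fixes x c q p :: real
  assumes "0 < x" "0 \<le> c" "0 < q"
  shows "x * (c / (q * x)) powr p = (c / q) powr p * (1 / x powr (p - 1))"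
proof -
  have "(c / (q * x)) powr p = (c / q) powr p / x powr p"
    using assms by (simp add: powr_divide[symmetric] divide_divide_eq_left mult.commute)
  moreover have "x powr p = x powr (p - 1) * x"
  proof -
    have "x powr (p - 1) * x = x powr (p - 1) * x powr 1" using assms by simp
    also have "\<dots> = x powr p" by (simp only: powr_add[symmetric]) simp
    finally show ?thesis by simp
  qed
  ultimately show ?thesis using assms by (simp add: field_simps)
qed

lemma power_sum:
  fixes x :: "'i \<Rightarrow> real"
  assumes I: "finite I" and x: "\<And>i. i \<in> I \<Longrightarrow> 0 \<le> x i" and q: "0 \<le> q"
  shows "(\<Sum>i\<in>I. x i) powr q \<le> real (card I) powr q * (\<Sum>i\<in>I. x i powr q)"
proof (cases "I = {}")
  case True then show ?thesis by simp
next
  case False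
  define m where "m = Max (x ` I)"
  have mI: "m \<in> x ` I" unfolding m_def using I False by simp
  then obtain i0 where i0: "i0 \<in> I" "m = x i0" by auto
  have le: "x i \<le> m" if "i \<in> I" for i unfolding m_def using I that by simp
  have "(\<Sum>i\<in>I. x i) \<le> real (card I) * m"
    using sum_bounded_above[of I x m] le by simp
  then have "(\<Sum>i\<in>I. x i) powr q \<le> (real (card I) * m) powr q"
    using x q by (intro powr_mono2) (auto intro: sum_nonneg)
  also have "\<dots> = real (card I) powr q * m powr q" using i0 x by (simp add: powr_mult)
  also have "m powr q \<le> (\<Sum>i\<in>I. x i powr q)"
    unfolding i0(2) using i0(1) I by (intro member_le_sum) auto
  finally show ?thesis by (simp add: mult_left_mono)
qed

lemma ab_pow:
  fixes a b q :: real
  assumes "0 \<le> a" "0 \<le> b" "0 \<le> q"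
  shows "(a * b) powr q \<le> a powr (2 * q) + b powr (2 * q)"
proof -
  have "a * b \<le> (max a b) powr 2"
    using assms by (cases "a \<le> b") (auto simp: max_def power2_eq_square intro: mult_mono)
  then have "(a * b) powr q \<le> ((max a b) powr 2) powr q" using assms by (intro powr_mono2) auto
  also have "\<dots> = max a b powr (2 * q)" by (simp add: powr_powr)
  also have "\<dots> \<le> a powr (2 * q) + b powr (2 * q)" by (cases "a \<le> b") (auto simp: max_def)
  finally show ?thesis .
qed

context tsetup2 begin

definition I1 where "I1 T' = (\<integral>\<^sup>+ s\<in>{0..T'}. ennreal (1 / \<rho> s powr (p - 1)) \<partial>lborel)"
definition I2 where "I2 T' = (\<integral>\<^sup>+ s\<in>{0..T'}. (\<integral>\<^sup>+ lam\<in>{0<..}. ennreal (exp (- s * \<eta> lam) / \<rho> s powr (p - 1) * lam powr (p / 2 - 1)) \<partial>lborel) \<partial>lborel)"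
definition I0 where "I0 T' = (\<integral>\<^sup>+ s\<in>{0..T'}. ennreal (\<rho> s) \<partial>lborel)"

lemma eta_fun: "(\<lambda>l. ennreal (exp (- u * \<eta> l) * l powr a) * indicator {0<..} l) =
    (\<lambda>l. ennreal (exp (- u * (if 0 < l then \<eta> l else 0)) * l powr a) * indicator {0<..} l)"
  by (auto simp: indicator_def)

lemma Lap_meas: "(\<lambda>u. Lap a u) \<in> borel_measurable borel"
proof -
  have e[measurable]: "(\<lambda>l. if 0 < l then \<eta> l else 0) \<in> borel_measurable borel" by (rule eta_meas)
  have "(\<lambda>x. ennreal (exp (- fst x * (if 0 < snd x then \<eta> (snd x) else 0)) * snd x powr (a - 1)) * indicator {0<..} (snd x))
     \<in> borel_measurable ((borel :: real measure) \<Otimes>\<^sub>M lborel)"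
    by measurable
  from sigma_finite_measure.borel_measurable_nn_integral_fst[OF sigma_finite_lborel this]
  have "(\<lambda>u. \<integral>\<^sup>+ l. ennreal (exp (- u * (if 0 < l then \<eta> l else 0)) * l powr (a - 1)) * indicator {0<..} l \<partial>lborel) \<in> borel_measurable borel"
    by simp
  then show ?thesis unfolding Lap_def by (subst eta_fun) simp
qed

lemma Y_eq: "Y r u j \<omega> = B r \<omega> (max 0 (Sx r u \<omega>)) j" unfolding Y_def ..

lemma YM:
  assumes u: "0 \<le> u"
  shows "(\<integral>\<^sup>+\<omega>. ennreal ((\<bar>Y r u th \<omega>\<bar> / Sx r u \<omega>) powr p) \<partial>M) \<le> ennreal (Cq p * Ka (p/2)) * Lap (p/2) u"
proof -
  have p0: "0 < p" using p by simp
  define G where "G v \<omega> = ennreal ((\<bar>B r \<omega> (max 0 v) th\<bar> / v) powr p)" for v \<omega>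
  have Gm: "(\<lambda>(z, \<omega>). G z \<omega>) \<in> borel_measurable ((borel :: real measure) \<Otimes>\<^sub>M Sg {(r,3)})"
  proof -
    have [measurable]: "(\<lambda>x. B r (snd x) (max 0 (fst x)) th) \<in> borel_measurable ((borel :: real measure) \<Otimes>\<^sub>M Sg {(r,3)})"
      by (rule J2) simp
    show ?thesis unfolding G_def split_beta by measurable
  qed
  have Zm: "Sx r u \<in> borel_measurable (Sg {(r,2)})"
    using J1c[of r "{(r,2)}" "\<lambda>_. u" "Sg {(r,2)}" "\<lambda>\<omega>. \<omega>"] by simp
  have "(\<integral>\<^sup>+\<omega>. ennreal ((\<bar>Y r u th \<omega>\<bar> / Sx r u \<omega>) powr p) \<partial>M) = (\<integral>\<^sup>+\<omega>. 1 * G (Sx r u \<omega>) \<omega> \<partial>M)"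
    unfolding G_def Y_eq by simp
  also have "\<dots> = (\<integral>\<^sup>+\<omega>. 1 * (\<integral>\<^sup>+\<omega>'. G (Sx r u \<omega>) \<omega>' \<partial>M) \<partial>M)"
    by (rule freezeSg[OF _ _ Zm Gm]) auto
  also have "\<dots> \<le> (\<integral>\<^sup>+\<omega>. ennreal (Cq p) * ennreal (if 0 < S r \<omega> u then S r \<omega> u powr (-(p/2)) else 0) \<partial>M)"
  proof (rule nn_integral_mono)
    fix \<omega> assume \<omega>: "\<omega> \<in> space M"
    have v: "Sx r u \<omega> = S r \<omega> u" unfolding Sx_def using u by simp
    show "1 * (\<integral>\<^sup>+\<omega>'. G (Sx r u \<omega>) \<omega>' \<partial>M) \<le> ennreal (Cq p) * ennreal (if 0 < S r \<omega> u then S r \<omega> u powr (-(p/2)) else 0)"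
    proof (cases "0 < S r \<omega> u")
      case True
      define v0 where "v0 = S r \<omega> u"
      have v0: "0 < v0" using True unfolding v0_def .
      have "(\<integral>\<^sup>+\<omega>'. G v0 \<omega>' \<partial>M) = (\<integral>\<^sup>+\<omega>'. ennreal (1 / v0 powr p) * ennreal (\<bar>B r \<omega>' v0 th\<bar> powr p) \<partial>M)"
      proof (intro nn_integral_cong)
        fix \<omega>' :: 'a
        have "(\<bar>B r \<omega>' (max 0 v0) th\<bar> / v0) powr p = \<bar>B r \<omega>' v0 th\<bar> powr p / v0 powr p"
          using v0 by (simp add: powr_divide)
        also have "\<dots> = (1 / v0 powr p) * \<bar>B r \<omega>' v0 th\<bar> powr p" by simp
        finally show "G v0 \<omega>' = ennreal (1 / v0 powr p) * ennreal (\<bar>B r \<omega>' v0 th\<bar> powr p)"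
          unfolding G_def using v0 by (simp add: ennreal_mult[symmetric])
      qed
      also have "\<dots> = ennreal (1 / v0 powr p) * (\<integral>\<^sup>+\<omega>'. ennreal (\<bar>B r \<omega>' v0 th\<bar> powr p) \<partial>M)"
      proof (rule nn_integral_cmult)
        show "(\<lambda>\<omega>'. ennreal (\<bar>B r \<omega>' v0 th\<bar> powr p)) \<in> borel_measurable M"
          using meas_M[OF meas_B[of r "{(r,3)}" v0 th]] by measurable
      qed
      also have "\<dots> \<le> ennreal (1 / v0 powr p) * ennreal (Cq p * v0 powr (p/2))"
        by (intro mult_left_mono Bmom v0 p0) simp
      also have "\<dots> = ennreal (Cq p) * ennreal (v0 powr (-(p/2)))"
      proof -
        have "1 / v0 powr p * (Cq p * v0 powr (p/2)) = Cq p * v0 powr (-(p/2))"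
          using v0 by (simp add: powr_minus_divide field_simps powr_add[symmetric] flip: powr_add)
        then show ?thesis using v0 Cq_pos[of p] by (simp add: ennreal_mult[symmetric])
      qed
      finally show ?thesis using True v unfolding v0_def by simp
    next
      case False
      then have "S r \<omega> u = 0" using S_nonneg[OF \<omega> u, of r] by simp
      then show ?thesis using v p0 unfolding G_def by simp
    qed
  qed
  also have "\<dots> = ennreal (Cq p) * (\<integral>\<^sup>+\<omega>. ennreal (if 0 < S r \<omega> u then S r \<omega> u powr (-(p/2)) else 0) \<partial>M)"
  proof (rule nn_integral_cmult)
    have [measurable]: "(\<lambda>\<omega>. S r \<omega> u) \<in> borel_measurable M" by (rule meas_M[OF meas_S[of r "{(r,2)}"]]) auto
    show "(\<lambda>\<omega>. ennreal (if 0 < S r \<omega> u then S r \<omega> u powr (-(p/2)) else 0)) \<in> borel_measurable M" by measurable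
  qed
  also have "\<dots> \<le> ennreal (Cq p) * (ennreal (Ka (p/2)) * Lap (p/2) u)"
    by (intro mult_left_mono negmom_S u) (use p0 in auto)
  also have "\<dots> = ennreal (Cq p * Ka (p/2)) * Lap (p/2) u"
    using Cq_pos[of p] by (simp add: ennreal_mult mult.assoc Ka_def)
  finally show ?thesis .
qed

end

lemma enn3: "0 \<le> a \<Longrightarrow> 0 \<le> b \<Longrightarrow> 0 \<le> c \<Longrightarrow> ennreal (a * b) * ennreal c * L = ennreal (a * c) * (ennreal b * L)"
  by (simp add: ennreal_mult mult_ac)

context tsetup2 begin

definition inner2 where "inner2 u = (\<integral>\<^sup>+ lam\<in>{0<..}. ennreal (exp (- u * \<eta> lam) / \<rho> u powr (p - 1) * lam powr (p / 2 - 1)) \<partial>lborel)"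

lemma I2_eq: "I2 T' = (\<integral>\<^sup>+ s\<in>{0..T'}. inner2 s \<partial>lborel)" unfolding I2_def inner2_def ..

lemma inner2_alt: "inner2 u = (\<integral>\<^sup>+ lam. ennreal (exp (- u * (if 0 < lam then \<eta> lam else 0)) / \<rho> u powr (p - 1) * lam powr (p / 2 - 1)) * indicator {0<..} lam \<partial>lborel)"
  unfolding inner2_def by (intro nn_integral_cong) (auto simp: indicator_def)

lemma Lap_alt: "Lap a u = (\<integral>\<^sup>+ l. ennreal (exp (- u * (if 0 < l then \<eta> l else 0)) * l powr (a - 1)) * indicator {0<..} l \<partial>lborel)"
  unfolding Lap_def by (subst eta_fun) simp

lemma inner2_meas: "inner2 \<in> borel_measurable borel"
proof -
  have e[measurable]: "(\<lambda>l. if 0 < l then \<eta> l else 0) \<in> borel_measurable borel" by (rule eta_meas)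
  have r[measurable]: "\<rho> \<in> borel_measurable borel" by (rule rho_meas)
  have "(\<lambda>x. ennreal (exp (- fst x * (if 0 < snd x then \<eta> (snd x) else 0)) / \<rho> (fst x) powr (p - 1) * snd x powr (p / 2 - 1)) * indicator {0<..} (snd x))
     \<in> borel_measurable ((borel :: real measure) \<Otimes>\<^sub>M lborel)"
    by measurable
  from sigma_finite_measure.borel_measurable_nn_integral_fst[OF sigma_finite_lborel this]
  show ?thesis unfolding inner2_alt[abs_def] by simp
qed

lemma inner2_Lap: "0 < \<rho> u \<Longrightarrow> inner2 u = ennreal (1 / \<rho> u powr (p - 1)) * Lap (p/2) u"
proof -
  assume r: "0 < \<rho> u"
  have e[measurable]: "(\<lambda>l. if 0 < l then \<eta> l else 0) \<in> borel_measurable borel" by (rule eta_meas)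
  have "inner2 u = (\<integral>\<^sup>+ l. ennreal (1 / \<rho> u powr (p - 1)) * (ennreal (exp (- u * (if 0 < l then \<eta> l else 0)) * l powr (p/2 - 1)) * indicator {0<..} l) \<partial>lborel)"
    unfolding inner2_alt using r by (intro nn_integral_cong) (simp add: ennreal_mult[symmetric] mult_ac)
  also have "\<dots> = ennreal (1 / \<rho> u powr (p - 1)) * Lap (p/2) u"
    unfolding Lap_alt by (rule nn_integral_cmult) measurable
  finally show ?thesis .
qed

lemma Ein:
  assumes s: "0 \<le> s"
  shows "(\<integral>\<^sup>+\<omega>. ennreal (if s + tau r \<omega> < T then (Cc * WI th r (tau r \<omega>) \<omega> / (qmin * \<rho> (tau r \<omega>))) powr p else 0) \<partial>M)
     \<le> ennreal ((Cc/qmin) powr p) * (if th = 0 then I1 T else ennreal (Cq p * Ka (p/2)) * I2 T)"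
proof (cases "th = 0")
  case True
  have r[measurable]: "\<rho> \<in> borel_measurable borel" by (rule rho_meas)
  have "(\<integral>\<^sup>+\<omega>. ennreal (if s + tau r \<omega> < T then (Cc * WI th r (tau r \<omega>) \<omega> / (qmin * \<rho> (tau r \<omega>))) powr p else 0) \<partial>M)
      = (\<integral>\<^sup>+\<omega>. (\<lambda>u. ennreal (if s + u < T then (Cc / (qmin * \<rho> u)) powr p else 0)) (tau r \<omega>) \<partial>M)"
    by (rule nn_integral_cong) (simp add: WI_def True)
  also have "\<dots> = (\<integral>\<^sup>+u. ennreal (\<rho> u) * indicator {0..} u * ennreal (if s + u < T then (Cc / (qmin * \<rho> u)) powr p else 0) \<partial>lborel)"
    by (rule tau_int) measurable
  also have "\<dots> \<le> (\<integral>\<^sup>+u. ennreal ((Cc/qmin) powr p) * (ennreal (1 / \<rho> u powr (p - 1)) * indicator {0..T} u) \<partial>lborel)"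
  proof (rule nn_integral_mono)
    fix u :: real
    show "ennreal (\<rho> u) * indicator {0..} u * ennreal (if s + u < T then (Cc / (qmin * \<rho> u)) powr p else 0)
        \<le> ennreal ((Cc/qmin) powr p) * (ennreal (1 / \<rho> u powr (p - 1)) * indicator {0..T} u)"
    proof (cases "0 \<le> u \<and> s + u < T")
      case True
      then have r0: "0 < \<rho> u" using rho_pos by auto
      have "\<rho> u * (Cc / (qmin * \<rho> u)) powr p = (Cc/qmin) powr p * (1 / \<rho> u powr (p - 1))"
        by (rule rho_alg[OF r0 Cc qmin])
      then show ?thesis using True s r0 by (simp add: ennreal_mult[symmetric] indicator_def)
    next
      case False then show ?thesis by (auto simp: indicator_def)
    qed
  qed
  also have "\<dots> = ennreal ((Cc/qmin) powr p) * I1 T"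
    unfolding I1_def by (rule nn_integral_cmult) measurable
  finally show ?thesis using True by simp
next
  case False
  have r[measurable]: "\<rho> \<in> borel_measurable borel" by (rule rho_meas)
  define G where "G u \<omega> = ennreal (if s + u < T then (Cc / (qmin * \<rho> u)) powr p else 0) * ennreal ((\<bar>Y r u (th - 1) \<omega>\<bar> / Sx r u \<omega>) powr p)" for u \<omega>
  have Gm: "(\<lambda>(z, \<omega>). G z \<omega>) \<in> borel_measurable ((borel :: real measure) \<Otimes>\<^sub>M Sg {(r,2),(r,3)})"
  proof -
    have [measurable]: "(\<lambda>x. Y r (fst x) (th - 1) (snd x)) \<in> borel_measurable ((borel :: real measure) \<Otimes>\<^sub>M Sg {(r,2),(r,3)})"
      by (rule J3) auto
    have [measurable]: "(\<lambda>x. Sx r (fst x) (snd x)) \<in> borel_measurable ((borel :: real measure) \<Otimes>\<^sub>M Sg {(r,2),(r,3)})"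
      by (rule J1) auto
    show ?thesis unfolding G_def split_beta by measurable
  qed
  have Zm: "tau r \<in> borel_measurable (Sg {(r,0)})" by (rule meas_tau) auto
  have "(\<integral>\<^sup>+\<omega>. ennreal (if s + tau r \<omega> < T then (Cc * WI th r (tau r \<omega>) \<omega> / (qmin * \<rho> (tau r \<omega>))) powr p else 0) \<partial>M)
      = (\<integral>\<^sup>+\<omega>. 1 * G (tau r \<omega>) \<omega> \<partial>M)"
  proof (rule nn_integral_cong_AE)
    show "AE \<omega> in M. ennreal (if s + tau r \<omega> < T then (Cc * WI th r (tau r \<omega>) \<omega> / (qmin * \<rho> (tau r \<omega>))) powr p else 0) = 1 * G (tau r \<omega>) \<omega>"
      using AE_tau AE_space
    proof eventually_elim
      case (elim \<omega>)
      then have t0: "0 \<le> tau r \<omega>" and sp: "\<omega> \<in> space M" by auto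
      have r0: "0 < \<rho> (tau r \<omega>)" using rho_pos t0 by auto
      have sx: "0 \<le> Sx r (tau r \<omega>) \<omega>" by (rule Sx_nonneg[OF sp])
      have "(Cc * (\<bar>Y r (tau r \<omega>) (th - 1) \<omega>\<bar> / Sx r (tau r \<omega>) \<omega>) / (qmin * \<rho> (tau r \<omega>))) powr p
          = (Cc / (qmin * \<rho> (tau r \<omega>))) powr p * (\<bar>Y r (tau r \<omega>) (th - 1) \<omega>\<bar> / Sx r (tau r \<omega>) \<omega>) powr p"
      proof -
        have "Cc * (\<bar>Y r (tau r \<omega>) (th - 1) \<omega>\<bar> / Sx r (tau r \<omega>) \<omega>) / (qmin * \<rho> (tau r \<omega>))
            = (Cc / (qmin * \<rho> (tau r \<omega>))) * (\<bar>Y r (tau r \<omega>) (th - 1) \<omega>\<bar> / Sx r (tau r \<omega>) \<omega>)" by simp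
        then have "(Cc * (\<bar>Y r (tau r \<omega>) (th - 1) \<omega>\<bar> / Sx r (tau r \<omega>) \<omega>) / (qmin * \<rho> (tau r \<omega>))) powr p
            = ((Cc / (qmin * \<rho> (tau r \<omega>))) * (\<bar>Y r (tau r \<omega>) (th - 1) \<omega>\<bar> / Sx r (tau r \<omega>) \<omega>)) powr p" by (simp only:)
        also have "\<dots> = (Cc / (qmin * \<rho> (tau r \<omega>))) powr p * (\<bar>Y r (tau r \<omega>) (th - 1) \<omega>\<bar> / Sx r (tau r \<omega>) \<omega>) powr p"
          by (rule powr_mult)
        finally show ?thesis .
      qed
      then show ?case using False unfolding G_def WI_def by (simp add: ennreal_mult[symmetric])
    qed
  qed
  also have "\<dots> = (\<integral>\<^sup>+\<omega>. 1 * (\<integral>\<^sup>+\<omega>'. G (tau r \<omega>) \<omega>' \<partial>M) \<partial>M)"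
    by (rule freezeSg[OF _ _ Zm Gm]) auto
  also have "\<dots> \<le> (\<integral>\<^sup>+\<omega>. (\<lambda>u. ennreal (if s + u < T then (Cc / (qmin * \<rho> u)) powr p else 0) * (ennreal (Cq p * Ka (p/2)) * Lap (p/2) u)) (tau r \<omega>) \<partial>M)"
  proof (rule nn_integral_mono_AE)
    show "AE \<omega> in M. 1 * (\<integral>\<^sup>+\<omega>'. G (tau r \<omega>) \<omega>' \<partial>M) \<le> (\<lambda>u. ennreal (if s + u < T then (Cc / (qmin * \<rho> u)) powr p else 0) * (ennreal (Cq p * Ka (p/2)) * Lap (p/2) u)) (tau r \<omega>)"
      using AE_tau
    proof eventually_elim
      case (elim \<omega>)
      then have t0: "0 \<le> tau r \<omega>" by auto
      have m: "(\<lambda>\<omega>'. ennreal ((\<bar>Y r (tau r \<omega>) (th - 1) \<omega>'\<bar> / Sx r (tau r \<omega>) \<omega>') powr p)) \<in> borel_measurable M"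
      proof -
        have "(\<lambda>\<omega>'. Y r (tau r \<omega>) (th - 1) \<omega>') \<in> borel_measurable (Sg {(r,2),(r,3)})"
          by (rule J3c[where P="{(r,2),(r,3)}" and f="\<lambda>_. tau r \<omega>"]) auto
        moreover have "(\<lambda>\<omega>'. Sx r (tau r \<omega>) \<omega>') \<in> borel_measurable (Sg {(r,2),(r,3)})"
          by (rule J1c[where P="{(r,2),(r,3)}" and f="\<lambda>_. tau r \<omega>"]) auto
        ultimately show ?thesis by (auto dest!: meas_M)
      qed
      have "(\<integral>\<^sup>+\<omega>'. G (tau r \<omega>) \<omega>' \<partial>M) = ennreal (if s + tau r \<omega> < T then (Cc / (qmin * \<rho> (tau r \<omega>))) powr p else 0) * (\<integral>\<^sup>+\<omega>'. ennreal ((\<bar>Y r (tau r \<omega>) (th - 1) \<omega>'\<bar> / Sx r (tau r \<omega>) \<omega>') powr p) \<partial>M)"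
        unfolding G_def by (rule nn_integral_cmult[OF m])
      also have "\<dots> \<le> ennreal (if s + tau r \<omega> < T then (Cc / (qmin * \<rho> (tau r \<omega>))) powr p else 0) * (ennreal (Cq p * Ka (p/2)) * Lap (p/2) (tau r \<omega>))"
        by (intro mult_left_mono YM t0) simp
      finally show ?case by simp
    qed
  qed
  also have "\<dots> = (\<integral>\<^sup>+u. ennreal (\<rho> u) * indicator {0..} u * (ennreal (if s + u < T then (Cc / (qmin * \<rho> u)) powr p else 0) * (ennreal (Cq p * Ka (p/2)) * Lap (p/2) u)) \<partial>lborel)"
    by (rule tau_int) (use Lap_meas in measurable)
  also have "\<dots> \<le> (\<integral>\<^sup>+u. ennreal ((Cc/qmin) powr p * (Cq p * Ka (p/2))) * (inner2 u * indicator {0..T} u) \<partial>lborel)"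
  proof (rule nn_integral_mono)
    fix u :: real
    show "ennreal (\<rho> u) * indicator {0..} u * (ennreal (if s + u < T then (Cc / (qmin * \<rho> u)) powr p else 0) * (ennreal (Cq p * Ka (p/2)) * Lap (p/2) u))
        \<le> ennreal ((Cc/qmin) powr p * (Cq p * Ka (p/2))) * (inner2 u * indicator {0..T} u)"
    proof (cases "0 \<le> u \<and> s + u < T")
      case True
      then have r0: "0 < \<rho> u" using rho_pos by auto
      have e1: "\<rho> u * (Cc / (qmin * \<rho> u)) powr p = (Cc/qmin) powr p * (1 / \<rho> u powr (p - 1))"
        by (rule rho_alg[OF r0 Cc qmin])
      have k0: "0 \<le> Cq p * Ka (p/2)" using Cq_pos[of p] by (simp add: Ka_def)
      have "ennreal (\<rho> u) * indicator {0..} u * (ennreal (if s + u < T then (Cc / (qmin * \<rho> u)) powr p else 0) * (ennreal (Cq p * Ka (p/2)) * Lap (p/2) u))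
          = ennreal (\<rho> u * (Cc / (qmin * \<rho> u)) powr p) * ennreal (Cq p * Ka (p/2)) * Lap (p/2) u"
        using True r0 by (simp add: indicator_def ennreal_mult mult_ac)
      also have "\<dots> = ennreal ((Cc/qmin) powr p * (Cq p * Ka (p/2))) * (ennreal (1 / \<rho> u powr (p - 1)) * Lap (p/2) u)"
        unfolding e1 using k0 by (intro enn3) auto
      also have "\<dots> = ennreal ((Cc/qmin) powr p * (Cq p * Ka (p/2))) * (inner2 u * indicator {0..T} u)"
        using True s by (simp add: inner2_Lap[OF r0] indicator_def)
      finally show ?thesis by simp
    next
      case False then show ?thesis by (auto simp: indicator_def)
    qed
  qed
  also have "\<dots> = ennreal ((Cc/qmin) powr p * (Cq p * Ka (p/2))) * I2 T"
    unfolding I2_eq by (rule nn_integral_cmult) (use inner2_meas in measurable)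
  also have "\<dots> = ennreal ((Cc/qmin) powr p) * (ennreal (Cq p * Ka (p/2)) * I2 T)"
    using Cq_pos[of p] by (simp add: ennreal_mult mult.assoc Ka_def)
  finally show ?thesis using False by simp
qed

end

lemma eucl_le: "eucl_norm d v \<le> (\<Sum>j<d. \<bar>v j\<bar>)"
  using L2_set_le_sum_abs[of v "{..<d}"] unfolding eucl_norm_def L2_set_def .

lemma enn4: "0 \<le> a \<Longrightarrow> 0 \<le> b \<Longrightarrow> 0 \<le> c \<Longrightarrow> 0 \<le> e \<Longrightarrow>
  ennreal (a * (b * c + e)) = ennreal a * (ennreal b * ennreal c + ennreal e)"
  by (simp add: ennreal_mult ennreal_plus)

lemma eucl_norm_nonneg: "0 \<le> eucl_norm d v"
  unfolding eucl_norm_def by (simp add: sum_nonneg)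

context tsetup2 begin

definition AX where "AX = max (Cphi powr p) (Lc powr p * Cq (2 * p) * (real d powr (2 * p) * real d + 1))"

lemma XB_nonneg: "\<omega> \<in> space M \<Longrightarrow> 0 \<le> XB th r u \<omega>"
  unfolding XB_def using Sx_nonneg[of \<omega> r u] Cphi Lc by (auto intro!: divide_nonneg_nonneg mult_nonneg_nonneg eucl_norm_nonneg)

lemma XBmom:
  assumes u: "0 \<le> u"
  shows "(\<integral>\<^sup>+\<omega>. ennreal (XB th r u \<omega> powr p) \<partial>M) \<le> ennreal AX"
proof (cases "th = 0")
  case True
  have "(\<integral>\<^sup>+\<omega>. ennreal (XB th r u \<omega> powr p) \<partial>M) = ennreal (Cphi powr p)"
    using True unfolding XB_def by (simp add: emeasure_space_1)
  also have "\<dots> \<le> ennreal AX" unfolding AX_def by (rule ennreal_leI) simp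
  finally show ?thesis .
next
  case False
  have p0: "0 < p" using p by simp
  define t where "t = th - 1"
  define C2 where "C2 = Cq (2 * p)"
  have C2: "0 < C2" unfolding C2_def by (rule Cq_pos)
  define G where "G v \<omega> = ennreal ((Lc * eucl_norm d (\<lambda>j. B r \<omega> (max 0 v) j) * \<bar>B r \<omega> (max 0 v) t\<bar> / v) powr p)" for v \<omega>
  have Gm: "(\<lambda>(z, \<omega>). G z \<omega>) \<in> borel_measurable ((borel :: real measure) \<Otimes>\<^sub>M Sg {(r,3)})"
  proof -
    have [measurable]: "(\<lambda>x. B r (snd x) (max 0 (fst x)) j) \<in> borel_measurable ((borel :: real measure) \<Otimes>\<^sub>M Sg {(r,3)})" for j
      by (rule J2) simp
    show ?thesis unfolding G_def split_beta eucl_norm_def by measurable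
  qed
  have Zm: "Sx r u \<in> borel_measurable (Sg {(r,2)})"
    using J1c[of r "{(r,2)}" "\<lambda>_. u" "Sg {(r,2)}" "\<lambda>\<omega>. \<omega>"] by simp
  have "(\<integral>\<^sup>+\<omega>. ennreal (XB th r u \<omega> powr p) \<partial>M) = (\<integral>\<^sup>+\<omega>. 1 * G (Sx r u \<omega>) \<omega> \<partial>M)"
    using False unfolding G_def XB_def Y_eq t_def by simp
  also have "\<dots> = (\<integral>\<^sup>+\<omega>. 1 * (\<integral>\<^sup>+\<omega>'. G (Sx r u \<omega>) \<omega>' \<partial>M) \<partial>M)"
    by (rule freezeSg[OF _ _ Zm Gm]) auto
  also have "\<dots> \<le> (\<integral>\<^sup>+\<omega>. ennreal (Lc powr p * C2 * (real d powr (2 * p) * real d + 1)) \<partial>M)"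
  proof (rule nn_integral_mono)
    fix \<omega> assume \<omega>: "\<omega> \<in> space M"
    show "1 * (\<integral>\<^sup>+\<omega>'. G (Sx r u \<omega>) \<omega>' \<partial>M) \<le> ennreal (Lc powr p * C2 * (real d powr (2 * p) * real d + 1))"
    proof (cases "0 < Sx r u \<omega>")
      case True
      define v where "v = Sx r u \<omega>"
      have v: "0 < v" using True unfolding v_def .
      have mB: "(\<lambda>\<omega>'. ennreal (\<bar>B r \<omega>' v j\<bar> powr (2 * p))) \<in> borel_measurable M" for j
        using meas_M[OF meas_B[of r "{(r,3)}" v j]] by measurable
      have pt: "G v \<omega>' \<le> ennreal (Lc powr p / v powr p) * (ennreal (real d powr (2 * p)) * (\<Sum>j<d. ennreal (\<bar>B r \<omega>' v j\<bar> powr (2 * p))) + ennreal (\<bar>B r \<omega>' v t\<bar> powr (2 * p)))" for \<omega>'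
      proof -
        define en where "en = eucl_norm d (\<lambda>j. B r \<omega>' v j)"
        define y where "y = \<bar>B r \<omega>' v t\<bar>"
        have en0: "0 \<le> en" unfolding en_def by (rule eucl_norm_nonneg)
        have y0: "0 \<le> y" unfolding y_def by simp
        have e1: "(Lc * en * y / v) powr p = (Lc powr p / v powr p) * (en * y) powr p"
          using v Lc en0 y0 by (simp add: powr_divide powr_mult mult.assoc)
        have e2: "(en * y) powr p \<le> en powr (2 * p) + y powr (2 * p)" by (rule ab_pow[OF en0 y0]) (use p in simp)
        have e3: "en powr (2 * p) \<le> (\<Sum>j<d. \<bar>B r \<omega>' v j\<bar>) powr (2 * p)"
          unfolding en_def using p by (intro powr_mono2 eucl_le) (auto simp: eucl_norm_nonneg)
        have e4: "(\<Sum>j<d. \<bar>B r \<omega>' v j\<bar>) powr (2 * p) \<le> real d powr (2 * p) * (\<Sum>j<d. \<bar>B r \<omega>' v j\<bar> powr (2 * p))"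
          using power_sum[of "{..<d}" "\<lambda>j. \<bar>B r \<omega>' v j\<bar>" "2 * p"] p by simp
        have k: "0 \<le> Lc powr p / v powr p" by simp
        have "(en * y) powr p \<le> real d powr (2 * p) * (\<Sum>j<d. \<bar>B r \<omega>' v j\<bar> powr (2 * p)) + y powr (2 * p)"
          using e2 e3 e4 by linarith
        from mult_left_mono[OF this k]
        have r: "(Lc * en * y / v) powr p \<le> (Lc powr p / v powr p) * (real d powr (2 * p) * (\<Sum>j<d. \<bar>B r \<omega>' v j\<bar> powr (2 * p)) + y powr (2 * p))"
          unfolding e1 .
        have "G v \<omega>' = ennreal ((Lc * en * y / v) powr p)" unfolding G_def en_def y_def using v by simp
        also have "\<dots> \<le> ennreal ((Lc powr p / v powr p) * (real d powr (2 * p) * (\<Sum>j<d. \<bar>B r \<omega>' v j\<bar> powr (2 * p)) + y powr (2 * p)))"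
          by (rule ennreal_leI[OF r])
        also have "\<dots> = ennreal (Lc powr p / v powr p) * (ennreal (real d powr (2 * p)) * ennreal (\<Sum>j<d. \<bar>B r \<omega>' v j\<bar> powr (2 * p)) + ennreal (y powr (2 * p)))"
          by (rule enn4) (auto intro: sum_nonneg)
        also have "ennreal (\<Sum>j<d. \<bar>B r \<omega>' v j\<bar> powr (2 * p)) = (\<Sum>j<d. ennreal (\<bar>B r \<omega>' v j\<bar> powr (2 * p)))"
          by (rule sum_ennreal[symmetric]) simp
        finally show ?thesis unfolding y_def .
      qed
      have "(\<integral>\<^sup>+\<omega>'. G (Sx r u \<omega>) \<omega>' \<partial>M) \<le> (\<integral>\<^sup>+\<omega>'. ennreal (Lc powr p / v powr p) * (ennreal (real d powr (2 * p)) * (\<Sum>j<d. ennreal (\<bar>B r \<omega>' v j\<bar> powr (2 * p))) + ennreal (\<bar>B r \<omega>' v t\<bar> powr (2 * p))) \<partial>M)"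
        unfolding v_def[symmetric] by (rule nn_integral_mono) (rule pt)
      also have "\<dots> = ennreal (Lc powr p / v powr p) * (ennreal (real d powr (2 * p)) * (\<Sum>j<d. (\<integral>\<^sup>+\<omega>'. ennreal (\<bar>B r \<omega>' v j\<bar> powr (2 * p)) \<partial>M)) + (\<integral>\<^sup>+\<omega>'. ennreal (\<bar>B r \<omega>' v t\<bar> powr (2 * p)) \<partial>M))"
        using mB by (simp add: nn_integral_cmult nn_integral_add nn_integral_sum del: sum_ennreal)
      also have "\<dots> \<le> ennreal (Lc powr p / v powr p) * (ennreal (real d powr (2 * p)) * (\<Sum>j<d. ennreal (C2 * v powr p)) + ennreal (C2 * v powr p))"
      proof -
        have b: "(\<integral>\<^sup>+\<omega>'. ennreal (\<bar>B r \<omega>' v j\<bar> powr (2 * p)) \<partial>M) \<le> ennreal (C2 * v powr p)" for j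
          using Bmom[OF v, of "2 * p" r j] p unfolding C2_def by simp
        show ?thesis by (intro mult_left_mono add_mono sum_mono b) auto
      qed
      also have "(\<Sum>j<d. ennreal (C2 * v powr p)) = ennreal (real d * (C2 * v powr p))"
        using C2 by (simp add: ennreal_mult ennreal_of_nat_eq_real_of_nat)
      also have "ennreal (Lc powr p / v powr p) * (ennreal (real d powr (2 * p)) * ennreal (real d * (C2 * v powr p)) + ennreal (C2 * v powr p))
          = ennreal (Lc powr p / v powr p * (real d powr (2 * p) * (real d * (C2 * v powr p)) + C2 * v powr p))"
        by (rule enn4[symmetric]) (use C2 in auto)
      also have "Lc powr p / v powr p * (real d powr (2 * p) * (real d * (C2 * v powr p)) + C2 * v powr p) = Lc powr p * C2 * (real d powr (2 * p) * real d + 1)"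
        using v by (simp add: field_simps)
      finally show ?thesis by simp
    next
      case False
      then have "Sx r u \<omega> = 0" using Sx_nonneg[OF \<omega>, of r u] by simp
      then show ?thesis unfolding G_def using p0 by simp
    qed
  qed
  also have "\<dots> = ennreal (Lc powr p * C2 * (real d powr (2 * p) * real d + 1))" by (simp add: emeasure_space_1)
  also have "\<dots> \<le> ennreal AX" unfolding AX_def C2_def by (rule ennreal_leI) simp
  finally show ?thesis .
qed

end

context tsetup2 begin

lemma FB_pos: "0 < FB s" unfolding FB_def by (rule Fbar_pos) simp

lemma FB_ge: "0 \<le> s \<Longrightarrow> Fbar \<rho> T \<le> FB s"
  unfolding FB_def by (rule Fbar_anti) (use T in auto)

lemma Ebd:
  assumes s: "0 \<le> s" "s \<le> T"
  shows "(\<integral>\<^sup>+\<omega>. ennreal (if s + tau r \<omega> < T then 0 else (XB th r (T - s) \<omega> / FB s) powr p) \<partial>M)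
     \<le> ennreal (FB s powr (1 - p) * AX)"
proof -
  have F0: "0 < FB s" by (rule FB_pos)
  define X where "X \<omega> = ennreal ((XB th r (T - s) \<omega> / FB s) powr p)" for \<omega>
  define G where "G u \<omega> = ennreal (if s + u < T then 0 else 1) * X \<omega>" for u \<omega>
  have XBm: "(\<lambda>\<omega>. XB th r (T - s) \<omega>) \<in> borel_measurable (Sg {(r,2),(r,3)})"
  proof -
    have [measurable]: "(\<lambda>\<omega>'. Y r (T - s) j \<omega>') \<in> borel_measurable (Sg {(r,2),(r,3)})" for j
      by (rule J3c[where P="{(r,2),(r,3)}" and f="\<lambda>_. T - s"]) auto
    have [measurable]: "(\<lambda>\<omega>'. Sx r (T - s) \<omega>') \<in> borel_measurable (Sg {(r,2),(r,3)})"
      by (rule J1c[where P="{(r,2),(r,3)}" and f="\<lambda>_. T - s"]) auto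
    show ?thesis unfolding XB_def eucl_norm_def by measurable
  qed
  have Xm: "X \<in> borel_measurable (Sg {(r,2),(r,3)})" unfolding X_def using XBm by measurable
  have Gm: "(\<lambda>(z, \<omega>). G z \<omega>) \<in> borel_measurable ((borel :: real measure) \<Otimes>\<^sub>M Sg {(r,2),(r,3)})"
  proof -
    have [measurable]: "(\<lambda>x. X (snd x)) \<in> borel_measurable ((borel :: real measure) \<Otimes>\<^sub>M Sg {(r,2),(r,3)})"
      using measurable_compose[OF measurable_snd Xm] .
    show ?thesis unfolding G_def split_beta by measurable
  qed
  have Zm: "tau r \<in> borel_measurable (Sg {(r,0)})" by (rule meas_tau) auto
  have "(\<integral>\<^sup>+\<omega>. ennreal (if s + tau r \<omega> < T then 0 else (XB th r (T - s) \<omega> / FB s) powr p) \<partial>M)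
      = (\<integral>\<^sup>+\<omega>. 1 * G (tau r \<omega>) \<omega> \<partial>M)"
    unfolding G_def X_def by (intro nn_integral_cong) simp
  also have "\<dots> = (\<integral>\<^sup>+\<omega>. 1 * (\<integral>\<^sup>+\<omega>'. G (tau r \<omega>) \<omega>' \<partial>M) \<partial>M)"
    by (rule freezeSg[OF _ _ Zm Gm]) auto
  also have "\<dots> = (\<integral>\<^sup>+\<omega>. ennreal (if s + tau r \<omega> < T then 0 else 1) * (\<integral>\<^sup>+\<omega>'. X \<omega>' \<partial>M) \<partial>M)"
    unfolding G_def using meas_M[OF Xm] by (simp add: nn_integral_cmult)
  also have "\<dots> = (\<integral>\<^sup>+\<omega>. (\<lambda>u. ennreal (if s + u < T then 0 else 1)) (tau r \<omega>) \<partial>M) * (\<integral>\<^sup>+\<omega>'. X \<omega>' \<partial>M)"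
  proof (rule nn_integral_multc)
    have [measurable]: "tau r \<in> borel_measurable M" by (rule meas_M[OF Zm])
    show "(\<lambda>\<omega>. ennreal (if s + tau r \<omega> < T then 0 else 1)) \<in> borel_measurable M" by measurable
  qed
  also have "\<dots> = (\<integral>\<^sup>+\<omega>'. X \<omega>' \<partial>M) * (\<integral>\<^sup>+\<omega>. (\<lambda>u. ennreal (if s + u < T then 0 else 1)) (tau r \<omega>) \<partial>M)"
    by (rule mult.commute)
  also have "(\<integral>\<^sup>+\<omega>. (\<lambda>u. ennreal (if s + u < T then 0 else 1)) (tau r \<omega>) \<partial>M)
       = (\<integral>\<^sup>+u. ennreal (\<rho> u) * indicator {0..} u * ennreal (if s + u < T then 0 else 1) \<partial>lborel)"
    by (rule tau_int) simp
  also have "\<dots> = (\<integral>\<^sup>+u\<in>{T - s..}. ennreal (\<rho> u) \<partial>lborel)"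
    using s by (intro nn_integral_cong) (auto simp: indicator_def)
  also have "\<dots> = ennreal (FB s)" unfolding FB_def using s by (simp add: Fbar_ennreal)
  also have "(\<integral>\<^sup>+\<omega>'. X \<omega>' \<partial>M) = ennreal (1 / FB s powr p) * (\<integral>\<^sup>+\<omega>'. ennreal (XB th r (T - s) \<omega>' powr p) \<partial>M)"
  proof -
    have "(\<integral>\<^sup>+\<omega>'. X \<omega>' \<partial>M) = (\<integral>\<^sup>+\<omega>'. ennreal (1 / FB s powr p) * ennreal (XB th r (T - s) \<omega>' powr p) \<partial>M)"
    proof (rule nn_integral_cong)
      fix \<omega>' assume w: "\<omega>' \<in> space M"
      have "(XB th r (T - s) \<omega>' / FB s) powr p = (1 / FB s powr p) * XB th r (T - s) \<omega>' powr p"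
        using XB_nonneg[OF w] F0 by (simp add: powr_divide)
      then show "X \<omega>' = ennreal (1 / FB s powr p) * ennreal (XB th r (T - s) \<omega>' powr p)"
        unfolding X_def using F0 by (simp add: ennreal_mult[symmetric])
    qed
    also have "\<dots> = ennreal (1 / FB s powr p) * (\<integral>\<^sup>+\<omega>'. ennreal (XB th r (T - s) \<omega>' powr p) \<partial>M)"
      by (rule nn_integral_cmult) (use meas_M[OF XBm] in measurable)
    finally show ?thesis .
  qed
  also have "ennreal (1 / FB s powr p) * (\<integral>\<^sup>+\<omega>'. ennreal (XB th r (T - s) \<omega>' powr p) \<partial>M) * ennreal (FB s)
      \<le> ennreal (1 / FB s powr p) * ennreal AX * ennreal (FB s)"
    by (intro mult_right_mono mult_left_mono XBmom) (use s in auto)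
  also have "\<dots> = ennreal (FB s powr (1 - p) * AX)"
  proof -
    have "1 / FB s powr p * AX * FB s = FB s powr (1 - p) * AX"
      using F0 by (simp add: powr_diff field_simps)
    moreover have "0 \<le> AX" unfolding AX_def by (rule order.trans[OF _ max.cobounded1]) simp
    ultimately show ?thesis using F0 by (simp add: ennreal_mult[symmetric])
  qed
  finally show ?thesis .
qed

end

context tsetup2 begin

definition EB where "EB = ennreal ((Cc/qmin) powr p) * (I1 T + ennreal (Cq p * Ka (p/2)) * I2 T)"
definition AA where "AA = ennreal (Fbar \<rho> T powr (1 - p) * AX)"

lemma AX_nonneg: "0 \<le> AX" unfolding AX_def by (rule order.trans[OF _ max.cobounded1]) simp

lemma Ebd': "0 \<le> s \<Longrightarrow> s \<le> T \<Longrightarrow>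
  (\<integral>\<^sup>+\<omega>. ennreal (if s + tau r \<omega> < T then 0 else (XB th r (T - s) \<omega> / FB s) powr p) \<partial>M) \<le> AA"
proof -
  assume s: "0 \<le> s" "s \<le> T"
  have F: "0 < Fbar \<rho> T" by (rule Fbar_pos) (use T in simp)
  have "FB s powr (1 - p) \<le> Fbar \<rho> T powr (1 - p)"
    by (rule powr_mono2'[OF _ F FB_ge[OF s(1)]]) (use p in simp)
  then have "FB s powr (1 - p) * AX \<le> Fbar \<rho> T powr (1 - p) * AX" using AX_nonneg by (rule mult_right_mono)
  then show ?thesis unfolding AA_def using Ebd[OF s, of r th] by (meson ennreal_leI order.trans)
qed

lemma Ein': "0 \<le> s \<Longrightarrow>
  (\<integral>\<^sup>+\<omega>. ennreal (if s + tau r \<omega> < T then (Cc * WI th r (tau r \<omega>) \<omega> / (qmin * \<rho> (tau r \<omega>))) powr p else 0) \<partial>M) \<le> EB"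
proof -
  assume s: "0 \<le> s"
  have "(if th = 0 then I1 T else ennreal (Cq p * Ka (p/2)) * I2 T) \<le> I1 T + ennreal (Cq p * Ka (p/2)) * I2 T"
    by (auto intro: add_increasing add_increasing2)
  then show ?thesis unfolding EB_def using Ein[OF s, of r th] by (meson mult_left_mono order.trans zero_le)
qed

lemma Pin: "0 \<le> s \<Longrightarrow> (\<integral>\<^sup>+\<omega>. ennreal (if s + tau r \<omega> < T then 1 else 0) \<partial>M) \<le> I0 T"
proof -
  assume s: "0 \<le> s"
  have "(\<integral>\<^sup>+\<omega>. (\<lambda>u. ennreal (if s + u < T then 1 else 0)) (tau r \<omega>) \<partial>M) = (\<integral>\<^sup>+u. ennreal (\<rho> u) * indicator {0..} u * ennreal (if s + u < T then 1 else 0) \<partial>lborel)"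
    by (rule tau_int) simp
  also have "\<dots> \<le> (\<integral>\<^sup>+u. ennreal (\<rho> u) * indicator {0..T} u \<partial>lborel)"
    using s by (intro nn_integral_mono) (auto simp: indicator_def)
  finally show ?thesis unfolding I0_def by simp
qed

lemma pair_s: "(\<lambda>\<omega>. (s, \<omega>)) \<in> measurable N ((borel :: real measure) \<Otimes>\<^sub>M N)"
  by (intro measurable_Pair measurable_const measurable_ident_sets) auto

lemma meas_aa_s: "(\<lambda>\<omega>. aa k s th \<omega>) \<in> borel_measurable (Sg ({k} \<times> UNIV))"
  using measurable_compose[OF pair_s meas_aa] by simp

lemma meas_abnd_s: "(\<lambda>\<omega>. abnd k s th \<omega>) \<in> borel_measurable (Sg ({k} \<times> UNIV))"
  using measurable_compose[OF pair_s meas_abnd] by simp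

lemma NB:
  assumes s: "0 \<le> s" "s \<le> T" and W: "1 \<le> W"
  shows "(\<integral>\<^sup>+\<omega>. ennreal (aa r s th \<omega>) * ennreal (if s + tau r \<omega> < T then W else 1) \<partial>M)
      \<le> 2 + 2 * AA + 2 * ennreal W * (I0 T + EB)"
proof -
  define fin where "fin \<omega> = ennreal (if s + tau r \<omega> < T then (Cc * WI th r (tau r \<omega>) \<omega> / (qmin * \<rho> (tau r \<omega>))) powr p else 0)" for \<omega>
  define fbd where "fbd \<omega> = ennreal (if s + tau r \<omega> < T then 0 else (XB th r (T - s) \<omega> / FB s) powr p)" for \<omega>
  define ind where "ind \<omega> = ennreal (if s + tau r \<omega> < T then 1 else 0)" for \<omega>
  have tm[measurable]: "tau r \<in> borel_measurable M" by (rule meas_M[OF meas_tau[of r "{(r,0)}"]]) auto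
  have am[measurable]: "(\<lambda>\<omega>. abnd r s th \<omega>) \<in> borel_measurable M"
    by (rule meas_M[OF meas_abnd_s])
  have fm: "fin \<in> borel_measurable M" "fbd \<in> borel_measurable M" "ind \<in> borel_measurable M"
  proof -
    have "fin = (\<lambda>\<omega>. ennreal (if s + tau r \<omega> < T then abnd r s th \<omega> else 0))"
      unfolding fin_def abnd_def by auto
    then show "fin \<in> borel_measurable M" by simp
    have "fbd = (\<lambda>\<omega>. ennreal (if s + tau r \<omega> < T then 0 else abnd r s th \<omega>))"
      unfolding fbd_def abnd_def by auto
    then show "fbd \<in> borel_measurable M" by simp
    show "ind \<in> borel_measurable M" unfolding ind_def by measurable
  qed
  have pt: "ennreal (aa r s th \<omega>) * ennreal (if s + tau r \<omega> < T then W else 1) \<le> 2 * (ennreal W * ind \<omega> + 1 + ennreal W * fin \<omega> + fbd \<omega>)" for \<omega>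
  proof -
    have a: "aa r s th \<omega> \<le> 2 * (1 + abnd r s th \<omega>)" unfolding aa_def using abnd_nonneg[of r s th \<omega>] by simp
    show ?thesis
    proof (cases "s + tau r \<omega> < T")
      case True
      have "aa r s th \<omega> * W \<le> 2 * (1 + abnd r s th \<omega>) * W" using a W by (intro mult_right_mono) auto
      also have "\<dots> = 2 * (W * 1 + 0 + W * abnd r s th \<omega> + 0)" by (simp add: algebra_simps)
      finally have "ennreal (aa r s th \<omega> * W) \<le> ennreal (2 * (W * 1 + 0 + W * abnd r s th \<omega> + 0))" by (rule ennreal_leI)
      also have "\<dots> \<le> 2 * (ennreal W * ind \<omega> + 1 + ennreal W * fin \<omega> + fbd \<omega>)"
        using True W abnd_nonneg[of r s th \<omega>] unfolding ind_def fin_def fbd_def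
        by (simp add: ennreal_mult ennreal_plus abnd_def)
      finally have f: "ennreal (aa r s th \<omega> * W) \<le> 2 * (ennreal W * ind \<omega> + 1 + ennreal W * fin \<omega> + fbd \<omega>)" .
      have e: "ennreal (aa r s th \<omega> * W) = ennreal (aa r s th \<omega>) * ennreal W"
        by (rule ennreal_mult) (use aa_ge[of r s th \<omega>] W in auto)
      show ?thesis using True f unfolding e by simp
    next
      case False
      have "ennreal (aa r s th \<omega>) \<le> ennreal (2 * (1 + abnd r s th \<omega>))" using a by (rule ennreal_leI)
      also have "\<dots> = 2 * (1 + fbd \<omega>)"
        using False abnd_nonneg[of r s th \<omega>] unfolding fbd_def by (simp add: ennreal_mult ennreal_plus abnd_def)
      also have "\<dots> \<le> 2 * (ennreal W * ind \<omega> + 1 + ennreal W * fin \<omega> + fbd \<omega>)"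
        by (intro mult_left_mono) (auto simp: add_increasing)
      finally show ?thesis using False by simp
    qed
  qed
  have "(\<integral>\<^sup>+\<omega>. ennreal (aa r s th \<omega>) * ennreal (if s + tau r \<omega> < T then W else 1) \<partial>M)
      \<le> (\<integral>\<^sup>+\<omega>. 2 * (ennreal W * ind \<omega> + 1 + ennreal W * fin \<omega> + fbd \<omega>) \<partial>M)"
    by (rule nn_integral_mono) (rule pt)
  also have "\<dots> = 2 * (ennreal W * (\<integral>\<^sup>+\<omega>. ind \<omega> \<partial>M) + 1 + ennreal W * (\<integral>\<^sup>+\<omega>. fin \<omega> \<partial>M) + (\<integral>\<^sup>+\<omega>. fbd \<omega> \<partial>M))"
    using fm by (simp add: nn_integral_cmult nn_integral_add emeasure_space_1)
  also have "\<dots> \<le> 2 * (ennreal W * I0 T + 1 + ennreal W * EB + AA)"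
    using Pin[OF s(1), of r] Ein'[OF s(1), of r th] Ebd'[OF s, of r th] unfolding ind_def fin_def fbd_def
    by (intro mult_left_mono add_mono) auto
  also have "\<dots> = 2 + 2 * AA + 2 * ennreal W * (I0 T + EB)" by (simp add: algebra_simps)
  finally show ?thesis .
qed

end

lemma prod_mono_enn: "(\<And>i. i \<in> A \<Longrightarrow> f i \<le> g i) \<Longrightarrow> prod f A \<le> (prod g A :: ennreal)"
  by (induction A rule: infinite_finite_induct) (auto intro: mult_mono)

context tsetup2 begin

lemma meas_psi_s: "(\<lambda>\<omega>. psi n r s th \<omega>) \<in> borel_measurable (Sg (sub r))"
  using measurable_compose[OF pair_s meas_psi] by simp

lemma indep_psi:
  "indep_vars (\<lambda>_. borel) (\<lambda>j \<omega>. ennreal (psi n (r @ [j]) s (f j) \<omega>)) J"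
proof -
  have I: "indep_sets (\<lambda>j. sets (Sg (sub (r @ [j])))) J" by (rule indep_Sg_family[OF sub_disj])
  have m: "(\<lambda>\<omega>. ennreal (psi n (r @ [j]) s (f j) \<omega>)) \<in> borel_measurable (Sg (sub (r @ [j])))" for j
    using meas_psi_s by measurable
  have A: "\<forall>i\<in>J. random_variable borel (\<lambda>\<omega>. ennreal (psi n (r @ [i]) s (f i) \<omega>))" using meas_M[OF m] by blast
  have B: "indep_sets (\<lambda>i. sigma_sets (space M) {(\<lambda>\<omega>. ennreal (psi n (r @ [i]) s (f i) \<omega>)) -` A \<inter> space M |A. A \<in> sets borel}) J"
  proof (rule indep_sets_mono_sets[OF I])
    fix j assume j: "j \<in> J"
    have "{(\<lambda>\<omega>. ennreal (psi n (r @ [j]) s (f j) \<omega>)) -` A \<inter> space M |A. A \<in> sets borel} \<subseteq> sets (Sg (sub (r @ [j])))"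
      using measurable_sets[OF m] by auto
    from sets.sigma_sets_subset[OF this] show "sigma_sets (space M) {(\<lambda>\<omega>. ennreal (psi n (r @ [j]) s (f j) \<omega>)) -` A \<inter> space M |A. A \<in> sets borel} \<subseteq> sets (Sg (sub (r @ [j])))"
      by simp
  qed
  show ?thesis unfolding indep_vars_def using A B by simp
qed

lemma main_ind:
  assumes V: "1 \<le> V" and AEN: "AE \<omega> in M. \<forall>k. sum_list (idx k \<omega>) \<le> Nm"
    and H: "2 + 2 * AA + 2 * ennreal (V ^ Nm) * (I0 T + EB) \<le> ennreal V"
  shows "0 \<le> s \<Longrightarrow> s \<le> T \<Longrightarrow> (\<integral>\<^sup>+\<omega>. ennreal (psi n r s th \<omega>) \<partial>M) \<le> ennreal V"
proof (induction n arbitrary: r s th)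
  case 0 then show ?case using V by (simp add: psi_def emeasure_space_1)
next
  case (Suc n)
  let ?K = "(borel :: real measure) \<Otimes>\<^sub>M (count_space UNIV :: nat list measure)"
  define Gf where "Gf z \<omega> = ennreal (if s + fst z < T then \<Prod>j<sum_list (snd z). psi n (r @ [j]) (s + fst z) (mark_of (snd z) j) \<omega> else 1)" for z :: "real \<times> nat list" and \<omega>
  have Rge: "0 \<le> (if s + tau r \<omega> < T then \<Prod>j<sum_list (idx r \<omega>). psi n (r @ [j]) (s + tau r \<omega>) (mark_of (idx r \<omega>) j) \<omega> else 1)" for \<omega>
    using psi_ge1 by (auto intro!: prod_nonneg) (meson order.trans zero_le_one)
  have eq: "(\<integral>\<^sup>+\<omega>. ennreal (psi (Suc n) r s th \<omega>) \<partial>M) = (\<integral>\<^sup>+\<omega>. ennreal (aa r s th \<omega>) * Gf (tau r \<omega>, idx r \<omega>) \<omega> \<partial>M)"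
  proof (rule nn_integral_cong)
    fix \<omega>
    show "ennreal (psi (Suc n) r s th \<omega>) = ennreal (aa r s th \<omega>) * Gf (tau r \<omega>, idx r \<omega>) \<omega>"
      unfolding psi_Suc Gf_def using Rge[of \<omega>] aa_ge[of r s th \<omega>] by (simp add: ennreal_mult)
  qed
  have hm: "(\<lambda>\<omega>. ennreal (aa r s th \<omega>)) \<in> borel_measurable (Sg ({r} \<times> UNIV))"
    using meas_aa_s by measurable
  have Zm: "(\<lambda>\<omega>. (tau r \<omega>, idx r \<omega>)) \<in> measurable (Sg ({r} \<times> UNIV)) ?K"
    by (intro measurable_Pair meas_tau meas_idx) auto
  have Gm: "(\<lambda>(z, \<omega>). Gf z \<omega>) \<in> borel_measurable (?K \<Otimes>\<^sub>M Sg (desc r))"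
  proof -
    let ?N = "?K \<Otimes>\<^sub>M Sg (desc r)"
    have ch: "(\<lambda>x. psi n (r @ [j]) (s + fst (fst x)) th' (snd x)) \<in> borel_measurable ?N" for j th'
    proof -
      have "(\<lambda>x. (s + fst (fst x), snd x)) \<in> measurable ?N (borel \<Otimes>\<^sub>M Sg (sub (r @ [j])))"
        by (intro measurable_Pair measurable_compose[OF measurable_snd Sg_id[OF sub_child]]) auto
      from measurable_compose[OF this meas_psi[of n "r @ [j]" th']] show ?thesis by simp
    qed
    have "(\<lambda>x. (\<lambda>l. ennreal (if s + fst (fst x) < T then \<Prod>j<sum_list l. psi n (r @ [j]) (s + fst (fst x)) (mark_of l j) (snd x) else 1)) (snd (fst x))) \<in> borel_measurable ?N"
    proof (rule measurable_compose_countable[where f="\<lambda>l x. ennreal (if s + fst (fst x) < T then \<Prod>j<sum_list l. psi n (r @ [j]) (s + fst (fst x)) (mark_of l j) (snd x) else 1)" and g="\<lambda>x. snd (fst x)"])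
      fix l :: "nat list"
      show "(\<lambda>x. ennreal (if s + fst (fst x) < T then \<Prod>j<sum_list l. psi n (r @ [j]) (s + fst (fst x)) (mark_of l j) (snd x) else 1)) \<in> borel_measurable ?N"
        using ch by measurable
    qed measurable
    then show ?thesis unfolding Gf_def split_beta by simp
  qed
  have "(\<integral>\<^sup>+\<omega>. ennreal (aa r s th \<omega>) * Gf (tau r \<omega>, idx r \<omega>) \<omega> \<partial>M)
      = (\<integral>\<^sup>+\<omega>. ennreal (aa r s th \<omega>) * (\<integral>\<^sup>+\<omega>'. Gf (tau r \<omega>, idx r \<omega>) \<omega>' \<partial>M) \<partial>M)"
    by (rule freezeSg[OF root_desc hm Zm Gm])
  also have "\<dots> \<le> (\<integral>\<^sup>+\<omega>. ennreal (aa r s th \<omega>) * ennreal (if s + tau r \<omega> < T then V ^ Nm else 1) \<partial>M)"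
  proof (rule nn_integral_mono_AE)
    show "AE \<omega> in M. ennreal (aa r s th \<omega>) * (\<integral>\<^sup>+\<omega>'. Gf (tau r \<omega>, idx r \<omega>) \<omega>' \<partial>M) \<le> ennreal (aa r s th \<omega>) * ennreal (if s + tau r \<omega> < T then V ^ Nm else 1)"
      using AE_tau AEN
    proof eventually_elim
      case (elim \<omega>)
      then have t0: "0 \<le> tau r \<omega>" and N: "sum_list (idx r \<omega>) \<le> Nm" by auto
      show ?case
      proof (intro mult_left_mono)
        show "(\<integral>\<^sup>+\<omega>'. Gf (tau r \<omega>, idx r \<omega>) \<omega>' \<partial>M) \<le> ennreal (if s + tau r \<omega> < T then V ^ Nm else 1)"
        proof (cases "s + tau r \<omega> < T")
          case True
          define s' where "s' = s + tau r \<omega>"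
          define l where "l = idx r \<omega>"
          have s': "0 \<le> s'" "s' \<le> T" using True t0 Suc.prems unfolding s'_def by auto
          have "(\<integral>\<^sup>+\<omega>'. Gf (tau r \<omega>, idx r \<omega>) \<omega>' \<partial>M) = (\<integral>\<^sup>+\<omega>'. (\<Prod>j<sum_list l. ennreal (psi n (r @ [j]) s' (mark_of l j) \<omega>')) \<partial>M)"
            unfolding Gf_def using True psi_ge1 unfolding s'_def l_def
            by (intro nn_integral_cong) (simp add: prod_ennreal[symmetric] order.trans[OF zero_le_one])
          also have "\<dots> = (\<Prod>j<sum_list l. (\<integral>\<^sup>+\<omega>'. ennreal (psi n (r @ [j]) s' (mark_of l j) \<omega>') \<partial>M))"
            by (rule indep_vars_nn_integral) (auto intro: indep_psi)
          also have "\<dots> \<le> (\<Prod>j<sum_list l. ennreal V)"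
            by (rule prod_mono_enn) (rule Suc.IH[OF s'])
          also have "\<dots> = ennreal (V ^ sum_list l)" using V by (simp add: ennreal_power)
          also have "\<dots> \<le> ennreal (V ^ Nm)" using V N unfolding l_def by (intro ennreal_leI power_increasing) auto
          finally show ?thesis using True by simp
        next
          case False
          then show ?thesis unfolding Gf_def by (simp add: emeasure_space_1)
        qed
      qed simp
    qed
  qed
  also have "\<dots> \<le> 2 + 2 * AA + 2 * ennreal (V ^ Nm) * (I0 T + EB)"
    by (rule NB[OF Suc.prems]) (use V in simp)
  also have "\<dots> \<le> ennreal V" by (rule H)
  finally show ?case using eq by simp
qed

end

lemma ts_inv:
  assumes tau: "\<forall>k. 0 \<le> tau k" and Bd: "\<forall>k u. Bp k u \<in> Rd d"
  shows "fst (tree_state T tau idx Sp Bp pre st k) \<Longrightarrow> 0 \<le> fst (snd st) \<Longrightarrow> fst (snd st) \<le> T \<Longrightarrow> fst (snd (snd st)) \<in> Rd d \<Longrightarrow>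
    0 \<le> fst (snd (tree_state T tau idx Sp Bp pre st k)) \<and> fst (snd (tree_state T tau idx Sp Bp pre st k)) \<le> T
    \<and> fst (snd (snd (tree_state T tau idx Sp Bp pre st k))) \<in> Rd d"
proof (induction k arbitrary: pre st)
  case Nil then show ?case by simp
next
  case (Cons j js)
  obtain al b pos th where st: "st = (al, b, pos, th)" by (cases st) auto
  define st' where "st' = (al \<and> b + tau pre < T \<and> j < sum_list (idx pre), b + tau pre, (\<lambda>c. pos c + Bp pre (Sp pre (tau pre)) c), mark_of (idx pre) j)"
  have eq: "tree_state T tau idx Sp Bp pre st (j # js) = tree_state T tau idx Sp Bp (pre @ [j]) st' js"
    unfolding st st'_def by simp
  have al: "fst st'"
  proof (rule ccontr)
    assume "\<not> fst st'"
    from ts_dead[OF this] Cons.prems(1) eq show False by simp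
  qed
  then have lt: "b + tau pre < T" unfolding st'_def by simp
  have b0: "0 \<le> b" using Cons.prems st by simp
  have pos: "pos \<in> Rd d" using Cons.prems st by simp
  have "(\<lambda>c. pos c + Bp pre (Sp pre (tau pre)) c) \<in> Rd d"
    using pos Bd unfolding Rd_def by auto
  then have "0 \<le> fst (snd st') \<and> fst (snd st') \<le> T \<and> fst (snd (snd st')) \<in> Rd d"
    unfolding st'_def using b0 tau lt by (auto intro: add_nonneg_nonneg)
  then show ?case unfolding eq using Cons.IH[of "pre @ [j]" st'] Cons.prems(1) eq by simp
qed

lemma SUP_top: "(\<And>N::nat. \<exists>n. ennreal (2 ^ N) \<le> f n) \<Longrightarrow> (SUP n. f n) = (\<top> :: ennreal)"
proof (rule ccontr)
  assume h: "\<And>N::nat. \<exists>n. ennreal (2 ^ N) \<le> f n" and ne: "(SUP n. f n) \<noteq> \<top>"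
  then obtain r where r: "(SUP n. f n) = ennreal r" "0 \<le> r" using less_top_ennreal top.not_eq_extremum by blast
  obtain N :: nat where N: "r < 2 ^ N" using real_arch_pow[of 2 r] by auto
  obtain n where "ennreal (2 ^ N) \<le> f n" using h by blast
  also have "f n \<le> (SUP n. f n)" by (rule SUP_upper) simp
  finally have "ennreal (2 ^ N) \<le> ennreal r" using r by simp
  then show False using N r by (simp add: ennreal_le_iff)
qed

context tsetup2 begin

lemma factor_bound:
  fixes c :: "nat list \<Rightarrow> real \<Rightarrow> (nat \<Rightarrow> real) \<Rightarrow> real" and q :: "nat list \<Rightarrow> real" and \<phi> :: "(nat \<Rightarrow> real) \<Rightarrow> real"
  assumes \<omega>: "\<omega> \<in> space M" and tau0: "0 \<le> tau k \<omega>" and iL: "idx k \<omega> \<in> L"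
    and cb: "\<forall>l\<in>L. \<forall>s\<in>{0..T}. \<forall>y\<in>Rd d. \<bar>c l s y\<bar> \<le> Cc"
    and qb: "\<forall>l\<in>L. qmin \<le> q l"
    and pb: "\<forall>y\<in>Rd d. \<bar>\<phi> y\<bar> \<le> Cphi"
    and pl: "\<forall>y\<in>Rd d. \<forall>z\<in>Rd d. \<bar>\<phi> y - \<phi> z\<bar> \<le> Lc * eucl_norm d (\<lambda>j. y j - z j)"
    and b: "0 \<le> b" "b \<le> T" and pos: "pos \<in> Rd d"
  shows "\<bar>if b + tau k \<omega> < T then
      c (idx k \<omega>) (b + tau k \<omega>) (\<lambda>j. pos j + B k \<omega> (S k \<omega> (tau k \<omega>)) j) *
        (if th = 0 then 1 else B k \<omega> (S k \<omega> (tau k \<omega>)) (th - 1) / S k \<omega> (tau k \<omega>)) / (q (idx k \<omega>) * \<rho> (tau k \<omega>))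
    else (\<phi> (\<lambda>j. pos j + B k \<omega> (S k \<omega> (T - b)) j) - \<phi> pos * (if th \<noteq> 0 then 1 else 0)) *
        (if th = 0 then 1 else B k \<omega> (S k \<omega> (T - b)) (th - 1) / S k \<omega> (T - b)) / Fbar \<rho> (T - b)\<bar> powr p
    \<le> aa k b th \<omega>"
proof -
  have BR: "B k \<omega> u \<in> Rd d" for u using B_props[OF \<omega>, of k] unfolding Rd_def by auto
  have posB: "(\<lambda>j. pos j + B k \<omega> u j) \<in> Rd d" for u using pos BR unfolding Rd_def by auto
  have "\<bar>if b + tau k \<omega> < T then
      c (idx k \<omega>) (b + tau k \<omega>) (\<lambda>j. pos j + B k \<omega> (S k \<omega> (tau k \<omega>)) j) *
        (if th = 0 then 1 else B k \<omega> (S k \<omega> (tau k \<omega>)) (th - 1) / S k \<omega> (tau k \<omega>)) / (q (idx k \<omega>) * \<rho> (tau k \<omega>))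
    else (\<phi> (\<lambda>j. pos j + B k \<omega> (S k \<omega> (T - b)) j) - \<phi> pos * (if th \<noteq> 0 then 1 else 0)) *
        (if th = 0 then 1 else B k \<omega> (S k \<omega> (T - b)) (th - 1) / S k \<omega> (T - b)) / Fbar \<rho> (T - b)\<bar> powr p
    \<le> abnd k b th \<omega>"
  proof (cases "b + tau k \<omega> < T")
    case True
    define u where "u = tau k \<omega>"
    have r0: "0 < \<rho> u" using rho_pos tau0 unfolding u_def by auto
    have q0: "qmin \<le> q (idx k \<omega>)" using qb iL by auto
    have sx: "Sx k u \<omega> = S k \<omega> u" unfolding Sx_def u_def using tau0 by simp
    have S0: "0 \<le> S k \<omega> u" using S_nonneg[OF \<omega>] tau0 unfolding u_def by simp
    have Yu: "Y k u j \<omega> = B k \<omega> (S k \<omega> u) j" for j unfolding Y_def sx using S0 by simp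
    have cc: "\<bar>c (idx k \<omega>) (b + u) (\<lambda>j. pos j + B k \<omega> (S k \<omega> u) j)\<bar> \<le> Cc"
      using cb iL posB True b tau0 unfolding u_def by auto
    have W: "\<bar>if th = 0 then 1 else B k \<omega> (S k \<omega> u) (th - 1) / S k \<omega> u\<bar> = WI th k u \<omega>"
      unfolding WI_def Yu sx using S0 by auto
    have "\<bar>c (idx k \<omega>) (b + u) (\<lambda>j. pos j + B k \<omega> (S k \<omega> u) j) * (if th = 0 then 1 else B k \<omega> (S k \<omega> u) (th - 1) / S k \<omega> u) / (q (idx k \<omega>) * \<rho> u)\<bar>
        = \<bar>c (idx k \<omega>) (b + u) (\<lambda>j. pos j + B k \<omega> (S k \<omega> u) j)\<bar> * WI th k u \<omega> / (q (idx k \<omega>) * \<rho> u)"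
      using r0 q0 qmin unfolding W[symmetric] by (simp add: abs_mult)
    also have "\<dots> \<le> Cc * WI th k u \<omega> / (qmin * \<rho> u)"
    proof -
      have w0: "0 \<le> WI th k u \<omega>" unfolding WI_def using S0 sx by auto
      have "\<bar>c (idx k \<omega>) (b + u) (\<lambda>j. pos j + B k \<omega> (S k \<omega> u) j)\<bar> * WI th k u \<omega> \<le> Cc * WI th k u \<omega>"
        using cc w0 by (rule mult_right_mono)
      moreover have "qmin * \<rho> u \<le> q (idx k \<omega>) * \<rho> u" using q0 r0 by simp
      ultimately show ?thesis using qmin r0 Cc w0 by (intro frac_le) auto
    qed
    finally have le: "\<bar>c (idx k \<omega>) (b + u) (\<lambda>j. pos j + B k \<omega> (S k \<omega> u) j) * (if th = 0 then 1 else B k \<omega> (S k \<omega> u) (th - 1) / S k \<omega> u) / (q (idx k \<omega>) * \<rho> u)\<bar> \<le> Cc * WI th k u \<omega> / (qmin * \<rho> u)" .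
    have "\<bar>c (idx k \<omega>) (b + u) (\<lambda>j. pos j + B k \<omega> (S k \<omega> u) j) * (if th = 0 then 1 else B k \<omega> (S k \<omega> u) (th - 1) / S k \<omega> u) / (q (idx k \<omega>) * \<rho> u)\<bar> powr p
       \<le> (Cc * WI th k u \<omega> / (qmin * \<rho> u)) powr p"
      by (rule powr_mono2) (use le p in auto)
    then show ?thesis using True unfolding abnd_def u_def by simp
  next
    case False
    define u where "u = T - b"
    have u0: "0 \<le> u" using b unfolding u_def by simp
    have F0: "0 < Fbar \<rho> u" by (rule Fbar_pos[OF u0])
    have FB: "FB b = Fbar \<rho> u" unfolding FB_def u_def using b by simp
    have sx: "Sx k u \<omega> = S k \<omega> u" unfolding Sx_def using u0 by simp
    have S0: "0 \<le> S k \<omega> u" using S_nonneg[OF \<omega> u0] .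
    have Yu: "Y k u j \<omega> = B k \<omega> (S k \<omega> u) j" for j unfolding Y_def sx using S0 by simp
    have num: "\<bar>(\<phi> (\<lambda>j. pos j + B k \<omega> (S k \<omega> u) j) - \<phi> pos * (if th \<noteq> 0 then 1 else 0)) * (if th = 0 then 1 else B k \<omega> (S k \<omega> u) (th - 1) / S k \<omega> u)\<bar>
        \<le> XB th k u \<omega>"
    proof (cases "th = 0")
      case True
      then show ?thesis unfolding XB_def using pb posB by simp
    next
      case False
      have "\<bar>\<phi> (\<lambda>j. pos j + B k \<omega> (S k \<omega> u) j) - \<phi> pos\<bar> \<le> Lc * eucl_norm d (\<lambda>j. (pos j + B k \<omega> (S k \<omega> u) j) - pos j)"
        using pl posB pos by blast
      also have "(\<lambda>j. (pos j + B k \<omega> (S k \<omega> u) j) - pos j) = (\<lambda>j. Y k u j \<omega>)" unfolding Yu by simp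
      finally have ph: "\<bar>\<phi> (\<lambda>j. pos j + B k \<omega> (S k \<omega> u) j) - \<phi> pos\<bar> \<le> Lc * eucl_norm d (\<lambda>j. Y k u j \<omega>)" .
      have "\<bar>(\<phi> (\<lambda>j. pos j + B k \<omega> (S k \<omega> u) j) - \<phi> pos) * (B k \<omega> (S k \<omega> u) (th - 1) / S k \<omega> u)\<bar>
          = \<bar>\<phi> (\<lambda>j. pos j + B k \<omega> (S k \<omega> u) j) - \<phi> pos\<bar> * (\<bar>Y k u (th - 1) \<omega>\<bar> / Sx k u \<omega>)"
        unfolding Yu sx using S0 by (simp add: abs_mult)
      also have "\<dots> \<le> Lc * eucl_norm d (\<lambda>j. Y k u j \<omega>) * (\<bar>Y k u (th - 1) \<omega>\<bar> / Sx k u \<omega>)"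
        by (rule mult_right_mono[OF ph]) (use S0 sx in simp)
      finally show ?thesis unfolding XB_def using False by simp
    qed
    have le: "\<bar>(\<phi> (\<lambda>j. pos j + B k \<omega> (S k \<omega> u) j) - \<phi> pos * (if th \<noteq> 0 then 1 else 0)) * (if th = 0 then 1 else B k \<omega> (S k \<omega> u) (th - 1) / S k \<omega> u) / Fbar \<rho> u\<bar>
        \<le> XB th k u \<omega> / Fbar \<rho> u"
      using num F0 by (simp add: divide_right_mono)
    have "\<bar>(\<phi> (\<lambda>j. pos j + B k \<omega> (S k \<omega> u) j) - \<phi> pos * (if th \<noteq> 0 then 1 else 0)) * (if th = 0 then 1 else B k \<omega> (S k \<omega> u) (th - 1) / S k \<omega> u) / Fbar \<rho> u\<bar> powr p
        \<le> (XB th k u \<omega> / Fbar \<rho> u) powr p"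
      by (rule powr_mono2) (use le p in auto)
    then show ?thesis using False unfolding abnd_def u_def FB[unfolded u_def] by simp
  qed
  also have "abnd k b th \<omega> \<le> aa k b th \<omega>" unfolding aa_def by simp
  finally show ?thesis .
qed

end

lemma prod_subset_ge:
  fixes f :: "'a \<Rightarrow> real"
  assumes "finite B" "A \<subseteq> B" "\<And>b. b \<in> B \<Longrightarrow> 1 \<le> f b"
  shows "prod f A \<le> prod f B"
proof -
  have fA: "finite A" using assms finite_subset by blast
  have "prod f B = prod f (B - A) * prod f A" by (rule prod.subset_diff[OF assms(2) assms(1)])
  then have "prod f B = prod f A * prod f (B - A)" by simp
  moreover have "1 \<le> prod f (B - A)" using assms by (intro prod_ge_1) auto
  moreover have "0 \<le> prod f A" using assms by (intro prod_nonneg) (meson in_mono order.trans zero_le_one)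
  ultimately show ?thesis by (metis mult_left_mono mult.right_neutral)
qed

context tsetup2 begin

lemma H_le_G:
  fixes c :: "nat list \<Rightarrow> real \<Rightarrow> (nat \<Rightarrow> real) \<Rightarrow> real" and q :: "nat list \<Rightarrow> real" and \<phi> :: "(nat \<Rightarrow> real) \<Rightarrow> real"
  assumes \<omega>: "\<omega> \<in> space M" and tau0: "\<forall>k. 0 \<le> tau k \<omega>" and iL: "\<forall>k. idx k \<omega> \<in> L"
    and cb: "\<forall>l\<in>L. \<forall>s\<in>{0..T}. \<forall>y\<in>Rd d. \<bar>c l s y\<bar> \<le> Cc"
    and qb: "\<forall>l\<in>L. qmin \<le> q l"
    and pb: "\<forall>y\<in>Rd d. \<bar>\<phi> y\<bar> \<le> Cphi"
    and pl: "\<forall>y\<in>Rd d. \<forall>z\<in>Rd d. \<bar>\<phi> y - \<phi> z\<bar> \<le> Lc * eucl_norm d (\<lambda>j. y j - z j)"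
    and x: "x \<in> Rd d" and t: "0 \<le> t" "t \<le> T"
  shows "(infinite (tree_nodes T t x i (\<lambda>k. tau k \<omega>) (\<lambda>k. idx k \<omega>) (\<lambda>k. S k \<omega>) (\<lambda>k. B k \<omega>)) \<longrightarrow> (SUP n. ennreal (psi n [] t i \<omega>)) = \<top>)
    \<and> ennreal (\<bar>Hfun c q \<rho> \<phi> T t x i (\<lambda>k. tau k \<omega>) (\<lambda>k. idx k \<omega>) (\<lambda>k. S k \<omega>) (\<lambda>k. B k \<omega>)\<bar> powr p) \<le> (SUP n. ennreal (psi n [] t i \<omega>))"
proof -
  define tw where "tw = (\<lambda>k. tau k \<omega>)"
  define iw where "iw = (\<lambda>k. idx k \<omega>)"
  define Sw where "Sw = (\<lambda>k. S k \<omega>)"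
  define Bw where "Bw = (\<lambda>k. B k \<omega>)"
  define a' where "a' = (\<lambda>k s th. aa k s th \<omega>)"
  define ns where "ns = tree_state T tw iw Sw Bw [] (True, t, x, i)"
  define N where "N = tree_nodes T t x i tw iw Sw Bw"
  define A where "A k = a' k (fst (snd (ns k))) (snd (snd (snd (ns k))))" for k
  have Nn: "N = nodesg T tw iw Sw Bw [] (True, t, x, i)"
    unfolding N_def tree_nodes_def nodesg_def node_state_def ..
  have a1: "1 \<le> a' k s th" for k s th unfolding a'_def using aa_ge[of k s th \<omega>] by simp
  have psi_eq: "psi n [] t i \<omega> = psiD a' tw iw T n [] t i" for n unfolding psi_def a'_def tw_def iw_def ..
  have PL: "finite (N \<inter> {k. length k < n}) \<and> prod A (N \<inter> {k. length k < n}) \<le> psi n [] t i \<omega>" for n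
    using prod_le_psiD[where a=a', OF a1, of T tw iw Sw Bw "[]" t x i n] unfolding psi_eq Nn A_def ns_def by simp
  have A2: "2 \<le> A k" for k unfolding A_def a'_def by (rule aa_ge)
  have inf: "(SUP n. ennreal (psi n [] t i \<omega>)) = \<top>" if infN: "infinite N"
  proof (rule SUP_top)
    fix K :: nat
    obtain F where F: "F \<subseteq> N" "finite F" "card F = K" using infinite_arbitrarily_large[OF infN] by blast
    define n where "n = Suc (Max (insert 0 (length ` F)))"
    have Fn: "F \<subseteq> N \<inter> {k. length k < n}"
      using F unfolding n_def by (auto simp: less_Suc_eq_le intro: Max_ge)
    have "(2::real) ^ K = (\<Prod>k\<in>F. 2)" using F by simp
    also have "\<dots> \<le> prod A F" using A2 by (intro prod_mono) auto
    also have "\<dots> \<le> prod A (N \<inter> {k. length k < n})"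
      by (rule prod_subset_ge[OF _ Fn]) (use PL A2 in \<open>auto intro: order.trans[OF one_le_numeral]\<close>)
    also have "\<dots> \<le> psi n [] t i \<omega>" using PL by blast
    finally show "\<exists>n. ennreal (2 ^ K) \<le> ennreal (psi n [] t i \<omega>)" by (intro exI[of _ n] ennreal_leI)
  qed
  have bnd: "ennreal (\<bar>Hfun c q \<rho> \<phi> T t x i tw iw Sw Bw\<bar> powr p) \<le> (SUP n. ennreal (psi n [] t i \<omega>))"
  proof (cases "finite N")
    case False
    then have "(SUP n. ennreal (psi n [] t i \<omega>)) = \<top>" by (rule inf)
    then show ?thesis by (metis top_greatest)
  next
    case True
    define n where "n = Suc (Max (insert 0 (length ` N)))"
    have Nn2: "N \<inter> {k. length k < n} = N"
      using True unfolding n_def by (auto simp: less_Suc_eq_le intro: Max_ge)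
    define Fin where "Fin k = c (iw k) (fst (snd (ns k)) + tw k) (\<lambda>j. fst (snd (snd (ns k))) j + Bw k (Sw k (tw k)) j) *
        (if snd (snd (snd (ns k))) = 0 then 1 else Bw k (Sw k (tw k)) (snd (snd (snd (ns k))) - 1) / Sw k (tw k)) / (q (iw k) * \<rho> (tw k))" for k
    define Fbd where "Fbd k = (\<phi> (\<lambda>j. fst (snd (snd (ns k))) j + Bw k (Sw k (T - fst (snd (ns k)))) j) - \<phi> (fst (snd (snd (ns k)))) * (if snd (snd (snd (ns k))) \<noteq> 0 then 1 else 0)) *
        (if snd (snd (snd (ns k))) = 0 then 1 else Bw k (Sw k (T - fst (snd (ns k)))) (snd (snd (snd (ns k))) - 1) / Sw k (T - fst (snd (ns k)))) / Fbar \<rho> (T - fst (snd (ns k)))" for k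
    define P where "P k = (fst (snd (ns k)) + tw k < T)" for k
    define Fa where "Fa k = (if P k then Fin k else Fbd k)" for k
    have st_eq: "node_state T t x i tw iw Sw Bw = ns" unfolding ns_def node_state_def[abs_def] ..
    have N_eq: "tree_nodes T t x i tw iw Sw Bw = N" unfolding N_def ..
    have H0: "Hfun c q \<rho> \<phi> T t x i tw iw Sw Bw = prod Fin {k \<in> N. fst (snd (ns k)) + tw k < T} * prod Fbd {k \<in> N. T \<le> fst (snd (ns k)) + tw k}"
      unfolding Hfun_def Let_def st_eq N_eq Fin_def[abs_def] Fbd_def[abs_def] ..
    have Heq: "Hfun c q \<rho> \<phi> T t x i tw iw Sw Bw = prod Fa N"
    proof -
      have "prod Fa N = prod Fin (N \<inter> {k. P k}) * prod Fbd (N \<inter> - {k. P k})"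
        unfolding Fa_def by (rule prod.If_cases[OF True])
      moreover have "N \<inter> - {k. P k} = {k \<in> N. T \<le> fst (snd (ns k)) + tw k}" unfolding P_def by auto
      moreover have "N \<inter> {k. P k} = {k \<in> N. fst (snd (ns k)) + tw k < T}" unfolding P_def by auto
      ultimately show ?thesis unfolding H0 by simp
    qed
    have Bd: "\<forall>k u. Bw k u \<in> Rd d" unfolding Bw_def using B_props[OF \<omega>] Rd_def by auto
    have fb: "\<bar>Fa k\<bar> powr p \<le> A k" if k: "k \<in> N" for k
    proof -
      have alive: "fst (ns k)" using k unfolding Nn nodesg_def ns_def by simp
      have inv: "0 \<le> fst (snd (ns k)) \<and> fst (snd (ns k)) \<le> T \<and> fst (snd (snd (ns k))) \<in> Rd d"
        unfolding ns_def by (rule ts_inv[OF _ Bd]) (use alive tau0 t x in \<open>auto simp: ns_def tw_def\<close>)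
      show ?thesis unfolding Fa_def Fin_def Fbd_def P_def A_def a'_def tw_def iw_def Sw_def Bw_def
        by (rule factor_bound[OF \<omega> _ _ cb qb pb pl]) (use inv tau0 iL in auto)
    qed
    have "\<bar>Hfun c q \<rho> \<phi> T t x i tw iw Sw Bw\<bar> powr p = (\<Prod>k\<in>N. \<bar>Fa k\<bar> powr p)"
      unfolding Heq by (simp add: abs_prod prod_powr_distrib)
    also have "\<dots> \<le> prod A N" using fb by (intro prod_mono) auto
    also have "\<dots> \<le> psi n [] t i \<omega>" using PL[of n] unfolding Nn2 by simp
    finally have "ennreal (\<bar>Hfun c q \<rho> \<phi> T t x i tw iw Sw Bw\<bar> powr p) \<le> ennreal (psi n [] t i \<omega>)" by (rule ennreal_leI)
    also have "\<dots> \<le> (SUP n. ennreal (psi n [] t i \<omega>))" by (rule SUP_upper) simp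
    finally show ?thesis .
  qed
  show ?thesis using inf bnd unfolding N_def tw_def iw_def Sw_def Bw_def by blast
qed

end

lemma exp_int:
  assumes a: "0 < a"
  shows "(\<integral>\<^sup>+ s. ennreal (exp (- s * a)) * indicator {0..} s \<partial>lborel) = ennreal (1 / a)"
proof -
  interpret prob_space "density lborel (exponential_density a)" by (rule prob_space_exponential_density[OF a])
  have "1 = emeasure (density lborel (exponential_density a)) UNIV" using emeasure_space_1 by simp
  also have "\<dots> = (\<integral>\<^sup>+ s. ennreal (exponential_density a s) \<partial>lborel)"
    by (subst emeasure_density) auto
  also have "\<dots> = (\<integral>\<^sup>+ s. ennreal a * (ennreal (exp (- s * a)) * indicator {0..} s) \<partial>lborel)"
    using a by (intro nn_integral_cong) (auto simp: exponential_density_def indicator_def ennreal_mult)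
  also have "\<dots> = ennreal a * (\<integral>\<^sup>+ s. ennreal (exp (- s * a)) * indicator {0..} s \<partial>lborel)"
    by (rule nn_integral_cmult) measurable
  finally have e: "ennreal a * (\<integral>\<^sup>+ s. ennreal (exp (- s * a)) * indicator {0..} s \<partial>lborel) = 1" by simp
  define X where "X = (\<integral>\<^sup>+ s. ennreal (exp (- s * a)) * indicator {0..} s \<partial>lborel)"
  have "ennreal (1 / a) * ennreal a = 1" using a by (simp add: ennreal_mult[symmetric])
  then have "X = (ennreal (1 / a) * ennreal a) * X" by simp
  also have "\<dots> = ennreal (1 / a) * (ennreal a * X)" by (simp add: mult.assoc)
  also have "\<dots> = ennreal (1 / a)" using e unfolding X_def by simp
  finally show ?thesis unfolding X_def .
qed

lemma sqrt_int: "0 \<le> c \<Longrightarrow> (\<integral>\<^sup>+ l. ennreal (l powr (-1/2)) * indicator {0..c} l \<partial>lborel) < \<top>"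
proof -
  assume c: "0 \<le> c"
  have "((\<lambda>x. x powr (-1/2)) has_integral (c powr (-1/2 + 1) / (-1/2 + 1))) {0..c}"
    by (rule has_integral_powr_from_0) (use c in auto)
  from nn_integral_has_integral_lebesgue'[OF _ this]
  show ?thesis by simp
qed

lemma second_conj:
  fixes \<eta> \<rho> :: "real \<Rightarrow> real" and T lam0 :: real
  assumes eta_nn: "\<forall>x>0. 0 \<le> \<eta> x" and eta_meas: "(\<lambda>l. if 0 < l then \<eta> l else 0) \<in> borel_measurable borel"
    and rho_pos: "\<forall>s\<ge>0. 0 < \<rho> s"
    and T: "0 < T" and lam0: "0 < lam0"
    and fin: "(\<integral>\<^sup>+ lam\<in>{lam0..}. 1 / ennreal (\<eta> lam * sqrt lam) \<partial>lborel) < \<infinity>"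
  shows "cond1 \<rho> 1 T \<and> cond2 \<rho> \<eta> 1 T"
proof
  have "(\<integral>\<^sup>+ s\<in>{0..T}. ennreal (1 / \<rho> s powr (1 - 1)) \<partial>lborel) \<le> (\<integral>\<^sup>+ s. indicator {0..T} s \<partial>lborel)"
    by (intro nn_integral_mono) (auto simp: indicator_def)
  also have "\<dots> = ennreal T" using T by simp
  finally show "cond1 \<rho> 1 T" unfolding cond1_def by (simp add: le_less_trans)
next
  define e' where "e' l = (if 0 < l then \<eta> l else 0)" for l
  have em[measurable]: "e' \<in> borel_measurable borel" unfolding e'_def by (rule eta_meas)
  define F where "F x = ennreal (exp (- fst x * e' (snd x)) * snd x powr (-1/2)) * indicator {0<..} (snd x) * indicator {0..T} (fst x)" for x :: "real \<times> real"
  have Fm: "F \<in> borel_measurable (lborel \<Otimes>\<^sub>M lborel)" unfolding F_def by measurable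

  have "(\<integral>\<^sup>+ s\<in>{0..T}. (\<integral>\<^sup>+ lam\<in>{0<..}. ennreal (exp (- s * \<eta> lam) / \<rho> s powr (1 - 1) * lam powr (1 / 2 - 1)) \<partial>lborel) \<partial>lborel)
      \<le> (\<integral>\<^sup>+ s. (\<integral>\<^sup>+ lam. F (s, lam) \<partial>lborel) \<partial>lborel)"
  proof (rule nn_integral_mono)
    fix s :: real
    show "(\<integral>\<^sup>+ lam\<in>{0<..}. ennreal (exp (- s * \<eta> lam) / \<rho> s powr (1 - 1) * lam powr (1 / 2 - 1)) \<partial>lborel) * indicator {0..T} s
        \<le> (\<integral>\<^sup>+ lam. F (s, lam) \<partial>lborel)"
    proof (cases "s \<in> {0..T}")
      case True
      then have r: "\<rho> s powr (1 - 1) = 1" using rho_pos by auto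
      show ?thesis using True unfolding F_def
        by (auto intro!: nn_integral_mono simp: r indicator_def e'_def)
    qed (auto simp: indicator_def)
  qed
  also have "\<dots> = (\<integral>\<^sup>+ lam. (\<integral>\<^sup>+ s. F (s, lam) \<partial>lborel) \<partial>lborel)"
    using lborel_pair.Fubini'[of "\<lambda>s lam. F (s, lam)"] Fm by simp
  also have "\<dots> \<le> (\<integral>\<^sup>+ lam. ennreal T * (ennreal (lam powr (-1/2)) * indicator {0..lam0} lam) + 1 / ennreal (\<eta> lam * sqrt lam) * indicator {lam0..} lam \<partial>lborel)"
  proof (rule nn_integral_mono)
    fix lam :: real
    show "(\<integral>\<^sup>+ s. F (s, lam) \<partial>lborel) \<le> ennreal T * (ennreal (lam powr (-1/2)) * indicator {0..lam0} lam) + 1 / ennreal (\<eta> lam * sqrt lam) * indicator {lam0..} lam"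
    proof (cases "0 < lam")
      case False
      then have "(\<integral>\<^sup>+ s. F (s, lam) \<partial>lborel) = 0" unfolding F_def by simp
      then show ?thesis by simp
    next
      case True
      define a where "a = \<eta> lam"
      have a0: "0 \<le> a" unfolding a_def using eta_nn True by auto
      have Fe: "F (s, lam) = ennreal (lam powr (-1/2)) * (ennreal (exp (- s * a)) * indicator {0..T} s)" for s
        unfolding F_def e'_def a_def using True by (simp add: ennreal_mult[symmetric] mult_ac)
      have I: "(\<integral>\<^sup>+ s. F (s, lam) \<partial>lborel) = ennreal (lam powr (-1/2)) * (\<integral>\<^sup>+ s. ennreal (exp (- s * a)) * indicator {0..T} s \<partial>lborel)"
        unfolding Fe by (rule nn_integral_cmult) measurable
      have b1: "(\<integral>\<^sup>+ s. ennreal (exp (- s * a)) * indicator {0..T} s \<partial>lborel) \<le> ennreal T"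
      proof -
        have "(\<integral>\<^sup>+ s. ennreal (exp (- s * a)) * indicator {0..T} s \<partial>lborel) \<le> (\<integral>\<^sup>+ s. indicator {0..T} s \<partial>lborel)"
          using a0 by (intro nn_integral_mono) (auto simp: indicator_def mult_nonneg_nonneg)
        then show ?thesis using T by simp
      qed
      show ?thesis
      proof (cases "lam \<le> lam0")
        case True
        have "(\<integral>\<^sup>+ s. F (s, lam) \<partial>lborel) \<le> ennreal (lam powr (-1/2)) * ennreal T"
          unfolding I by (rule mult_left_mono[OF b1]) simp
        also have "\<dots> = ennreal T * (ennreal (lam powr (-1/2)) * indicator {0..lam0} lam)"
          using True \<open>0 < lam\<close> by (simp add: mult.commute)
        finally show ?thesis by (rule order.trans) simp
      next
        case False
        have "(\<integral>\<^sup>+ s. F (s, lam) \<partial>lborel) \<le> 1 / ennreal (\<eta> lam * sqrt lam)"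
        proof (cases "a = 0")
          case True then show ?thesis unfolding a_def by (simp add: divide_ennreal_def)
        next
          case False
          then have ap: "0 < a" using a0 by simp
          have "(\<integral>\<^sup>+ s. ennreal (exp (- s * a)) * indicator {0..T} s \<partial>lborel) \<le> (\<integral>\<^sup>+ s. ennreal (exp (- s * a)) * indicator {0..} s \<partial>lborel)"
            by (intro nn_integral_mono) (auto simp: indicator_def)
          also have "\<dots> = ennreal (1 / a)" by (rule exp_int[OF ap])
          finally have "(\<integral>\<^sup>+ s. F (s, lam) \<partial>lborel) \<le> ennreal (lam powr (-1/2)) * ennreal (1 / a)"
            unfolding I by (rule mult_left_mono) simp
          also have "\<dots> = ennreal (1 / (a * sqrt lam))"
          proof -
            have "lam powr (-1/2) = 1 / sqrt lam" using \<open>0 < lam\<close>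
              by (simp add: powr_minus_divide powr_half_sqrt[symmetric])
            then show ?thesis using ap \<open>0 < lam\<close> by (simp add: ennreal_mult[symmetric])
          qed
          also have "\<dots> = 1 / ennreal (\<eta> lam * sqrt lam)"
          proof -
            have "ennreal 1 / ennreal (\<eta> lam * sqrt lam) = ennreal (1 / (\<eta> lam * sqrt lam))"
              by (rule divide_ennreal) (use ap \<open>0 < lam\<close> in \<open>auto simp: a_def\<close>)
            then show ?thesis unfolding a_def by simp
          qed
          finally show ?thesis .
        qed
        then show ?thesis using False by (simp add: indicator_def)
      qed
    qed
  qed
  also have "\<dots> = ennreal T * (\<integral>\<^sup>+ lam. ennreal (lam powr (-1/2)) * indicator {0..lam0} lam \<partial>lborel) + (\<integral>\<^sup>+ lam\<in>{lam0..}. 1 / ennreal (\<eta> lam * sqrt lam) \<partial>lborel)"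
  proof -
    have m1: "(\<lambda>lam. ennreal T * (ennreal (lam powr (-1/2)) * indicator {0..lam0} lam)) \<in> borel_measurable lborel" by measurable
    have m2: "(\<lambda>lam. 1 / ennreal (\<eta> lam * sqrt lam) * indicator {lam0..} lam) \<in> borel_measurable lborel"
    proof -
      have "(\<lambda>lam. 1 / ennreal (e' lam * sqrt lam) * indicator {lam0..} lam) \<in> borel_measurable lborel" by measurable
      moreover have "(\<lambda>lam. 1 / ennreal (e' lam * sqrt lam) * indicator {lam0..} lam) = (\<lambda>lam. 1 / ennreal (\<eta> lam * sqrt lam) * indicator {lam0..} lam)"
        using lam0 by (auto simp: fun_eq_iff indicator_def e'_def)
      ultimately show ?thesis by simp
    qed
    show ?thesis using m1 m2 by (simp add: nn_integral_add nn_integral_cmult)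
  qed
  also have "\<dots> < \<top>"
    using sqrt_int[of lam0] lam0 fin by (simp add: ennreal_mult_less_top)
  finally show "cond2 \<rho> \<eta> 1 T" unfolding cond2_def by simp
qed

lemma psiD_mono: "(\<And>k s th. 1 \<le> a k s th) \<Longrightarrow> psiD a tau idx T n pre s th \<le> psiD a tau idx T (Suc n) pre s th"
proof (induction n arbitrary: pre s th)
  case 0
  have "1 \<le> psiD a tau idx T (Suc 0) pre s th" by (rule psiD_ge1) (rule 0)
  then show ?case by simp
next
  case (Suc n)
  have le: "(if s + tau pre < T then (\<Prod>j<sum_list (idx pre). psiD a tau idx T n (pre @ [j]) (s + tau pre) (mark_of (idx pre) j)) else 1)
      \<le> (if s + tau pre < T then (\<Prod>j<sum_list (idx pre). psiD a tau idx T (Suc n) (pre @ [j]) (s + tau pre) (mark_of (idx pre) j)) else 1)"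
  proof (cases "s + tau pre < T")
    case True
    have "(\<Prod>j<sum_list (idx pre). psiD a tau idx T n (pre @ [j]) (s + tau pre) (mark_of (idx pre) j))
       \<le> (\<Prod>j<sum_list (idx pre). psiD a tau idx T (Suc n) (pre @ [j]) (s + tau pre) (mark_of (idx pre) j))"
      using Suc psiD_ge1[of a tau idx T n] by (intro prod_mono) (meson order.trans zero_le_one)
    then show ?thesis using True by simp
  qed simp
  have "0 \<le> a pre s th" using Suc.prems[of pre s th] by simp
  from mult_left_mono[OF le this] show ?case by simp
qed

context tsetup begin

lemma AE_idx:
  assumes L_fin: "finite L" and q_sum: "(\<Sum>l\<in>L. q l) = 1"
    and idx_distr: "\<forall>k. \<forall>l\<in>L. measure M {\<omega>\<in>space M. idx k \<omega> = l} = q l"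
  shows "AE \<omega> in M. \<forall>k. idx k \<omega> \<in> L"
proof (subst AE_all_countable, intro allI)
  fix k
  have im: "idx k \<in> measurable M (count_space UNIV)" using meas_M[OF meas_idx[of k "{(k,1)}"]] by simp
  have sets: "{\<omega>\<in>space M. idx k \<omega> = l} \<in> sets M" for l using im by measurable
  have "measure M (\<Union>l\<in>L. {\<omega>\<in>space M. idx k \<omega> = l}) = (\<Sum>l\<in>L. measure M {\<omega>\<in>space M. idx k \<omega> = l})"
    by (rule finite_measure_finite_Union[OF L_fin]) (auto simp: sets disjoint_family_on_def)
  also have "\<dots> = 1" using idx_distr q_sum by simp
  finally have m1: "measure M {\<omega>\<in>space M. idx k \<omega> \<in> L} = 1"
    by (simp add: Collect_bex_eq[symmetric] conj_commute)
  have sL: "{\<omega>\<in>space M. idx k \<omega> \<in> L} \<in> sets M" using im by measurable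
  show "AE \<omega> in M. idx k \<omega> \<in> L"
    using prob_space.AE_prob_1[OF prob_space_axioms m1] by simp
qed

end

lemma enn_expr:
  fixes A0 W e c K :: real
  assumes "0 \<le> A0" "0 \<le> W" "0 \<le> e" "0 \<le> c" "0 \<le> K"
  shows "2 + 2 * ennreal A0 + 2 * ennreal W * (ennreal e + ennreal c * (ennreal e + ennreal K * ennreal e))
     = ennreal (2 + 2 * A0 + 2 * W * (e + c * (e + K * e)))"
  using assms by (simp add: ennreal_plus ennreal_mult add_nonneg_nonneg mult_nonneg_nonneg del: ennreal_numeral) (simp add: ennreal_numeral[symmetric] ennreal_mult ennreal_plus del: ennreal_numeral)

theorem theorem4p1:
  fixes M :: "'w measure"
    and d m :: nat and Tmax :: real
    and \<eta> \<rho> :: "real \<Rightarrow> real"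
    and L :: "nat list set" and q :: "nat list \<Rightarrow> real"
    and c :: "nat list \<Rightarrow> real \<Rightarrow> (nat \<Rightarrow> real) \<Rightarrow> real"
    and \<phi> :: "(nat \<Rightarrow> real) \<Rightarrow> real"
    and tau :: "nat list \<Rightarrow> 'w \<Rightarrow> real" and idx :: "nat list \<Rightarrow> 'w \<Rightarrow> nat list"
    and S :: "nat list \<Rightarrow> 'w \<Rightarrow> real \<Rightarrow> real" and B :: "nat list \<Rightarrow> 'w \<Rightarrow> real \<Rightarrow> nat \<Rightarrow> real"
    and p :: real and m0 :: nat
  assumes d: "1 \<le> d" and Tmax: "0 < Tmax" and md: "m \<le> d"
    and bern: "bernstein \<eta>" and eta0: "(\<eta> \<longlongrightarrow> 0) (at_right 0)"
    and rho_meas: "\<rho> \<in> borel_measurable borel" and rho_pos: "\<forall>s\<ge>0. 0 < \<rho> s"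
    and L_fin: "finite L" and L_len: "\<forall>l\<in>L. length l = Suc m"
    and q_pos: "\<forall>l\<in>L. 0 < q l" and q_sum: "(\<Sum>l\<in>L. q l) = 1"
    and c_meas: "\<forall>l\<in>L. (\<lambda>(s, x). indicator {0..Tmax} s * c l s (\<lambda>j. if j < d then x j else 0))
                    \<in> borel_measurable (borel \<Otimes>\<^sub>M (\<Pi>\<^sub>M j\<in>UNIV. (borel :: real measure)))"
    and c_bdd: "\<forall>l\<in>L. \<exists>C. \<forall>s\<in>{0..Tmax}. \<forall>x\<in>Rd d. \<bar>c l s x\<bar> \<le> C"
    and phi_bdd: "\<exists>C. \<forall>x\<in>Rd d. \<bar>\<phi> x\<bar> \<le> C"
    and phi_lip: "\<exists>Lc. \<forall>x\<in>Rd d. \<forall>y\<in>Rd d. \<bar>\<phi> x - \<phi> y\<bar> \<le> Lc * eucl_norm d (\<lambda>j. x j - y j)"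
    and M: "prob_space M"
    and tau_distr: "\<forall>k. distributed M lborel (tau k) (\<lambda>s. if 0 \<le> s then ennreal (\<rho> s) else 0)"
    and idx_meas: "\<forall>k. idx k \<in> measurable M (count_space UNIV)"
    and idx_distr: "\<forall>k. \<forall>l\<in>L. measure M {\<omega>\<in>space M. idx k \<omega> = l} = q l"
    and S_sub: "\<forall>k. subordinator M \<eta> (S k)"
    and B_BM: "\<forall>k. std_BM M d (B k)"
    and indep: "prob_space.indep_sets M
        (\<lambda>(k, n::nat). if n = 0 then sets (vimage_algebra (space M) (tau k) borel)
                 else if n = 1 then sets (vimage_algebra (space M) (idx k) (count_space UNIV))
                 else if n = 2 then sets (vimage_algebra (space M) (S k) (\<Pi>\<^sub>M u\<in>UNIV. (borel :: real measure)))
                 else sets (vimage_algebra (space M) (B k) (\<Pi>\<^sub>M u\<in>UNIV. \<Pi>\<^sub>M j\<in>UNIV. (borel :: real measure))))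
        (UNIV \<times> {..<(4::nat)})"
    and p: "1 \<le> p" and m0: "m \<le> m0" "m0 \<le> d"
  shows "(\<exists>T0>0. T0 \<le> Tmax \<and>
           (\<forall>T\<in>{0<..T0}. cond1 \<rho> p T \<and> cond2 \<rho> \<eta> p T \<longrightarrow>
              (\<forall>t\<in>{0..T}. \<forall>i\<in>{0..m0}.
                 (AE \<omega> in M. \<forall>x\<in>Rd d. finite (tree_nodes T t x i (\<lambda>k. tau k \<omega>) (\<lambda>k. idx k \<omega>) (\<lambda>k. S k \<omega>) (\<lambda>k. B k \<omega>)))
               \<and> (\<integral>\<^sup>+ \<omega>. (SUP x\<in>Rd d. ennreal (\<bar>Hfun c q \<rho> \<phi> T t x i (\<lambda>k. tau k \<omega>) (\<lambda>k. idx k \<omega>)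
                                              (\<lambda>k. S k \<omega>) (\<lambda>k. B k \<omega>)\<bar> powr p)) \<partial>M) < \<infinity>)))
       \<and> (\<forall>T>0. (\<exists>lam0>0. (\<integral>\<^sup>+ lam\<in>{lam0..}. 1 / ennreal (\<eta> lam * sqrt lam) \<partial>lborel) < \<infinity>)
                 \<longrightarrow> cond1 \<rho> 1 T \<and> cond2 \<rho> \<eta> 1 T)"
proof -
  interpret prob_space M by (rule M)
  have indep': "indep_sets (Fk M tau idx S B) (UNIV \<times> {..<4})" unfolding Fk_def by (rule indep)
  interpret tsetup M d tau idx S B \<eta> \<rho>
    by unfold_locales (use indep' S_sub B_BM tau_distr rho_meas rho_pos in auto)
  have eta_nn: "\<forall>x>0. 0 \<le> \<eta> x" using bern unfolding bernstein_def by blast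
  have eta_diff: "\<forall>x>0. \<eta> differentiable (at x)"
  proof -
    have "\<forall>x>0. (deriv ^^ 0) \<eta> differentiable (at x)" using bern unfolding bernstein_def by blast
    then show ?thesis by simp
  qed
  have eta_cont: "continuous_on {0<..} \<eta>"
    using eta_diff by (auto intro!: continuous_at_imp_continuous_on differentiable_imp_continuous_within)
  have eta_meas: "(\<lambda>l. if 0 < l then \<eta> l else 0) \<in> borel_measurable borel"
  proof -
    have "(\<lambda>l. if l \<in> {0<..} then \<eta> l else 0) \<in> borel_measurable borel"
      by (rule borel_measurable_continuous_on_if) (use eta_cont in auto)
    then show ?thesis by simp
  qed
  have part2: "\<forall>T>0. (\<exists>lam0>0. (\<integral>\<^sup>+ lam\<in>{lam0..}. 1 / ennreal (\<eta> lam * sqrt lam) \<partial>lborel) < \<infinity>)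
                 \<longrightarrow> cond1 \<rho> 1 T \<and> cond2 \<rho> \<eta> 1 T"
    using second_conj[OF eta_nn eta_meas rho_pos] by blast
  from c_bdd obtain Cf where Cf: "\<forall>l\<in>L. \<forall>s\<in>{0..Tmax}. \<forall>x\<in>Rd d. \<bar>c l s x\<bar> \<le> Cf l" by metis
  define Cc where "Cc = (\<Sum>l\<in>L. \<bar>Cf l\<bar>)"
  have Cc0: "0 \<le> Cc" unfolding Cc_def by (simp add: sum_nonneg)
  have cbM: "\<forall>l\<in>L. \<forall>s\<in>{0..Tmax}. \<forall>x\<in>Rd d. \<bar>c l s x\<bar> \<le> Cc"
  proof (intro ballI)
    fix l s x assume l: "l \<in> L" and s: "s \<in> {0..Tmax}" and x: "x \<in> Rd d"
    have "\<bar>c l s x\<bar> \<le> Cf l" using Cf l s x by blast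
    also have "\<dots> \<le> \<bar>Cf l\<bar>" by simp
    also have "\<dots> \<le> Cc" unfolding Cc_def using l L_fin by (intro member_le_sum) auto
    finally show "\<bar>c l s x\<bar> \<le> Cc" .
  qed
  have Lne: "L \<noteq> {}" using q_sum by auto
  define qmin where "qmin = Min (q ` L)"
  have qmin0: "0 < qmin"
  proof -
    have "qmin \<in> q ` L" unfolding qmin_def using L_fin Lne by simp
    then show ?thesis using q_pos by auto
  qed
  have qb: "\<forall>l\<in>L. qmin \<le> q l" unfolding qmin_def using L_fin by simp
  from phi_bdd obtain C0 where C0: "\<forall>x\<in>Rd d. \<bar>\<phi> x\<bar> \<le> C0" by blast
  define Cphi where "Cphi = max 0 C0"
  have Cphi0: "0 \<le> Cphi" unfolding Cphi_def by simp
  have pb: "\<forall>x\<in>Rd d. \<bar>\<phi> x\<bar> \<le> Cphi" using C0 unfolding Cphi_def by (meson max.coboundedI2)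
  from phi_lip obtain Lc0 where Lc0: "\<forall>x\<in>Rd d. \<forall>y\<in>Rd d. \<bar>\<phi> x - \<phi> y\<bar> \<le> Lc0 * eucl_norm d (\<lambda>j. x j - y j)" by blast
  define Lc where "Lc = max 0 Lc0"
  have Lc00: "0 \<le> Lc" unfolding Lc_def by simp
  have pl: "\<forall>x\<in>Rd d. \<forall>y\<in>Rd d. \<bar>\<phi> x - \<phi> y\<bar> \<le> Lc * eucl_norm d (\<lambda>j. x j - y j)"
  proof (intro ballI)
    fix x y assume "x \<in> Rd d" "y \<in> Rd d"
    then have "\<bar>\<phi> x - \<phi> y\<bar> \<le> Lc0 * eucl_norm d (\<lambda>j. x j - y j)" using Lc0 by blast
    also have "\<dots> \<le> Lc * eucl_norm d (\<lambda>j. x j - y j)"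
      unfolding Lc_def by (intro mult_right_mono eucl_norm_nonneg) simp
    finally show "\<bar>\<phi> x - \<phi> y\<bar> \<le> Lc * eucl_norm d (\<lambda>j. x j - y j)" .
  qed
  define Nm where "Nm = Max (insert 0 (sum_list ` L))"
  have AEL: "AE \<omega> in M. \<forall>k. idx k \<omega> \<in> L" by (rule AE_idx[OF L_fin q_sum idx_distr])
  have AEN: "AE \<omega> in M. \<forall>k. sum_list (idx k \<omega>) \<le> Nm"
    using AEL by eventually_elim (auto simp: Nm_def L_fin)
  interpret X: tsetup2 M d tau idx S B \<eta> \<rho> Tmax p Cc qmin Cphi Lc
    by unfold_locales (use Tmax p Cc0 qmin0 Cphi0 Lc00 eta_meas in auto)
  define A0 where "A0 = Fbar \<rho> Tmax powr (1 - p) * X.AX"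
  have A00: "0 \<le> A0" unfolding A0_def using X.AX_nonneg by simp
  define V where "V = 3 + 2 * A0"
  have V1: "1 \<le> V" unfolding V_def using A00 by simp
  define c1 where "c1 = (Cc/qmin) powr p"
  have c10: "0 \<le> c1" unfolding c1_def by simp
  define K where "K = Cq p * Ka (p/2)"
  have K0: "0 \<le> K" unfolding K_def Ka_def using Cq_pos[of p] by simp
  define \<epsilon> where "\<epsilon> = 1 / (2 * V ^ Nm * (1 + c1 + c1 * K))"
  have VN: "0 < V ^ Nm" using V1 by simp
  have e0: "0 < \<epsilon>" unfolding \<epsilon>_def using VN c10 K0 by (simp add: add_pos_nonneg)
  have key: "2 * V ^ Nm * (\<epsilon> + c1 * (\<epsilon> + K * \<epsilon>)) = 1"
  proof -
    have "\<epsilon> + c1 * (\<epsilon> + K * \<epsilon>) = \<epsilon> * (1 + c1 + c1 * K)" by (simp add: algebra_simps)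
    moreover have pos: "0 < 2 * V ^ Nm * (1 + c1 + c1 * K)" using VN c10 K0 by (simp add: add_pos_nonneg)
    ultimately have "2 * V ^ Nm * (\<epsilon> + c1 * (\<epsilon> + K * \<epsilon>)) = (2 * V ^ Nm * (1 + c1 + c1 * K)) * \<epsilon>" by simp
    also have "\<dots> = 1"
    proof -
      have ne: "2 * V ^ Nm * (1 + c1 + c1 * K) \<noteq> 0" using pos by linarith
      show ?thesis unfolding \<epsilon>_def by (simp only: times_divide_eq_right mult_1_right divide_self[OF ne])
    qed
    finally show ?thesis .
  qed
  have T0ex: "\<exists>T0>0. T0 \<le> Tmax \<and> (\<forall>T\<in>{0<..T0}. cond1 \<rho> p T \<and> cond2 \<rho> \<eta> p T \<longrightarrow>
      X.I0 T < ennreal \<epsilon> \<and> X.I1 T < ennreal \<epsilon> \<and> X.I2 T < ennreal \<epsilon>)"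
  proof (cases "\<exists>T1. 0 < T1 \<and> T1 \<le> Tmax \<and> cond1 \<rho> p T1 \<and> cond2 \<rho> \<eta> p T1")
    case True
    then obtain T1 where T1: "0 < T1" "T1 \<le> Tmax" "cond1 \<rho> p T1" "cond2 \<rho> \<eta> p T1" by blast
    have rm[measurable]: "\<rho> \<in> borel_measurable borel" by (rule rho_meas)
    have f0: "(\<integral>\<^sup>+s\<in>{0..T1}. ennreal (\<rho> s) \<partial>lborel) < \<infinity>"
    proof -
      have "(\<integral>\<^sup>+s\<in>{0..T1}. ennreal (\<rho> s) \<partial>lborel) \<le> (\<integral>\<^sup>+s\<in>{0..}. ennreal (\<rho> s) \<partial>lborel)"
        by (intro nn_integral_mono) (auto simp: indicator_def)
      then show ?thesis using rho_int1 by (simp add: le_less_trans)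
    qed
    obtain \<delta>0 where d0: "0 < \<delta>0" "\<delta>0 \<le> T1" "(\<integral>\<^sup>+s\<in>{0..\<delta>0}. ennreal (\<rho> s) \<partial>lborel) < ennreal \<epsilon>"
      using small_integral[of "\<lambda>s. ennreal (\<rho> s)" T1 "ennreal \<epsilon>"] T1 f0 e0 by auto
    obtain \<delta>1 where d1: "0 < \<delta>1" "\<delta>1 \<le> T1" "(\<integral>\<^sup>+s\<in>{0..\<delta>1}. ennreal (1 / \<rho> s powr (p - 1)) \<partial>lborel) < ennreal \<epsilon>"
      using small_integral[of "\<lambda>s. ennreal (1 / \<rho> s powr (p - 1))" T1 "ennreal \<epsilon>"] T1 e0 unfolding cond1_def by auto
    obtain \<delta>2 where d2: "0 < \<delta>2" "\<delta>2 \<le> T1" "(\<integral>\<^sup>+s\<in>{0..\<delta>2}. X.inner2 s \<partial>lborel) < ennreal \<epsilon>"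
      using small_integral[of X.inner2 T1 "ennreal \<epsilon>"] T1 e0 X.inner2_meas unfolding cond2_def X.inner2_def[symmetric] by auto
    define T0 where "T0 = min \<delta>0 (min \<delta>1 \<delta>2)"
    show ?thesis
    proof (intro exI[of _ T0] conjI ballI impI)
      show "0 < T0" unfolding T0_def using d0 d1 d2 by simp
      show "T0 \<le> Tmax" unfolding T0_def using d0 T1 by simp
      fix T assume T: "T \<in> {0<..T0}"
      have mono: "(\<integral>\<^sup>+s\<in>{0..T}. f s \<partial>lborel) \<le> (\<integral>\<^sup>+s\<in>{0..T'}. f s \<partial>lborel)" if "T \<le> T'" for f :: "real \<Rightarrow> ennreal" and T'
        using that by (intro nn_integral_mono) (auto simp: indicator_def)
      show "X.I0 T < ennreal \<epsilon>" unfolding X.I0_def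
        using mono[of \<delta>0 "\<lambda>s. ennreal (\<rho> s)"] d0 T unfolding T0_def by (auto intro: le_less_trans)
      show "X.I1 T < ennreal \<epsilon>" unfolding X.I1_def
        using mono[of \<delta>1 "\<lambda>s. ennreal (1 / \<rho> s powr (p - 1))"] d1 T unfolding T0_def by (auto intro: le_less_trans)
      show "X.I2 T < ennreal \<epsilon>" unfolding X.I2_eq
        using mono[of \<delta>2 X.inner2] d2 T unfolding T0_def by (auto intro: le_less_trans)
    qed
  next
    case False
    show ?thesis
      by (rule exI[of _ Tmax]) (use False Tmax in auto)
  qed
  then obtain T0 where T0: "0 < T0" "T0 \<le> Tmax"
    and sm: "\<And>T. T \<in> {0<..T0} \<Longrightarrow> cond1 \<rho> p T \<and> cond2 \<rho> \<eta> p T \<Longrightarrow> X.I0 T < ennreal \<epsilon> \<and> X.I1 T < ennreal \<epsilon> \<and> X.I2 T < ennreal \<epsilon>"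
    by blast
  have part1: "\<forall>T\<in>{0<..T0}. cond1 \<rho> p T \<and> cond2 \<rho> \<eta> p T \<longrightarrow>
              (\<forall>t\<in>{0..T}. \<forall>i\<in>{0..m0}.
                 (AE \<omega> in M. \<forall>x\<in>Rd d. finite (tree_nodes T t x i (\<lambda>k. tau k \<omega>) (\<lambda>k. idx k \<omega>) (\<lambda>k. S k \<omega>) (\<lambda>k. B k \<omega>)))
               \<and> (\<integral>\<^sup>+ \<omega>. (SUP x\<in>Rd d. ennreal (\<bar>Hfun c q \<rho> \<phi> T t x i (\<lambda>k. tau k \<omega>) (\<lambda>k. idx k \<omega>)
                                              (\<lambda>k. S k \<omega>) (\<lambda>k. B k \<omega>)\<bar> powr p)) \<partial>M) < \<infinity>)"
  proof (intro ballI impI)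
    fix T t i assume T: "T \<in> {0<..T0}" and conds: "cond1 \<rho> p T \<and> cond2 \<rho> \<eta> p T" and t: "t \<in> {0..T}" and i: "i \<in> {0..m0}"
    have TT: "0 < T" "T \<le> Tmax" using T T0 by auto
    have small: "X.I0 T < ennreal \<epsilon>" "X.I1 T < ennreal \<epsilon>" "X.I2 T < ennreal \<epsilon>" using sm[OF T conds] by auto
    interpret Y: tsetup2 M d tau idx S B \<eta> \<rho> T p Cc qmin Cphi Lc
      by unfold_locales (use TT p Cc0 qmin0 Cphi0 Lc00 eta_meas in auto)
    have H: "2 + 2 * Y.AA + 2 * ennreal (V ^ Nm) * (Y.I0 T + Y.EB) \<le> ennreal V"
    proof -
      have FT: "0 < Fbar \<rho> Tmax" by (rule Fbar_pos) (use Tmax in simp)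
      have "Fbar \<rho> T powr (1 - p) \<le> Fbar \<rho> Tmax powr (1 - p)"
        by (rule powr_mono2'[OF _ FT Fbar_anti]) (use p TT in auto)
      then have "Fbar \<rho> T powr (1 - p) * Y.AX \<le> A0" unfolding A0_def using X.AX_nonneg by (rule mult_right_mono)
      then have aa: "Y.AA \<le> ennreal A0" unfolding Y.AA_def by (rule ennreal_leI)
      have eb: "Y.EB \<le> ennreal c1 * (ennreal \<epsilon> + ennreal K * ennreal \<epsilon>)"
        unfolding Y.EB_def c1_def[symmetric] K_def[symmetric]
        using small by (intro mult_left_mono add_mono) (auto intro: less_imp_le)
      have "2 + 2 * Y.AA + 2 * ennreal (V ^ Nm) * (Y.I0 T + Y.EB)
          \<le> 2 + 2 * ennreal A0 + 2 * ennreal (V ^ Nm) * (ennreal \<epsilon> + ennreal c1 * (ennreal \<epsilon> + ennreal K * ennreal \<epsilon>))"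
        using aa eb small by (intro add_mono mult_left_mono order.refl) (auto intro: less_imp_le)
      also have "\<dots> = ennreal (2 + 2 * A0 + 2 * V ^ Nm * (\<epsilon> + c1 * (\<epsilon> + K * \<epsilon>)))"
        by (rule enn_expr) (use A00 VN e0 c10 K0 in auto)
      also have "\<dots> = ennreal V" by (subst key) (simp add: V_def)
      finally show ?thesis .
    qed
    have t0: "0 \<le> t" "t \<le> T" using t by auto
    have bound: "(\<integral>\<^sup>+\<omega>. ennreal (Y.psi n [] t i \<omega>) \<partial>M) \<le> ennreal V" for n
      by (rule Y.main_ind[OF V1 AEN H t0])
    define G where "G \<omega> = (SUP n. ennreal (Y.psi n [] t i \<omega>))" for \<omega>
    have pm: "(\<lambda>\<omega>. ennreal (Y.psi n [] t i \<omega>)) \<in> borel_measurable M" for n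
      using meas_M[OF Y.meas_psi_s[of n "[]" t i]] by measurable
    have inc: "incseq (\<lambda>n \<omega>. ennreal (Y.psi n [] t i \<omega>))"
    proof (rule incseq_SucI, rule le_funI)
      fix n \<omega>
      show "ennreal (Y.psi n [] t i \<omega>) \<le> ennreal (Y.psi (Suc n) [] t i \<omega>)"
        unfolding Y.psi_def by (intro ennreal_leI psiD_mono) (simp add: Y.aa_def)
    qed
    have IG: "(\<integral>\<^sup>+\<omega>. G \<omega> \<partial>M) \<le> ennreal V"
    proof -
      have "(\<integral>\<^sup>+\<omega>. G \<omega> \<partial>M) = (SUP n. \<integral>\<^sup>+\<omega>. ennreal (Y.psi n [] t i \<omega>) \<partial>M)"
        unfolding G_def by (rule nn_integral_monotone_convergence_SUP[OF inc pm])
      also have "\<dots> \<le> ennreal V" by (rule SUP_least) (rule bound)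
      finally show ?thesis .
    qed
    have Gm: "G \<in> borel_measurable M" unfolding G_def using pm by measurable
    have AEG: "AE \<omega> in M. G \<omega> \<noteq> \<infinity>"
      by (rule nn_integral_noteq_infinite[OF Gm]) (use IG in \<open>auto simp: top_unique\<close>)
    have cbT: "\<forall>l\<in>L. \<forall>s\<in>{0..T}. \<forall>y\<in>Rd d. \<bar>c l s y\<bar> \<le> Cc" using cbM TT by auto
    have good: "AE \<omega> in M. \<omega> \<in> space M \<and> (\<forall>k. 0 \<le> tau k \<omega>) \<and> (\<forall>k. idx k \<omega> \<in> L) \<and> G \<omega> \<noteq> \<infinity>"
      using AE_space AE_tau AEL AEG by eventually_elim auto
    have HG: "(infinite (tree_nodes T t x i (\<lambda>k. tau k \<omega>) (\<lambda>k. idx k \<omega>) (\<lambda>k. S k \<omega>) (\<lambda>k. B k \<omega>)) \<longrightarrow> G \<omega> = \<top>)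
       \<and> ennreal (\<bar>Hfun c q \<rho> \<phi> T t x i (\<lambda>k. tau k \<omega>) (\<lambda>k. idx k \<omega>) (\<lambda>k. S k \<omega>) (\<lambda>k. B k \<omega>)\<bar> powr p) \<le> G \<omega>"
      if w: "\<omega> \<in> space M" "\<forall>k. 0 \<le> tau k \<omega>" "\<forall>k. idx k \<omega> \<in> L" and x: "x \<in> Rd d" for \<omega> x
      unfolding G_def by (rule Y.H_le_G[OF w cbT qb pb pl x t0])
    show "(AE \<omega> in M. \<forall>x\<in>Rd d. finite (tree_nodes T t x i (\<lambda>k. tau k \<omega>) (\<lambda>k. idx k \<omega>) (\<lambda>k. S k \<omega>) (\<lambda>k. B k \<omega>)))
       \<and> (\<integral>\<^sup>+ \<omega>. (SUP x\<in>Rd d. ennreal (\<bar>Hfun c q \<rho> \<phi> T t x i (\<lambda>k. tau k \<omega>) (\<lambda>k. idx k \<omega>) (\<lambda>k. S k \<omega>) (\<lambda>k. B k \<omega>)\<bar> powr p)) \<partial>M) < \<infinity>"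
    proof
      show "AE \<omega> in M. \<forall>x\<in>Rd d. finite (tree_nodes T t x i (\<lambda>k. tau k \<omega>) (\<lambda>k. idx k \<omega>) (\<lambda>k. S k \<omega>) (\<lambda>k. B k \<omega>))"
        using good by eventually_elim (use HG in \<open>auto simp: top_unique\<close>)
      have "(\<integral>\<^sup>+ \<omega>. (SUP x\<in>Rd d. ennreal (\<bar>Hfun c q \<rho> \<phi> T t x i (\<lambda>k. tau k \<omega>) (\<lambda>k. idx k \<omega>) (\<lambda>k. S k \<omega>) (\<lambda>k. B k \<omega>)\<bar> powr p)) \<partial>M)
          \<le> (\<integral>\<^sup>+\<omega>. G \<omega> \<partial>M)"
      proof (rule nn_integral_mono_AE)
        show "AE \<omega> in M. (SUP x\<in>Rd d. ennreal (\<bar>Hfun c q \<rho> \<phi> T t x i (\<lambda>k. tau k \<omega>) (\<lambda>k. idx k \<omega>) (\<lambda>k. S k \<omega>) (\<lambda>k. B k \<omega>)\<bar> powr p)) \<le> G \<omega>"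
          using good by eventually_elim (use HG in \<open>auto intro!: SUP_least\<close>)
      qed
      also have "\<dots> \<le> ennreal V" by (rule IG)
      also have "\<dots> < \<infinity>" by simp
      finally show "(\<integral>\<^sup>+ \<omega>. (SUP x\<in>Rd d. ennreal (\<bar>Hfun c q \<rho> \<phi> T t x i (\<lambda>k. tau k \<omega>) (\<lambda>k. idx k \<omega>) (\<lambda>k. S k \<omega>) (\<lambda>k. B k \<omega>)\<bar> powr p)) \<partial>M) < \<infinity>" .
    qed
  qed
  show ?thesis using T0 part1 part2 by blast
qed

end
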